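(* Let $n\ge 2$ and $N\in\mathbf{Z}$. For all $r\in M_n(\mathbf{Q}\langle t\rangle)$, $g_1,g_2\in\mathrm{GL}_n(\mathbf{Q}\langle t\rangle_+)$ and $m\in M_n(\mathbf{Q}\langle t\rangle_+)$, we have $r\in C_N$ if and only if $g_1rg_2+t^Nm\in C_N$.
   Context: $\mathbf{A}$ is the adele ring of $\mathbf{Q}$. $\mathbf{A}\langle t\rangle$ is the set of $(a_v)\in\prod_v\mathbf{Q}_v((t))$ with $a_p\in\mathbf{Z}_p((t))$ for almost all primes $p$; $\mathbf{A}\langle t\rangle_+=\mathbf{A}\langle t\rangle\cap\prod_v\mathbf{Q}_v[[t]]$; $\mathbf{Q}\langle t\rangle=\mathbf{Q}((t))\cap\mathbf{A}\langle t\rangle$ (diagonal embedding) and $\mathbf{Q}\langle t\rangle_+=\mathbf{Q}\langle t\rangle\cap\mathbf{Q}[[t]]$. Definition: $C_N$ is the set of $r\in M_n(\mathbf{Q}\langle t\rangle)$ for which there does not exist a unipotent radical $U'$ of a proper parabolic subgroup of $\mathrm{GL}_n$ defined over $\mathbf{Q}$ such that $ru-r\in r\,t\,M_n(\mathbf{A}\langle t\rangle_+)+t^NM_n(\mathbf{A}\langle t\rangle_+)$ for all $u\in U'(\mathbf{A})$ (here $U'(\mathbf{A})\subset\mathrm{GL}_n(\mathbf{A})\subset\mathrm{GL}_n(\mathbf{A}\langle t\rangle)$). *)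

theory Defs
  imports Complex_Main "HOL-Computational_Algebra.Primes" "HOL-Algebra.Ring"
begin

text \<open>Formal Laurent series over a ring R: coefficient functions int => carrier R
  with support bounded below; Cauchy product.\<close>
definition ls_ring :: "('a, 'm) ring_scheme \<Rightarrow> (int \<Rightarrow> 'a) ring" where
  "ls_ring R = \<lparr>carrier = {f. (\<forall>i. f i \<in> carrier R) \<and> (\<exists>M. \<forall>i<M. f i = \<zero>\<^bsub>R\<^esub>)},
     mult = (\<lambda>f g k. finsum R (\<lambda>i. f i \<otimes>\<^bsub>R\<^esub> g (k - i))
                        {i. f i \<noteq> \<zero>\<^bsub>R\<^esub> \<and> g (k - i) \<noteq> \<zero>\<^bsub>R\<^esub>}),
     one = (\<lambda>i. if i = 0 then \<one>\<^bsub>R\<^esub> else \<zero>\<^bsub>R\<^esub>),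
     zero = (\<lambda>i. \<zero>\<^bsub>R\<^esub>),
     add = (\<lambda>f g i. f i \<oplus>\<^bsub>R\<^esub> g i)\<rparr>"

definition ps_carrier :: "('a, 'm) ring_scheme \<Rightarrow> (int \<Rightarrow> 'a) set" where
  "ps_carrier R = {f \<in> carrier (ls_ring R). \<forall>i<0. f i = \<zero>\<^bsub>R\<^esub>}"

text \<open>n x n matrices over R, as functions nat => nat => 'a, zero outside the index range.\<close>
definition mats :: "('a, 'm) ring_scheme \<Rightarrow> nat \<Rightarrow> 'a set \<Rightarrow> (nat \<Rightarrow> nat \<Rightarrow> 'a) set" where
  "mats R n S = {A. (\<forall>i j. i < n \<longrightarrow> j < n \<longrightarrow> A i j \<in> carrier R \<and> A i j \<in> S)
                  \<and> (\<forall>i j. \<not> (i < n \<and> j < n) \<longrightarrow> A i j = \<zero>\<^bsub>R\<^esub>)}"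

definition mmul :: "('a, 'm) ring_scheme \<Rightarrow> nat \<Rightarrow> (nat \<Rightarrow> nat \<Rightarrow> 'a) \<Rightarrow> (nat \<Rightarrow> nat \<Rightarrow> 'a) \<Rightarrow> (nat \<Rightarrow> nat \<Rightarrow> 'a)" where
  "mmul R n A B = (\<lambda>i j. if i < n \<and> j < n then finsum R (\<lambda>k. A i k \<otimes>\<^bsub>R\<^esub> B k j) {..<n} else \<zero>\<^bsub>R\<^esub>)"

definition madd :: "('a, 'm) ring_scheme \<Rightarrow> nat \<Rightarrow> (nat \<Rightarrow> nat \<Rightarrow> 'a) \<Rightarrow> (nat \<Rightarrow> nat \<Rightarrow> 'a) \<Rightarrow> (nat \<Rightarrow> nat \<Rightarrow> 'a)" where
  "madd R n A B = (\<lambda>i j. if i < n \<and> j < n then A i j \<oplus>\<^bsub>R\<^esub> B i j else \<zero>\<^bsub>R\<^esub>)"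

definition msub :: "('a, 'm) ring_scheme \<Rightarrow> nat \<Rightarrow> (nat \<Rightarrow> nat \<Rightarrow> 'a) \<Rightarrow> (nat \<Rightarrow> nat \<Rightarrow> 'a) \<Rightarrow> (nat \<Rightarrow> nat \<Rightarrow> 'a)" where
  "msub R n A B = (\<lambda>i j. if i < n \<and> j < n then A i j \<ominus>\<^bsub>R\<^esub> B i j else \<zero>\<^bsub>R\<^esub>)"

definition msmul :: "('a, 'm) ring_scheme \<Rightarrow> nat \<Rightarrow> 'a \<Rightarrow> (nat \<Rightarrow> nat \<Rightarrow> 'a) \<Rightarrow> (nat \<Rightarrow> nat \<Rightarrow> 'a)" where
  "msmul R n c A = (\<lambda>i j. if i < n \<and> j < n then c \<otimes>\<^bsub>R\<^esub> A i j else \<zero>\<^bsub>R\<^esub>)"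

definition mone :: "('a, 'm) ring_scheme \<Rightarrow> nat \<Rightarrow> (nat \<Rightarrow> nat \<Rightarrow> 'a)" where
  "mone R n = (\<lambda>i j. if i < n \<and> j < n then (if i = j then \<one>\<^bsub>R\<^esub> else \<zero>\<^bsub>R\<^esub>) else \<zero>\<^bsub>R\<^esub>)"

definition gl :: "('a, 'm) ring_scheme \<Rightarrow> nat \<Rightarrow> 'a set \<Rightarrow> (nat \<Rightarrow> nat \<Rightarrow> 'a) set" where
  "gl R n S = {A \<in> mats R n S. \<exists>B \<in> mats R n S. mmul R n A B = mone R n \<and> mmul R n B A = mone R n}"

definition mmap :: "'b \<Rightarrow> nat \<Rightarrow> ('a \<Rightarrow> 'b) \<Rightarrow> (nat \<Rightarrow> nat \<Rightarrow> 'a) \<Rightarrow> (nat \<Rightarrow> nat \<Rightarrow> 'b)" where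
  "mmap z n f A = (\<lambda>i j. if i < n \<and> j < n then f (A i j) else z)"

definition ratR :: "rat ring" where
  "ratR = \<lparr>carrier = UNIV, mult = (*), one = 1, zero = 0, add = (+)\<rparr>"

datatype place = Arch | Fin nat

definition places :: "place set" where
  "places = {Arch} \<union> Fin ` {p. prime p}"

definition padic_val :: "nat \<Rightarrow> rat \<Rightarrow> int" where
  "padic_val p q = int (multiplicity (int p) (fst (quotient_of q)))
                 - int (multiplicity (int p) (snd (quotient_of q)))"

fun rat_absv :: "place \<Rightarrow> rat \<Rightarrow> real" where
  "rat_absv Arch q = \<bar>real_of_rat q\<bar>"
| "rat_absv (Fin p) q = (if q = 0 then 0 else real p powr (- real_of_int (padic_val p q)))"

definition vcauchy :: "place \<Rightarrow> (nat \<Rightarrow> rat) \<Rightarrow> bool" where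
  "vcauchy v X = (\<forall>e>0. \<exists>M. \<forall>m\<ge>M. \<forall>k\<ge>M. rat_absv v (X m - X k) < e)"

definition vnull :: "place \<Rightarrow> (nat \<Rightarrow> rat) \<Rightarrow> bool" where
  "vnull v X = (\<forall>e>0. \<exists>M. \<forall>m\<ge>M. rat_absv v (X m) < e)"

text \<open>Q_v as the completion of Q: classes of |.|_v-Cauchy sequences modulo null sequences.\<close>
definition vclass :: "place \<Rightarrow> (nat \<Rightarrow> rat) \<Rightarrow> (nat \<Rightarrow> rat) set" where
  "vclass v X = {Y. vcauchy v Y \<and> vnull v (\<lambda>k. X k - Y k)}"

definition Qv :: "place \<Rightarrow> (nat \<Rightarrow> rat) set ring" where
  "Qv v = \<lparr>carrier = vclass v ` {X. vcauchy v X},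
     mult = (\<lambda>a b. vclass v (\<lambda>k. (SOME X. X \<in> a) k * (SOME Y. Y \<in> b) k)),
     one = vclass v (\<lambda>_. 1),
     zero = vclass v (\<lambda>_. 0),
     add = (\<lambda>a b. vclass v (\<lambda>k. (SOME X. X \<in> a) k + (SOME Y. Y \<in> b) k))\<rparr>"

definition vrat :: "place \<Rightarrow> rat \<Rightarrow> (nat \<Rightarrow> rat) set" where
  "vrat v q = vclass v (\<lambda>_. q)"

definition Zv :: "place \<Rightarrow> (nat \<Rightarrow> rat) set set" where
  "Zv v = {a \<in> carrier (Qv v). \<exists>X\<in>a. \<forall>k. rat_absv v (X k) \<le> 1}"

definition LSv :: "place \<Rightarrow> (int \<Rightarrow> (nat \<Rightarrow> rat) set) ring" where
  "LSv v = ls_ring (Qv v)"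

type_synonym adt = "place \<Rightarrow> int \<Rightarrow> (nat \<Rightarrow> rat) set"

text \<open>A<t>: restricted product of the Q_v((t)) w.r.t. the Z_p((t)).\<close>
definition At :: "adt ring" where
  "At = \<lparr>carrier = {a. (\<forall>v\<in>places. a v \<in> carrier (LSv v))
                     \<and> (\<forall>v. v \<notin> places \<longrightarrow> a v = \<zero>\<^bsub>LSv v\<^esub>)
                     \<and> finite {p. prime p \<and> \<not> (\<forall>i. a (Fin p) i \<in> Zv (Fin p))}},
     mult = (\<lambda>a b v. if v \<in> places then a v \<otimes>\<^bsub>LSv v\<^esub> b v else \<zero>\<^bsub>LSv v\<^esub>),
     one = (\<lambda>v. if v \<in> places then \<one>\<^bsub>LSv v\<^esub> else \<zero>\<^bsub>LSv v\<^esub>),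
     zero = (\<lambda>v. \<zero>\<^bsub>LSv v\<^esub>),
     add = (\<lambda>a b v. if v \<in> places then a v \<oplus>\<^bsub>LSv v\<^esub> b v else \<zero>\<^bsub>LSv v\<^esub>)\<rparr>"

definition At_plus :: "adt set" where
  "At_plus = {a \<in> carrier At. \<forall>v\<in>places. a v \<in> ps_carrier (Qv v)}"

text \<open>The adele ring A, embedded in A<t> as the constant series.\<close>
definition Adeles :: "adt set" where
  "Adeles = {a \<in> carrier At. \<forall>v\<in>places. \<forall>i. i \<noteq> 0 \<longrightarrow> a v i = \<zero>\<^bsub>Qv v\<^esub>}"

definition QLS :: "(int \<Rightarrow> rat) ring" where
  "QLS = ls_ring ratR"

definition diagQ :: "(int \<Rightarrow> rat) \<Rightarrow> adt" where
  "diagQ f = (\<lambda>v. if v \<in> places then (\<lambda>i. vrat v (f i)) else \<zero>\<^bsub>LSv v\<^esub>)"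

definition Qt :: "(int \<Rightarrow> rat) set" where
  "Qt = {f \<in> carrier QLS. diagQ f \<in> carrier At}"

definition Qt_plus :: "(int \<Rightarrow> rat) set" where
  "Qt_plus = Qt \<inter> ps_carrier ratR"

definition tpow :: "int \<Rightarrow> (int \<Rightarrow> rat)" where
  "tpow N = (\<lambda>i. if i = N then 1 else 0)"

definition const_ls :: "rat \<Rightarrow> (int \<Rightarrow> rat)" where
  "const_ls q = (\<lambda>i. if i = 0 then q else 0)"

text \<open>A standard parabolic is given by a monotone block-labelling b of the indices {0..<n};
  it is proper iff there are at least two blocks.\<close>
definition proper_blocks :: "nat \<Rightarrow> (nat \<Rightarrow> nat) \<Rightarrow> bool" where
  "proper_blocks n b = ((\<forall>i j. i \<le> j \<longrightarrow> j < n \<longrightarrow> b i \<le> b j) \<and> (\<exists>i<n. \<exists>j<n. b i \<noteq> b j))"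

definition std_unip :: "nat \<Rightarrow> (nat \<Rightarrow> nat) \<Rightarrow> adt set \<Rightarrow> (nat \<Rightarrow> nat \<Rightarrow> adt) set" where
  "std_unip n b S = {u \<in> mats At n S. \<forall>i<n. \<forall>j<n.
      (b i = b j \<longrightarrow> u i j = (if i = j then \<one>\<^bsub>At\<^esub> else \<zero>\<^bsub>At\<^esub>)) \<and>
      (b j < b i \<longrightarrow> u i j = \<zero>\<^bsub>At\<^esub>)}"

text \<open>Every unipotent radical U' of a proper parabolic Q-subgroup is x U_b x^{-1} for some
  x in GL_n(Q) and proper b; its group of A-points is x U_b(A) x^{-1}.\<close>
definition unip_A :: "nat \<Rightarrow> (nat \<Rightarrow> nat \<Rightarrow> rat) \<Rightarrow> (nat \<Rightarrow> nat) \<Rightarrow> (nat \<Rightarrow> nat \<Rightarrow> adt) set" where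
  "unip_A n x b = {mmul At n (mmul At n (mmap \<zero>\<^bsub>At\<^esub> n (diagQ \<circ> const_ls) x) u)
                              (mmap \<zero>\<^bsub>At\<^esub> n (diagQ \<circ> const_ls) y)
                   | u y. u \<in> std_unip n b Adeles \<and> y \<in> mats ratR n UNIV
                          \<and> mmul ratR n x y = mone ratR n}"

definition C_N :: "nat \<Rightarrow> int \<Rightarrow> (nat \<Rightarrow> nat \<Rightarrow> (int \<Rightarrow> rat)) set" where
  "C_N n N = {r \<in> mats QLS n Qt.
     \<not> (\<exists>x b. x \<in> gl ratR n UNIV \<and> proper_blocks n b \<and>
          (\<forall>u \<in> unip_A n x b.
             (let R = mmap \<zero>\<^bsub>At\<^esub> n diagQ r in
              msub At n (mmul At n R u) R \<in>
                {madd At n (mmul At n R (msmul At n (diagQ (tpow 1)) X))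
                           (msmul At n (diagQ (tpow N)) Y)
                 | X Y. X \<in> mats At n At_plus \<and> Y \<in> mats At n At_plus})))}"

end

theory Submission
  imports Defs
begin

lemma mult_int_neg: "multiplicity (p::int) (- a) = multiplicity p a"
proof -
  have "{n. p ^ n dvd - a} = {n. p ^ n dvd a}" by auto
  then show ?thesis unfolding multiplicity_def by simp
qed

lemma pv_frac:
  assumes p: "prime p" and a: "a \<noteq> 0" and b: "b \<noteq> 0"
  shows "padic_val p (of_int a / of_int b) = int (multiplicity (int p) a) - int (multiplicity (int p) b)"
proof -
  obtain c d where cd: "quotient_of (of_int a / of_int b) = (c, d)" by (cases "quotient_of (of_int a / of_int b)")
  have d: "d > 0" using quotient_of_denom_pos[OF cd] .
  have q: "(of_int a / of_int b :: rat) = of_int c / of_int d" using quotient_of_div[OF cd] .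
  have "(of_int a :: rat) * of_int d = of_int c * of_int b" using q b d
    by (simp add: field_simps)
  then have e: "a * d = c * b" by (metis of_int_eq_iff of_int_mult)
  have c: "c \<noteq> 0" using e a d by auto
  have pe: "prime_elem (int p)" using p by simp
  have "multiplicity (int p) (a * d) = multiplicity (int p) (c * b)" using e by simp
  then have "multiplicity (int p) a + multiplicity (int p) d = multiplicity (int p) c + multiplicity (int p) b"
    using prime_elem_multiplicity_mult_distrib[OF pe] a b c d by (metis less_irrefl)
  then show ?thesis unfolding padic_val_def cd by simp
qed

lemma rat_frac_rep:
  fixes q :: rat
  obtains a b where "a \<noteq> 0 \<or> q = 0" "b > 0" "q = of_int a / of_int b"
proof -
  obtain a b where cd: "quotient_of q = (a, b)" by (cases "quotient_of q")
  show ?thesis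
    using that[of a b] quotient_of_div[OF cd] quotient_of_denom_pos[OF cd] by auto
qed

lemma pv_mult:
  assumes p: "prime p" and x: "x \<noteq> 0" and y: "y \<noteq> 0"
  shows "padic_val p (x * y) = padic_val p x + padic_val p y"
proof -
  obtain a b where ab: "a \<noteq> 0" "b > 0" "x = of_int a / of_int b" using rat_frac_rep[of x] x by metis
  obtain c d where cd: "c \<noteq> 0" "d > 0" "y = of_int c / of_int d" using rat_frac_rep[of y] y by metis
  have xy: "x * y = of_int (a*c) / of_int (b*d)" using ab cd by simp
  have pe: "prime_elem (int p)" using p by simp
  have 1: "padic_val p (x*y) = int (multiplicity (int p) (a*c)) - int (multiplicity (int p) (b*d))"
    unfolding xy by (rule pv_frac[OF p]) (use ab cd in auto)
  have 2: "padic_val p x = int (multiplicity (int p) a) - int (multiplicity (int p) b)"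
    unfolding ab(3) by (rule pv_frac[OF p]) (use ab in auto)
  have 3: "padic_val p y = int (multiplicity (int p) c) - int (multiplicity (int p) d)"
    unfolding cd(3) by (rule pv_frac[OF p]) (use cd in auto)
  have 4: "multiplicity (int p) (a*c) = multiplicity (int p) a + multiplicity (int p) c"
    using prime_elem_multiplicity_mult_distrib[OF pe, of a c] ab cd by simp
  have 5: "multiplicity (int p) (b*d) = multiplicity (int p) b + multiplicity (int p) d"
    using prime_elem_multiplicity_mult_distrib[OF pe, of b d] ab cd by simp
  show ?thesis using 1 2 3 4 5 by simp
qed

lemma pv_neg:
  assumes p: "prime p"
  shows "padic_val p (- x) = padic_val p x"
proof (cases "x = 0")
  case False
  obtain a b where ab: "a \<noteq> 0" "b > 0" "x = of_int a / of_int b" using rat_frac_rep[of x] False by metis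
  have e: "- x = of_int (- a) / of_int b" using ab by simp
  have 1: "padic_val p (-x) = int (multiplicity (int p) (-a)) - int (multiplicity (int p) b)"
    unfolding e by (rule pv_frac[OF p]) (use ab in auto)
  have 2: "padic_val p x = int (multiplicity (int p) a) - int (multiplicity (int p) b)"
    unfolding ab(3) by (rule pv_frac[OF p]) (use ab in auto)
  show ?thesis using 1 2 mult_int_neg by simp
qed simp

lemma mult_add_ge:
  assumes p: "prime (p::int)" and "x \<noteq> 0" "y \<noteq> 0" "x + y \<noteq> 0"
  shows "min (multiplicity p x) (multiplicity p y) \<le> multiplicity p (x + y)"
proof -
  let ?k = "min (multiplicity p x) (multiplicity p y)"
  have "p ^ ?k dvd x" by (rule multiplicity_dvd') (rule min.cobounded1)
  moreover have "p ^ ?k dvd y" by (rule multiplicity_dvd') (rule min.cobounded2)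
  ultimately have "p ^ ?k dvd x + y" by (rule dvd_add)
  moreover have "\<not> is_unit p" using p by (metis not_prime_unit)
  ultimately show ?thesis using multiplicity_geI[of "x + y" p ?k] assms(4) by blast
qed

lemma pv_add:
  assumes p: "prime p" and x: "x \<noteq> 0" and y: "y \<noteq> 0" and xy: "x + y \<noteq> 0"
  shows "min (padic_val p x) (padic_val p y) \<le> padic_val p (x + y)"
proof -
  obtain a b where ab: "a \<noteq> 0" "b > 0" "x = of_int a / of_int b" using rat_frac_rep[of x] x by metis
  obtain c d where cd: "c \<noteq> 0" "d > 0" "y = of_int c / of_int d" using rat_frac_rep[of y] y by metis
  have e: "x + y = of_int (a*d + c*b) / of_int (b*d)" using ab cd by (simp add: field_simps)
  have nz: "a*d + c*b \<noteq> 0" using e xy by (metis div_0 of_int_0)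
  have pe: "prime_elem (int p)" using p by simp
  have pi: "prime (int p)" using p by simp
  have m1: "multiplicity (int p) (a*d) = multiplicity (int p) a + multiplicity (int p) d"
    using prime_elem_multiplicity_mult_distrib[OF pe] ab cd by simp
  have m2: "multiplicity (int p) (c*b) = multiplicity (int p) c + multiplicity (int p) b"
    using prime_elem_multiplicity_mult_distrib[OF pe] ab cd by simp
  have m3: "multiplicity (int p) (b*d) = multiplicity (int p) b + multiplicity (int p) d"
    using prime_elem_multiplicity_mult_distrib[OF pe] ab cd by simp
  have m4: "min (multiplicity (int p) (a*d)) (multiplicity (int p) (c*b)) \<le> multiplicity (int p) (a*d + c*b)"
    using mult_add_ge[OF pi] ab cd nz by simp
  have 1: "padic_val p (x+y) = int (multiplicity (int p) (a*d + c*b)) - int (multiplicity (int p) (b*d))"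
    unfolding e by (rule pv_frac[OF p]) (use ab cd nz in auto)
  have 2: "padic_val p x = int (multiplicity (int p) a) - int (multiplicity (int p) b)"
    unfolding ab(3) by (rule pv_frac[OF p]) (use ab in auto)
  have 3: "padic_val p y = int (multiplicity (int p) c) - int (multiplicity (int p) d)"
    unfolding cd(3) by (rule pv_frac[OF p]) (use cd in auto)
  show ?thesis using 1 2 3 m1 m2 m3 m4 by linarith
qed

definition absv :: "(rat \<Rightarrow> real) \<Rightarrow> bool" where
  "absv f \<longleftrightarrow> f 0 = 0 \<and> f 1 = 1 \<and> (\<forall>x. 0 \<le> f x) \<and> (\<forall>x. f (-x) = f x)
     \<and> (\<forall>x y. f (x + y) \<le> f x + f y) \<and> (\<forall>x y. f (x * y) = f x * f y)"

lemma fin_ultra: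
  assumes p: "prime p"
  shows "rat_absv (Fin p) (x + y) \<le> max (rat_absv (Fin p) x) (rat_absv (Fin p) y)"
proof -
  have p1: "real p > 1" using p prime_gt_1_nat by simp
  show ?thesis
  proof (cases "x = 0 \<or> y = 0 \<or> x + y = 0")
    case True
    have "0 \<le> rat_absv (Fin p) x" "0 \<le> rat_absv (Fin p) y" by auto
    with True show ?thesis by (auto simp: max_def)
  next
    case False
    then have "min (padic_val p x) (padic_val p y) \<le> padic_val p (x + y)" using pv_add[OF p] by auto
    then have "- real_of_int (padic_val p (x+y)) \<le> max (- real_of_int (padic_val p x)) (- real_of_int (padic_val p y))"
      by linarith
    then have "real p powr (- real_of_int (padic_val p (x+y))) \<le> real p powr max (- real_of_int (padic_val p x)) (- real_of_int (padic_val p y))"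
      using p1 by (intro powr_mono) auto
    also have "\<dots> = max (real p powr (- real_of_int (padic_val p x))) (real p powr (- real_of_int (padic_val p y)))"
      using p1 by (simp add: max_def)
    finally show ?thesis using False by simp
  qed
qed

lemma absv_places: "v \<in> places \<Longrightarrow> absv (rat_absv v)"
proof -
  assume "v \<in> places"
  then consider "v = Arch" | p where "prime p" "v = Fin p" unfolding places_def by auto
  then show ?thesis
  proof cases
    case 1
    have "\<bar>real_of_rat (x + y)\<bar> \<le> \<bar>real_of_rat x\<bar> + \<bar>real_of_rat y\<bar>" for x y
      by (metis abs_triangle_ineq of_rat_add)
    then show ?thesis unfolding absv_def using 1 by (auto simp: abs_mult of_rat_mult)
  next
    case 2
    have p1: "real p > 1" using 2 prime_gt_1_nat by simp
    have one: "padic_val p 1 = 0" unfolding padic_val_def by simp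
    have ult: "rat_absv (Fin p) (x + y) \<le> rat_absv (Fin p) x + rat_absv (Fin p) y" for x y
      using fin_ultra[OF 2(1), of x y] by (smt (verit) rat_absv.simps(2) powr_ge_zero)
    have mul: "rat_absv (Fin p) (x * y) = rat_absv (Fin p) x * rat_absv (Fin p) y" for x y
      using pv_mult[OF 2(1), of x y] by (auto simp: powr_add[symmetric])
    show ?thesis unfolding absv_def using 2 one ult mul pv_neg[OF 2(1)] by auto
  qed
qed

context
  fixes v :: place
  assumes av: "absv (rat_absv v)"
begin

private abbreviation "A \<equiv> rat_absv v"

lemma av0: "A 0 = 0" and av1: "A 1 = 1" and avnn: "0 \<le> A x" and avneg: "A (-x) = A x"
  and avtri: "A (x + y) \<le> A x + A y" and avmul: "A (x * y) = A x * A y"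
  using av unfolding absv_def by auto

lemma avsub: "A (x - y) = A (y - x)"
  using avneg[of "x - y"] by simp

lemma avtri3: "A (x - z) \<le> A (x - y) + A (y - z)"
  using avtri[of "x - y" "y - z"] by simp

lemma vnull_zero: "vnull v (\<lambda>k. 0)"
  unfolding vnull_def using av0 by auto

lemma vnull_add: "vnull v X \<Longrightarrow> vnull v Y \<Longrightarrow> vnull v (\<lambda>k. X k + Y k)"
  unfolding vnull_def
proof (intro allI impI)
  fix e :: real assume X: "\<forall>e>0. \<exists>M. \<forall>m\<ge>M. A (X m) < e" and Y: "\<forall>e>0. \<exists>M. \<forall>m\<ge>M. A (Y m) < e"
    and e: "0 < e"
  obtain M1 where M1: "\<forall>m\<ge>M1. A (X m) < e/2" using X e by (meson half_gt_zero)
  obtain M2 where M2: "\<forall>m\<ge>M2. A (Y m) < e/2" using Y e by (meson half_gt_zero)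
  show "\<exists>M. \<forall>m\<ge>M. A (X m + Y m) < e"
  proof (intro exI allI impI)
    fix m assume "max M1 M2 \<le> m"
    then have "A (X m) < e/2" "A (Y m) < e/2" using M1 M2 by auto
    then show "A (X m + Y m) < e" using avtri[of "X m" "Y m"] by linarith
  qed
qed

lemma vnull_neg: "vnull v X \<Longrightarrow> vnull v (\<lambda>k. - X k)"
  unfolding vnull_def using avneg by simp

lemma vnull_sub_sym: "vnull v (\<lambda>k. X k - Y k) \<Longrightarrow> vnull v (\<lambda>k. Y k - X k)"
  unfolding vnull_def using avsub by simp

lemma vnull_trans: "vnull v (\<lambda>k. X k - Y k) \<Longrightarrow> vnull v (\<lambda>k. Y k - Z k) \<Longrightarrow> vnull v (\<lambda>k. X k - Z k)"
  using vnull_add[of "\<lambda>k. X k - Y k" "\<lambda>k. Y k - Z k"] by simp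

lemma vcauchy_bounded:
  assumes "vcauchy v X" shows "\<exists>B>0. \<forall>k. A (X k) \<le> B"
proof -
  obtain M where M: "\<forall>m\<ge>M. \<forall>k\<ge>M. A (X m - X k) < 1"
    using assms unfolding vcauchy_def by (meson zero_less_one)
  define B where "B = Max ((\<lambda>k. A (X k)) ` {..M}) + 1"
  have "A (X k) \<le> B" for k
  proof (cases "k \<le> M")
    case True
    then have "A (X k) \<le> Max ((\<lambda>k. A (X k)) ` {..M})" by (intro Max_ge) auto
    then show ?thesis unfolding B_def by simp
  next
    case False
    have "A (X k) = A ((X k - X M) + X M)" by simp
    also have "\<dots> \<le> A (X k - X M) + A (X M)" by (rule avtri)
    also have "A (X k - X M) < 1" using M False by auto
    also have "A (X M) \<le> Max ((\<lambda>k. A (X k)) ` {..M})" by (intro Max_ge) auto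
    finally show ?thesis unfolding B_def by simp
  qed
  moreover have "B > 0"
  proof -
    have "A (X 0) \<le> Max ((\<lambda>k. A (X k)) ` {..M})" by (intro Max_ge) auto
    then show ?thesis using avnn[of "X 0"] unfolding B_def by linarith
  qed
  ultimately show ?thesis by blast
qed

lemma vnull_mult_bdd:
  assumes X: "vnull v X" and B: "B > 0" "\<forall>k. A (Y k) \<le> B"
  shows "vnull v (\<lambda>k. X k * Y k)"
  unfolding vnull_def
proof (intro allI impI)
  fix e :: real assume e: "e > 0"
  obtain M where M: "\<forall>m\<ge>M. A (X m) < e / B" using X e B unfolding vnull_def by (meson divide_pos_pos)
  show "\<exists>M. \<forall>m\<ge>M. A (X m * Y m) < e"
  proof (intro exI allI impI)
    fix m assume "M \<le> m"
    then have "A (X m) < e / B" using M by auto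
    then have "A (X m) * A (Y m) \<le> e / B * B"
      using B avnn[of "Y m"] avnn[of "X m"] by (intro mult_mono) auto
    moreover have "A (X m) * A (Y m) < e / B * B \<or> A (Y m) = 0"
    proof (cases "A (Y m) = 0")
      case False
      then have "A (Y m) > 0" using avnn[of "Y m"] by simp
      then have "A (X m) * A (Y m) < e / B * A (Y m)" using \<open>A (X m) < e / B\<close> by (intro mult_strict_right_mono) auto
      also have "\<dots> \<le> e / B * B" using B e by (intro mult_left_mono) auto
      finally show ?thesis by simp
    qed simp
    ultimately show "A (X m * Y m) < e" using B e by (auto simp: avmul)
  qed
qed

lemma vnull_imp_cauchy_diff:
  assumes "vcauchy v X" "vnull v (\<lambda>k. X k - Y k)" shows "vcauchy v Y"
  unfolding vcauchy_def
proof (intro allI impI)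
  fix e :: real assume e: "e > 0"
  obtain M1 where M1: "\<forall>m\<ge>M1. \<forall>k\<ge>M1. A (X m - X k) < e/3"
    using assms(1) e unfolding vcauchy_def by (meson divide_pos_pos zero_less_numeral)
  obtain M2 where M2: "\<forall>m\<ge>M2. A (X m - Y m) < e/3"
    using assms(2) e unfolding vnull_def by (meson divide_pos_pos zero_less_numeral)
  show "\<exists>M. \<forall>m\<ge>M. \<forall>k\<ge>M. A (Y m - Y k) < e"
  proof (intro exI allI impI)
    fix m k assume "max M1 M2 \<le> m" "max M1 M2 \<le> k"
    then have "A (X m - X k) < e/3" "A (X m - Y m) < e/3" "A (X k - Y k) < e/3"
      using M1 M2 by auto
    moreover have eqY: "Y m - Y k = (X k - Y k) + ((X m - X k) - (X m - Y m))" by simp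
    moreover have "A ((X m - X k) - (X m - Y m)) \<le> A (X m - X k) + A (X m - Y m)"
    proof -
      have "A ((X m - X k) - (X m - Y m)) = A ((X m - X k) + (-(X m - Y m)))" by (simp only: diff_conv_add_uminus)
      also have "\<dots> \<le> A (X m - X k) + A (-(X m - Y m))" by (rule avtri)
      also have "A (X m - X k) + A (-(X m - Y m)) = A (X m - X k) + A (X m - Y m)" by (simp only: avneg)
      finally show ?thesis .
    qed
    ultimately show "A (Y m - Y k) < e" unfolding eqY using avtri[of "X k - Y k" "(X m - X k) - (X m - Y m)"]
      by linarith
  qed
qed

lemma vcauchy_const: "vcauchy v (\<lambda>k. c)"
  unfolding vcauchy_def using av0 by auto

lemma vcauchy_add: "vcauchy v X \<Longrightarrow> vcauchy v Y \<Longrightarrow> vcauchy v (\<lambda>k. X k + Y k)"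
  unfolding vcauchy_def
proof (intro allI impI)
  fix e :: real assume X: "\<forall>e>0. \<exists>M. \<forall>m\<ge>M. \<forall>k\<ge>M. A (X m - X k) < e"
    and Y: "\<forall>e>0. \<exists>M. \<forall>m\<ge>M. \<forall>k\<ge>M. A (Y m - Y k) < e" and e: "0 < e"
  obtain M1 where M1: "\<forall>m\<ge>M1. \<forall>k\<ge>M1. A (X m - X k) < e/2" using X e by (meson half_gt_zero)
  obtain M2 where M2: "\<forall>m\<ge>M2. \<forall>k\<ge>M2. A (Y m - Y k) < e/2" using Y e by (meson half_gt_zero)
  show "\<exists>M. \<forall>m\<ge>M. \<forall>k\<ge>M. A (X m + Y m - (X k + Y k)) < e"
  proof (intro exI allI impI)
    fix m k assume "max M1 M2 \<le> m" "max M1 M2 \<le> k"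
    then have "A (X m - X k) < e/2" "A (Y m - Y k) < e/2" using M1 M2 by auto
    moreover have eq: "X m + Y m - (X k + Y k) = (X m - X k) + (Y m - Y k)" by simp
    ultimately show "A (X m + Y m - (X k + Y k)) < e" unfolding eq using avtri[of "X m - X k" "Y m - Y k"] by linarith
  qed
qed

lemma vcauchy_neg: "vcauchy v X \<Longrightarrow> vcauchy v (\<lambda>k. - X k)"
  unfolding vcauchy_def using avsub by simp

lemma vcauchy_mult:
  assumes X: "vcauchy v X" and Y: "vcauchy v Y" shows "vcauchy v (\<lambda>k. X k * Y k)"
  unfolding vcauchy_def
proof (intro allI impI)
  fix e :: real assume e: "0 < e"
  obtain BX where BX: "BX > 0" "\<forall>k. A (X k) \<le> BX" using vcauchy_bounded[OF X] by blast
  obtain BY where BY: "BY > 0" "\<forall>k. A (Y k) \<le> BY" using vcauchy_bounded[OF Y] by blast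
  have e1: "e / (2 * BX) > 0" and e2: "e / (2 * BY) > 0" using e BX BY by auto
  obtain M1 where M1: "\<forall>m\<ge>M1. \<forall>k\<ge>M1. A (Y m - Y k) < e / (2 * BX)" using Y e1 unfolding vcauchy_def by blast
  obtain M2 where M2: "\<forall>m\<ge>M2. \<forall>k\<ge>M2. A (X m - X k) < e / (2 * BY)" using X e2 unfolding vcauchy_def by blast
  show "\<exists>M. \<forall>m\<ge>M. \<forall>k\<ge>M. A (X m * Y m - X k * Y k) < e"
  proof (intro exI allI impI)
    fix m k assume "max M1 M2 \<le> m" "max M1 M2 \<le> k"
    then have a: "A (Y m - Y k) < e / (2 * BX)" "A (X m - X k) < e / (2 * BY)" using M1 M2 by auto
    have eq: "X m * Y m - X k * Y k = X m * (Y m - Y k) + (X m - X k) * Y k" by (simp add: algebra_simps)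
    have "A (X m * (Y m - Y k)) \<le> BX * (e / (2 * BX))"
      unfolding avmul using a BX avnn e by (intro mult_mono) auto
    moreover have "A ((X m - X k) * Y k) \<le> (e / (2 * BY)) * BY"
      unfolding avmul using a BY avnn e by (intro mult_mono) auto
    moreover have "A (X m * (Y m - Y k)) < BX * (e / (2 * BX)) \<or> A ((X m - X k) * Y k) < (e / (2 * BY)) * BY"
    proof (cases "A (Y m - Y k) = 0")
      case True then show ?thesis using avmul BX e by simp
    next
      case False
      then have "A (Y m - Y k) > 0" using avnn by (simp add: order_less_le)
      have "A (X m * (Y m - Y k)) = A (X m) * A (Y m - Y k)" by (rule avmul)
      also have "\<dots> \<le> BX * A (Y m - Y k)" using BX avnn by (intro mult_right_mono) auto
      also have "\<dots> < BX * (e / (2 * BX))" using a BX by (intro mult_strict_left_mono) auto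
      finally show ?thesis by simp
    qed
    moreover have "BX * (e / (2 * BX)) = e/2" "(e / (2 * BY)) * BY = e/2" using BX BY by auto
    ultimately show "A (X m * Y m - X k * Y k) < e"
      unfolding eq using avtri[of "X m * (Y m - Y k)" "(X m - X k) * Y k"] by linarith
  qed
qed

lemma vclass_self: "vcauchy v X \<Longrightarrow> X \<in> vclass v X"
  unfolding vclass_def using vnull_zero by simp

lemma vclass_eqI:
  assumes "vcauchy v X" "vcauchy v Y" and n: "vnull v (\<lambda>k. X k - Y k)"
  shows "vclass v X = vclass v Y"
proof -
  have n': "vnull v (\<lambda>k. Y k - X k)" using n by (rule vnull_sub_sym)
  have 1: "vnull v (\<lambda>k. Y k - Z k)" if "vnull v (\<lambda>k. X k - Z k)" for Z
    using vnull_trans[of Y X Z, OF n' that] .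
  have 2: "vnull v (\<lambda>k. X k - Z k)" if "vnull v (\<lambda>k. Y k - Z k)" for Z
    using vnull_trans[of X Y Z, OF n that] .
  show ?thesis unfolding vclass_def using 1 2 by auto
qed

lemma vclass_mem_eq: "Y \<in> vclass v X \<Longrightarrow> vcauchy v X \<Longrightarrow> vclass v Y = vclass v X"
  by (rule vclass_eqI) (auto simp: vclass_def intro: vnull_sub_sym)

definition "rep a = (SOME X. X \<in> a)"

lemma rep_props:
  assumes "vcauchy v X"
  shows "rep (vclass v X) \<in> vclass v X" "vcauchy v (rep (vclass v X))"
    "vnull v (\<lambda>k. X k - rep (vclass v X) k)"
proof -
  show 1: "rep (vclass v X) \<in> vclass v X" unfolding rep_def using vclass_self[OF assms] by (rule someI[where P="\<lambda>Y. Y \<in> vclass v X"])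
  then show "vcauchy v (rep (vclass v X))" "vnull v (\<lambda>k. X k - rep (vclass v X) k)"
    unfolding vclass_def by auto
qed

lemma Qv_add_cl:
  assumes X: "vcauchy v X" and Y: "vcauchy v Y"
  shows "add (Qv v) (vclass v X) (vclass v Y) = vclass v (\<lambda>k. X k + Y k)"
proof -
  let ?X = "rep (vclass v X)" and ?Y = "rep (vclass v Y)"
  have "add (Qv v) (vclass v X) (vclass v Y) = vclass v (\<lambda>k. ?X k + ?Y k)"
    unfolding Qv_def rep_def by simp
  also have "\<dots> = vclass v (\<lambda>k. X k + Y k)"
  proof (rule vclass_eqI)
    show "vcauchy v (\<lambda>k. ?X k + ?Y k)" using rep_props(2)[OF X] rep_props(2)[OF Y] by (rule vcauchy_add)
    show "vcauchy v (\<lambda>k. X k + Y k)" using X Y by (rule vcauchy_add)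
    have 1: "vnull v (\<lambda>k. ?X k - X k)" using rep_props(3)[OF X] by (rule vnull_sub_sym)
    have 2: "vnull v (\<lambda>k. ?Y k - Y k)" using rep_props(3)[OF Y] by (rule vnull_sub_sym)
    have "vnull v (\<lambda>k. (?X k - X k) + (?Y k - Y k))" using 1 2 by (rule vnull_add)
    moreover have "(\<lambda>k. (?X k - X k) + (?Y k - Y k)) = (\<lambda>k. ?X k + ?Y k - (X k + Y k))"
      by (rule ext) simp
    ultimately show "vnull v (\<lambda>k. ?X k + ?Y k - (X k + Y k))" by simp
  qed
  finally show ?thesis .
qed

lemma Qv_mult_cl:
  assumes X: "vcauchy v X" and Y: "vcauchy v Y"
  shows "mult (Qv v) (vclass v X) (vclass v Y) = vclass v (\<lambda>k. X k * Y k)"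
proof -
  let ?X = "rep (vclass v X)" and ?Y = "rep (vclass v Y)"
  have "mult (Qv v) (vclass v X) (vclass v Y) = vclass v (\<lambda>k. ?X k * ?Y k)"
    unfolding Qv_def rep_def by simp
  also have "\<dots> = vclass v (\<lambda>k. X k * Y k)"
  proof (rule vclass_eqI)
    show "vcauchy v (\<lambda>k. ?X k * ?Y k)" using rep_props(2)[OF X] rep_props(2)[OF Y] by (rule vcauchy_mult)
    show "vcauchy v (\<lambda>k. X k * Y k)" using X Y by (rule vcauchy_mult)
    obtain BY where BY: "BY > 0" "\<forall>k. A (?Y k) \<le> BY" using vcauchy_bounded[OF rep_props(2)[OF Y]] by blast
    obtain BX where BX: "BX > 0" "\<forall>k. A (X k) \<le> BX" using vcauchy_bounded[OF X] by blast
    have 1: "vnull v (\<lambda>k. (?X k - X k) * ?Y k)"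
      by (rule vnull_mult_bdd[OF vnull_sub_sym[OF rep_props(3)[OF X]] BY])
    have 2: "vnull v (\<lambda>k. (?Y k - Y k) * X k)"
      by (rule vnull_mult_bdd[OF vnull_sub_sym[OF rep_props(3)[OF Y]] BX])
    have "vnull v (\<lambda>k. (?X k - X k) * ?Y k + (?Y k - Y k) * X k)" using 1 2 by (rule vnull_add)
    moreover have "(\<lambda>k. (?X k - X k) * ?Y k + (?Y k - Y k) * X k) = (\<lambda>k. ?X k * ?Y k - X k * Y k)"
      by (rule ext) (simp add: algebra_simps)
    ultimately show "vnull v (\<lambda>k. ?X k * ?Y k - X k * Y k)" by simp
  qed
  finally show ?thesis .
qed

lemma Qv_carrier: "carrier (Qv v) = vclass v ` {X. vcauchy v X}"
  unfolding Qv_def by simp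

lemma Qv_elim:
  assumes "a \<in> carrier (Qv v)" obtains X where "vcauchy v X" "a = vclass v X"
  using assms unfolding Qv_carrier by auto

lemma Qv_in: "vcauchy v X \<Longrightarrow> vclass v X \<in> carrier (Qv v)"
  unfolding Qv_carrier by auto

lemma Qv_zero: "zero (Qv v) = vclass v (\<lambda>k. 0)" and Qv_one: "one (Qv v) = vclass v (\<lambda>k. 1)"
  unfolding Qv_def by auto

lemma Qv_cring: "cring (Qv v)"
proof (rule cringI)
  show "abelian_group (Qv v)"
  proof (rule abelian_groupI)
    fix x y z assume x: "x \<in> carrier (Qv v)" and y: "y \<in> carrier (Qv v)" and z: "z \<in> carrier (Qv v)"
    obtain X where X: "vcauchy v X" "x = vclass v X" using x by (rule Qv_elim)
    obtain Y where Y: "vcauchy v Y" "y = vclass v Y" using y by (rule Qv_elim)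
    obtain Z where Z: "vcauchy v Z" "z = vclass v Z" using z by (rule Qv_elim)
    show "x \<oplus>\<^bsub>Qv v\<^esub> y \<in> carrier (Qv v)" using X Y by (simp add: Qv_add_cl Qv_in vcauchy_add)
    show "x \<oplus>\<^bsub>Qv v\<^esub> y \<oplus>\<^bsub>Qv v\<^esub> z = x \<oplus>\<^bsub>Qv v\<^esub> (y \<oplus>\<^bsub>Qv v\<^esub> z)"
      using X Y Z by (simp add: Qv_add_cl vcauchy_add add.assoc)
    show "x \<oplus>\<^bsub>Qv v\<^esub> y = y \<oplus>\<^bsub>Qv v\<^esub> x"
      using X Y by (simp add: Qv_add_cl add.commute)
    show "\<zero>\<^bsub>Qv v\<^esub> \<oplus>\<^bsub>Qv v\<^esub> x = x"
      using X by (simp add: Qv_zero Qv_add_cl vcauchy_const)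
    show "\<exists>y\<in>carrier (Qv v). y \<oplus>\<^bsub>Qv v\<^esub> x = \<zero>\<^bsub>Qv v\<^esub>"
      using X by (intro bexI[of _ "vclass v (\<lambda>k. - X k)"])
        (simp_all add: Qv_zero Qv_add_cl vcauchy_neg Qv_in)
  next
    show "\<zero>\<^bsub>Qv v\<^esub> \<in> carrier (Qv v)" by (simp add: Qv_zero Qv_in vcauchy_const)
  qed
  show "comm_monoid (Qv v)"
  proof (rule comm_monoidI)
    fix x y z assume x: "x \<in> carrier (Qv v)" and y: "y \<in> carrier (Qv v)" and z: "z \<in> carrier (Qv v)"
    obtain X where X: "vcauchy v X" "x = vclass v X" using x by (rule Qv_elim)
    obtain Y where Y: "vcauchy v Y" "y = vclass v Y" using y by (rule Qv_elim)
    obtain Z where Z: "vcauchy v Z" "z = vclass v Z" using z by (rule Qv_elim)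
    show "x \<otimes>\<^bsub>Qv v\<^esub> y \<in> carrier (Qv v)" using X Y by (simp add: Qv_mult_cl Qv_in vcauchy_mult)
    show "x \<otimes>\<^bsub>Qv v\<^esub> y \<otimes>\<^bsub>Qv v\<^esub> z = x \<otimes>\<^bsub>Qv v\<^esub> (y \<otimes>\<^bsub>Qv v\<^esub> z)"
      using X Y Z by (simp add: Qv_mult_cl vcauchy_mult mult.assoc)
    show "x \<otimes>\<^bsub>Qv v\<^esub> y = y \<otimes>\<^bsub>Qv v\<^esub> x"
      using X Y by (simp add: Qv_mult_cl mult.commute)
    show "\<one>\<^bsub>Qv v\<^esub> \<otimes>\<^bsub>Qv v\<^esub> x = x"
      using X by (simp add: Qv_one Qv_mult_cl vcauchy_const)
  next
    show "\<one>\<^bsub>Qv v\<^esub> \<in> carrier (Qv v)" by (simp add: Qv_one Qv_in vcauchy_const)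
  qed
  fix x y z assume x: "x \<in> carrier (Qv v)" and y: "y \<in> carrier (Qv v)" and z: "z \<in> carrier (Qv v)"
  obtain X where X: "vcauchy v X" "x = vclass v X" using x by (rule Qv_elim)
  obtain Y where Y: "vcauchy v Y" "y = vclass v Y" using y by (rule Qv_elim)
  obtain Z where Z: "vcauchy v Z" "z = vclass v Z" using z by (rule Qv_elim)
  show "(x \<oplus>\<^bsub>Qv v\<^esub> y) \<otimes>\<^bsub>Qv v\<^esub> z = x \<otimes>\<^bsub>Qv v\<^esub> z \<oplus>\<^bsub>Qv v\<^esub> y \<otimes>\<^bsub>Qv v\<^esub> z"
    using X Y Z by (simp add: Qv_mult_cl Qv_add_cl vcauchy_mult vcauchy_add distrib_right)
qed

lemma Qv_neg_cl: "vcauchy v X \<Longrightarrow> a_inv (Qv v) (vclass v X) = vclass v (\<lambda>k. - X k)"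
proof -
  assume X: "vcauchy v X"
  interpret Q: cring "Qv v" by (rule Qv_cring)
  show ?thesis
    by (rule Q.minus_equality) (simp_all add: X Qv_in vcauchy_neg Qv_add_cl Qv_zero)
qed

lemma vrat_hom: "vrat v \<in> ring_hom ratR (Qv v)"
  by (rule ring_hom_memI)
     (simp_all add: vrat_def ratR_def Qv_in vcauchy_const Qv_add_cl Qv_mult_cl Qv_one)

lemma vrat_zero: "vrat v 0 = zero (Qv v)"
  by (simp add: vrat_def Qv_zero)

end

context cring begin

lemma finsum_swap:
  assumes A: "finite A" and B: "finite B" and F: "\<And>i j. i \<in> A \<Longrightarrow> j \<in> B \<Longrightarrow> F i j \<in> carrier R"
  shows "(\<Oplus>i\<in>A. \<Oplus>j\<in>B. F i j) = (\<Oplus>j\<in>B. \<Oplus>i\<in>A. F i j)"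
  using A F
proof (induction A rule: finite_induct)
  case empty then show ?case by (simp add: finsum_zero)
next
  case (insert a A)
  have "(\<Oplus>i\<in>insert a A. \<Oplus>j\<in>B. F i j) = (\<Oplus>j\<in>B. F a j) \<oplus> (\<Oplus>i\<in>A. \<Oplus>j\<in>B. F i j)"
    using insert by (intro finsum_insert) (auto intro!: finsum_closed)
  also have "(\<Oplus>i\<in>A. \<Oplus>j\<in>B. F i j) = (\<Oplus>j\<in>B. \<Oplus>i\<in>A. F i j)" using insert by auto
  also have "(\<Oplus>j\<in>B. F a j) \<oplus> (\<Oplus>j\<in>B. \<Oplus>i\<in>A. F i j) = (\<Oplus>j\<in>B. F a j \<oplus> (\<Oplus>i\<in>A. F i j))"
    using insert by (intro finsum_addf[symmetric]) (auto intro!: finsum_closed)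
  also have "\<dots> = (\<Oplus>j\<in>B. \<Oplus>i\<in>insert a A. F i j)"
    using insert by (intro finsum_cong') (auto intro!: finsum_insert[symmetric])
  finally show ?case .
qed

lemma finsum_eq_support:
  assumes "finite A" "S \<subseteq> A" "\<And>i. i \<in> A - S \<Longrightarrow> F i = \<zero>" "\<And>i. i \<in> A \<Longrightarrow> F i \<in> carrier R"
  shows "finsum R F S = finsum R F A"
  by (rule add.finprod_mono_neutral_cong_left) (use assms in auto)

lemma ls_carrier: "carrier (ls_ring R) = {f. (\<forall>i. f i \<in> carrier R) \<and> (\<exists>M. \<forall>i<M. f i = \<zero>)}"
  unfolding ls_ring_def by simp

lemma ls_mult: "f \<otimes>\<^bsub>ls_ring R\<^esub> g = (\<lambda>k. \<Oplus>i\<in>{i. f i \<noteq> \<zero> \<and> g (k - i) \<noteq> \<zero>}. f i \<otimes> g (k - i))"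
  unfolding ls_ring_def by simp

lemma ls_add: "f \<oplus>\<^bsub>ls_ring R\<^esub> g = (\<lambda>i. f i \<oplus> g i)"
  and ls_zero: "\<zero>\<^bsub>ls_ring R\<^esub> = (\<lambda>i. \<zero>)"
  and ls_one: "\<one>\<^bsub>ls_ring R\<^esub> = (\<lambda>i. if i = 0 then \<one> else \<zero>)"
  unfolding ls_ring_def by simp_all

lemma ls_in: "f \<in> carrier (ls_ring R) \<Longrightarrow> f i \<in> carrier R"
  unfolding ls_carrier by auto

lemma ls_lb: "f \<in> carrier (ls_ring R) \<Longrightarrow> \<exists>M. \<forall>i<M. f i = \<zero>"
  unfolding ls_carrier by auto

lemma ls_inI: "(\<And>i. f i \<in> carrier R) \<Longrightarrow> (\<And>i. i < M \<Longrightarrow> f i = \<zero>) \<Longrightarrow> f \<in> carrier (ls_ring R)"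
  unfolding ls_carrier by auto

lemma ls_mult_eq:
  assumes f: "f \<in> carrier (ls_ring R)" and g: "g \<in> carrier (ls_ring R)" and A: "finite A"
    and z: "\<And>i. i \<notin> A \<Longrightarrow> f i = \<zero> \<or> g (k - i) = \<zero>"
  shows "(f \<otimes>\<^bsub>ls_ring R\<^esub> g) k = (\<Oplus>i\<in>A. f i \<otimes> g (k - i))"
  unfolding ls_mult
proof (rule finsum_eq_support[OF A])
  show "{i. f i \<noteq> \<zero> \<and> g (k - i) \<noteq> \<zero>} \<subseteq> A" using z by auto
  show "\<And>i. i \<in> A - {i. f i \<noteq> \<zero> \<and> g (k - i) \<noteq> \<zero>} \<Longrightarrow> f i \<otimes> g (k - i) = \<zero>"
    using ls_in[OF f] ls_in[OF g] by auto
  show "\<And>i. i \<in> A \<Longrightarrow> f i \<otimes> g (k - i) \<in> carrier R" using ls_in[OF f] ls_in[OF g] by auto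
qed

lemma ls_mult_low:
  assumes f: "f \<in> carrier (ls_ring R)" and g: "g \<in> carrier (ls_ring R)"
    and Mf: "\<forall>i<Mf. f i = \<zero>" and Mg: "\<forall>i<Mg. g i = \<zero>" and k: "k < Mf + Mg"
  shows "(f \<otimes>\<^bsub>ls_ring R\<^esub> g) k = \<zero>"
proof -
  have "(f \<otimes>\<^bsub>ls_ring R\<^esub> g) k = (\<Oplus>i\<in>{}. f i \<otimes> g (k - i))"
    using Mf Mg k by (intro ls_mult_eq f g) (auto, smt (verit))
  then show ?thesis by simp
qed

lemma ls_mult_closed:
  assumes f: "f \<in> carrier (ls_ring R)" and g: "g \<in> carrier (ls_ring R)"
  shows "f \<otimes>\<^bsub>ls_ring R\<^esub> g \<in> carrier (ls_ring R)"
proof -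
  obtain Mf where Mf: "\<forall>i<Mf. f i = \<zero>" using ls_lb[OF f] by blast
  obtain Mg where Mg: "\<forall>i<Mg. g i = \<zero>" using ls_lb[OF g] by blast
  show ?thesis
  proof (rule ls_inI)
    show "(f \<otimes>\<^bsub>ls_ring R\<^esub> g) i \<in> carrier R" for i
      unfolding ls_mult using ls_in[OF f] ls_in[OF g] by (auto intro!: finsum_closed)
    show "i < Mf + Mg \<Longrightarrow> (f \<otimes>\<^bsub>ls_ring R\<^esub> g) i = \<zero>" for i
      by (rule ls_mult_low[OF f g Mf Mg])
  qed
qed

lemma ls_add_closed:
  assumes f: "f \<in> carrier (ls_ring R)" and g: "g \<in> carrier (ls_ring R)"
  shows "f \<oplus>\<^bsub>ls_ring R\<^esub> g \<in> carrier (ls_ring R)"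
proof -
  obtain Mf where Mf: "\<forall>i<Mf. f i = \<zero>" using ls_lb[OF f] by blast
  obtain Mg where Mg: "\<forall>i<Mg. g i = \<zero>" using ls_lb[OF g] by blast
  show ?thesis unfolding ls_add
    by (rule ls_inI[of _ "min Mf Mg"]) (use Mf Mg ls_in[OF f] ls_in[OF g] in auto)
qed

lemma ls_mult_assoc:
  assumes f: "f \<in> carrier (ls_ring R)" and g: "g \<in> carrier (ls_ring R)" and h: "h \<in> carrier (ls_ring R)"
  shows "(f \<otimes>\<^bsub>ls_ring R\<^esub> g) \<otimes>\<^bsub>ls_ring R\<^esub> h = f \<otimes>\<^bsub>ls_ring R\<^esub> (g \<otimes>\<^bsub>ls_ring R\<^esub> h)"
proof
  fix k
  obtain Mf where Mf: "\<forall>i<Mf. f i = \<zero>" using ls_lb[OF f] by blast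
  obtain Mg where Mg: "\<forall>i<Mg. g i = \<zero>" using ls_lb[OF g] by blast
  obtain Mh where Mh: "\<forall>i<Mh. h i = \<zero>" using ls_lb[OF h] by blast
  define I where "I = {Mf..k - Mg - Mh}"
  define J where "J = {Mf + Mg..k - Mh}"
  have fI: "finite I" and fJ: "finite J" unfolding I_def J_def by auto
  have fg: "f \<otimes>\<^bsub>ls_ring R\<^esub> g \<in> carrier (ls_ring R)" by (rule ls_mult_closed[OF f g])
  have gh: "g \<otimes>\<^bsub>ls_ring R\<^esub> h \<in> carrier (ls_ring R)" by (rule ls_mult_closed[OF g h])
  have fR: "f i \<in> carrier R" and gR: "g i \<in> carrier R" and hR: "h i \<in> carrier R" for i
    using ls_in f g h by auto
  have "((f \<otimes>\<^bsub>ls_ring R\<^esub> g) \<otimes>\<^bsub>ls_ring R\<^esub> h) k = (\<Oplus>j\<in>J. (f \<otimes>\<^bsub>ls_ring R\<^esub> g) j \<otimes> h (k - j))"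
  proof (rule ls_mult_eq[OF fg h fJ])
    fix j assume "j \<notin> J"
    then have "j < Mf + Mg \<or> k - j < Mh" unfolding J_def by auto
    then show "(f \<otimes>\<^bsub>ls_ring R\<^esub> g) j = \<zero> \<or> h (k - j) = \<zero>"
      using ls_mult_low[OF f g Mf Mg] Mh by auto
  qed
  also have "\<dots> = (\<Oplus>j\<in>J. (\<Oplus>i\<in>I. f i \<otimes> g (j - i)) \<otimes> h (k - j))"
  proof (rule finsum_cong')
    fix j assume j: "j \<in> J"
    have "(f \<otimes>\<^bsub>ls_ring R\<^esub> g) j = (\<Oplus>i\<in>I. f i \<otimes> g (j - i))"
    proof (rule ls_mult_eq[OF f g fI])
      fix i assume "i \<notin> I"
      then have "i < Mf \<or> j - i < Mg" using j unfolding I_def J_def by auto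
      then show "f i = \<zero> \<or> g (j - i) = \<zero>" using Mf Mg by auto
    qed
    then show "(f \<otimes>\<^bsub>ls_ring R\<^esub> g) j \<otimes> h (k - j) = (\<Oplus>i\<in>I. f i \<otimes> g (j - i)) \<otimes> h (k - j)" by simp
  qed (use fR gR hR in \<open>auto intro!: finsum_closed\<close>)
  also have "\<dots> = (\<Oplus>j\<in>J. \<Oplus>i\<in>I. f i \<otimes> g (j - i) \<otimes> h (k - j))"
    by (rule finsum_cong') (use fR gR hR fI in \<open>auto intro!: finsum_closed finsum_ldistr\<close>)
  also have "\<dots> = (\<Oplus>i\<in>I. \<Oplus>j\<in>J. f i \<otimes> (g (j - i) \<otimes> h (k - j)))"
    by (subst finsum_swap) (use fI fJ fR gR hR in \<open>auto intro!: finsum_cong' simp: m_assoc\<close>)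
  also have "\<dots> = (\<Oplus>i\<in>I. f i \<otimes> (\<Oplus>j\<in>J. g (j - i) \<otimes> h (k - j)))"
    by (rule finsum_cong') (use fR gR hR fJ in \<open>auto intro!: finsum_closed finsum_rdistr[symmetric]\<close>)
  also have "\<dots> = (\<Oplus>i\<in>I. f i \<otimes> (g \<otimes>\<^bsub>ls_ring R\<^esub> h) (k - i))"
  proof (rule finsum_cong')
    fix i assume i: "i \<in> I"
    have inj: "inj_on (\<lambda>j. j - i) J" by (auto simp: inj_on_def)
    have "(g \<otimes>\<^bsub>ls_ring R\<^esub> h) (k - i) = (\<Oplus>l\<in>(\<lambda>j. j - i) ` J. g l \<otimes> h (k - i - l))"
    proof (rule ls_mult_eq[OF g h])
      show "finite ((\<lambda>j. j - i) ` J)" using fJ by simp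
      fix l assume "l \<notin> (\<lambda>j. j - i) ` J"
      then have "l + i \<notin> J" by (metis (no_types, lifting) add_diff_cancel_right' image_eqI)
      then have "l + i < Mf + Mg \<or> l + i > k - Mh" unfolding J_def by auto
      then have "l < Mg \<or> k - i - l < Mh" using i unfolding I_def by auto
      then show "g l = \<zero> \<or> h (k - i - l) = \<zero>" using Mg Mh by auto
    qed
    also have "\<dots> = (\<Oplus>j\<in>J. g (j - i) \<otimes> h (k - i - (j - i)))"
      by (rule finsum_reindex) (use gR hR inj in auto)
    also have "\<dots> = (\<Oplus>j\<in>J. g (j - i) \<otimes> h (k - j))" by simp
    finally show "f i \<otimes> (\<Oplus>j\<in>J. g (j - i) \<otimes> h (k - j)) = f i \<otimes> (g \<otimes>\<^bsub>ls_ring R\<^esub> h) (k - i)" by simp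
  qed (use fR gR hR fJ ls_in[OF gh] in \<open>auto intro!: finsum_closed\<close>)
  also have "\<dots> = (f \<otimes>\<^bsub>ls_ring R\<^esub> (g \<otimes>\<^bsub>ls_ring R\<^esub> h)) k"
  proof (rule ls_mult_eq[OF f gh fI, symmetric])
    fix i assume "i \<notin> I"
    then have "i < Mf \<or> k - i < Mg + Mh" unfolding I_def by auto
    then show "f i = \<zero> \<or> (g \<otimes>\<^bsub>ls_ring R\<^esub> h) (k - i) = \<zero>"
      using Mf ls_mult_low[OF g h Mg Mh] by auto
  qed
  finally show "((f \<otimes>\<^bsub>ls_ring R\<^esub> g) \<otimes>\<^bsub>ls_ring R\<^esub> h) k = (f \<otimes>\<^bsub>ls_ring R\<^esub> (g \<otimes>\<^bsub>ls_ring R\<^esub> h)) k" .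
qed

lemma ls_mult_comm:
  assumes f: "f \<in> carrier (ls_ring R)" and g: "g \<in> carrier (ls_ring R)"
  shows "f \<otimes>\<^bsub>ls_ring R\<^esub> g = g \<otimes>\<^bsub>ls_ring R\<^esub> f"
proof
  fix k
  obtain Mf where Mf: "\<forall>i<Mf. f i = \<zero>" using ls_lb[OF f] by blast
  obtain Mg where Mg: "\<forall>i<Mg. g i = \<zero>" using ls_lb[OF g] by blast
  have fR: "f i \<in> carrier R" and gR: "g i \<in> carrier R" for i using ls_in f g by auto
  define I where "I = {Mg..k - Mf}"
  have inj: "inj_on (\<lambda>i. k - i) I" by (auto simp: inj_on_def)
  have "(f \<otimes>\<^bsub>ls_ring R\<^esub> g) k = (\<Oplus>i\<in>(\<lambda>i. k - i) ` I. f i \<otimes> g (k - i))"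
  proof (rule ls_mult_eq[OF f g])
    show "finite ((\<lambda>i. k - i) ` I)" unfolding I_def by simp
    fix i assume "i \<notin> (\<lambda>i. k - i) ` I"
    then have "k - i \<notin> I" using image_eqI[of i "\<lambda>i. k - i" "k - i" I] by auto
    then have "k - i < Mg \<or> i < Mf" unfolding I_def by auto
    then show "f i = \<zero> \<or> g (k - i) = \<zero>" using Mf Mg by auto
  qed
  also have "\<dots> = (\<Oplus>i\<in>I. f (k - i) \<otimes> g (k - (k - i)))"
    by (rule finsum_reindex) (use fR gR inj in auto)
  also have "\<dots> = (\<Oplus>i\<in>I. g i \<otimes> f (k - i))"
    by (rule finsum_cong') (use fR gR in \<open>auto simp: m_comm\<close>)
  also have "\<dots> = (g \<otimes>\<^bsub>ls_ring R\<^esub> f) k"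
  proof (rule ls_mult_eq[OF g f, symmetric])
    show "finite I" unfolding I_def by simp
    fix i assume "i \<notin> I"
    then have "i < Mg \<or> k - i < Mf" unfolding I_def by auto
    then show "g i = \<zero> \<or> f (k - i) = \<zero>" using Mf Mg by auto
  qed
  finally show "(f \<otimes>\<^bsub>ls_ring R\<^esub> g) k = (g \<otimes>\<^bsub>ls_ring R\<^esub> f) k" .
qed

lemma ls_one_closed: "\<one>\<^bsub>ls_ring R\<^esub> \<in> carrier (ls_ring R)"
  unfolding ls_one by (rule ls_inI[of _ 0]) auto

lemma ls_zero_closed: "\<zero>\<^bsub>ls_ring R\<^esub> \<in> carrier (ls_ring R)"
  unfolding ls_zero by (rule ls_inI[of _ 0]) auto

lemma ls_l_one:
  assumes f: "f \<in> carrier (ls_ring R)"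
  shows "\<one>\<^bsub>ls_ring R\<^esub> \<otimes>\<^bsub>ls_ring R\<^esub> f = f"
proof
  fix k
  have "(\<one>\<^bsub>ls_ring R\<^esub> \<otimes>\<^bsub>ls_ring R\<^esub> f) k = (\<Oplus>i\<in>{0}. \<one>\<^bsub>ls_ring R\<^esub> i \<otimes> f (k - i))"
    by (rule ls_mult_eq[OF ls_one_closed f]) (auto simp: ls_one)
  then show "(\<one>\<^bsub>ls_ring R\<^esub> \<otimes>\<^bsub>ls_ring R\<^esub> f) k = f k" using ls_in[OF f] by (simp add: ls_one)
qed

lemma ls_l_distr:
  assumes f: "f \<in> carrier (ls_ring R)" and g: "g \<in> carrier (ls_ring R)" and h: "h \<in> carrier (ls_ring R)"
  shows "(f \<oplus>\<^bsub>ls_ring R\<^esub> g) \<otimes>\<^bsub>ls_ring R\<^esub> h = f \<otimes>\<^bsub>ls_ring R\<^esub> h \<oplus>\<^bsub>ls_ring R\<^esub> g \<otimes>\<^bsub>ls_ring R\<^esub> h"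
proof
  fix k
  obtain Mf where Mf: "\<forall>i<Mf. f i = \<zero>" using ls_lb[OF f] by blast
  obtain Mg where Mg: "\<forall>i<Mg. g i = \<zero>" using ls_lb[OF g] by blast
  obtain Mh where Mh: "\<forall>i<Mh. h i = \<zero>" using ls_lb[OF h] by blast
  have fR: "f i \<in> carrier R" and gR: "g i \<in> carrier R" and hR: "h i \<in> carrier R" for i
    using ls_in f g h by auto
  define I where "I = {min Mf Mg..k - Mh}"
  have fI: "finite I" unfolding I_def by simp
  have z: "i \<notin> I \<Longrightarrow> (i < Mf \<and> i < Mg) \<or> h (k - i) = \<zero>" for i using Mh unfolding I_def by auto
  have "((f \<oplus>\<^bsub>ls_ring R\<^esub> g) \<otimes>\<^bsub>ls_ring R\<^esub> h) k = (\<Oplus>i\<in>I. (f \<oplus>\<^bsub>ls_ring R\<^esub> g) i \<otimes> h (k - i))"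
  proof (rule ls_mult_eq[OF ls_add_closed[OF f g] h fI])
    fix i assume "i \<notin> I"
    then have "(i < Mf \<and> i < Mg) \<or> h (k - i) = \<zero>" by (rule z)
    then show "(f \<oplus>\<^bsub>ls_ring R\<^esub> g) i = \<zero> \<or> h (k - i) = \<zero>" using Mf Mg by (auto simp: ls_add)
  qed
  also have "\<dots> = (\<Oplus>i\<in>I. (f i \<oplus> g i) \<otimes> h (k - i))" by (simp add: ls_add)
  also have "\<dots> = (\<Oplus>i\<in>I. f i \<otimes> h (k - i) \<oplus> g i \<otimes> h (k - i))"
    by (rule finsum_cong') (use fR gR hR in \<open>auto simp: l_distr\<close>)
  also have "\<dots> = (\<Oplus>i\<in>I. f i \<otimes> h (k - i)) \<oplus> (\<Oplus>i\<in>I. g i \<otimes> h (k - i))"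
    by (rule finsum_addf) (use fR gR hR in auto)
  also have "\<dots> = (f \<otimes>\<^bsub>ls_ring R\<^esub> h \<oplus>\<^bsub>ls_ring R\<^esub> g \<otimes>\<^bsub>ls_ring R\<^esub> h) k"
    unfolding ls_add using z Mf Mg
    by (subst ls_mult_eq[OF f h fI], force, subst ls_mult_eq[OF g h fI], force, simp)
  finally show "((f \<oplus>\<^bsub>ls_ring R\<^esub> g) \<otimes>\<^bsub>ls_ring R\<^esub> h) k = (f \<otimes>\<^bsub>ls_ring R\<^esub> h \<oplus>\<^bsub>ls_ring R\<^esub> g \<otimes>\<^bsub>ls_ring R\<^esub> h) k" .
qed

lemma ls_cring: "cring (ls_ring R)"
proof (rule cringI)
  show "abelian_group (ls_ring R)"
  proof (rule abelian_groupI)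
    fix x y z assume x: "x \<in> carrier (ls_ring R)" and y: "y \<in> carrier (ls_ring R)" and z: "z \<in> carrier (ls_ring R)"
    show "x \<oplus>\<^bsub>ls_ring R\<^esub> y \<in> carrier (ls_ring R)" by (rule ls_add_closed[OF x y])
    show "x \<oplus>\<^bsub>ls_ring R\<^esub> y \<oplus>\<^bsub>ls_ring R\<^esub> z = x \<oplus>\<^bsub>ls_ring R\<^esub> (y \<oplus>\<^bsub>ls_ring R\<^esub> z)"
      unfolding ls_add using ls_in[OF x] ls_in[OF y] ls_in[OF z] by (auto simp: a_assoc)
    show "x \<oplus>\<^bsub>ls_ring R\<^esub> y = y \<oplus>\<^bsub>ls_ring R\<^esub> x"
      unfolding ls_add using ls_in[OF x] ls_in[OF y] by (auto simp: a_comm)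
    show "\<zero>\<^bsub>ls_ring R\<^esub> \<oplus>\<^bsub>ls_ring R\<^esub> x = x"
      unfolding ls_add ls_zero using ls_in[OF x] by auto
    obtain M where M: "\<forall>i<M. x i = \<zero>" using ls_lb[OF x] by blast
    show "\<exists>y\<in>carrier (ls_ring R). y \<oplus>\<^bsub>ls_ring R\<^esub> x = \<zero>\<^bsub>ls_ring R\<^esub>"
    proof (intro bexI)
      show "(\<lambda>i. \<ominus> x i) \<in> carrier (ls_ring R)" by (rule ls_inI[of _ M]) (use M ls_in[OF x] in auto)
      show "(\<lambda>i. \<ominus> x i) \<oplus>\<^bsub>ls_ring R\<^esub> x = \<zero>\<^bsub>ls_ring R\<^esub>"
        unfolding ls_add ls_zero using ls_in[OF x] by (auto simp: l_neg)
    qed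
  next
    show "\<zero>\<^bsub>ls_ring R\<^esub> \<in> carrier (ls_ring R)" by (rule ls_zero_closed)
  qed
  show "comm_monoid (ls_ring R)"
    by (rule comm_monoidI) (auto intro: ls_mult_closed ls_one_closed ls_mult_assoc ls_l_one ls_mult_comm)
  show "\<And>x y z. x \<in> carrier (ls_ring R) \<Longrightarrow> y \<in> carrier (ls_ring R) \<Longrightarrow> z \<in> carrier (ls_ring R) \<Longrightarrow>
     (x \<oplus>\<^bsub>ls_ring R\<^esub> y) \<otimes>\<^bsub>ls_ring R\<^esub> z = x \<otimes>\<^bsub>ls_ring R\<^esub> z \<oplus>\<^bsub>ls_ring R\<^esub> y \<otimes>\<^bsub>ls_ring R\<^esub> z"
    by (rule ls_l_distr)
qed

end

context cring begin

lemma ls_neg: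
  assumes f: "f \<in> carrier (ls_ring R)"
  shows "a_inv (ls_ring R) f = (\<lambda>i. \<ominus> f i)"
proof -
  interpret L: cring "ls_ring R" by (rule ls_cring)
  obtain M where M: "\<forall>i<M. f i = \<zero>" using ls_lb[OF f] by blast
  have c: "(\<lambda>i. \<ominus> f i) \<in> carrier (ls_ring R)" by (rule ls_inI[of _ M]) (use M ls_in[OF f] in auto)
  show ?thesis
    by (rule L.minus_equality[OF _ f c]) (use ls_in[OF f] in \<open>auto simp: ls_add ls_zero l_neg\<close>)
qed

lemma ps_carrier_iff: "f \<in> ps_carrier R \<longleftrightarrow> f \<in> carrier (ls_ring R) \<and> (\<forall>i<0. f i = \<zero>)"
  unfolding ps_carrier_def by simp

lemma ps_mult_closed: "f \<in> ps_carrier R \<Longrightarrow> g \<in> ps_carrier R \<Longrightarrow> f \<otimes>\<^bsub>ls_ring R\<^esub> g \<in> ps_carrier R"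
  unfolding ps_carrier_iff using ls_mult_closed ls_mult_low[of f g 0 0] by auto

lemma ps_add_closed: "f \<in> ps_carrier R \<Longrightarrow> g \<in> ps_carrier R \<Longrightarrow> f \<oplus>\<^bsub>ls_ring R\<^esub> g \<in> ps_carrier R"
  unfolding ps_carrier_iff using ls_add_closed by (auto simp: ls_add)

lemma ps_neg_closed:
  assumes f: "f \<in> ps_carrier R" shows "a_inv (ls_ring R) f \<in> ps_carrier R"
proof -
  interpret L: cring "ls_ring R" by (rule ls_cring)
  have fc: "f \<in> carrier (ls_ring R)" and f0: "\<forall>i<0. f i = \<zero>" using f unfolding ps_carrier_iff by auto
  have "a_inv (ls_ring R) f \<in> carrier (ls_ring R)" using fc by (rule L.a_inv_closed)
  moreover have "\<forall>i<0. a_inv (ls_ring R) f i = \<zero>" using ls_neg[OF fc] f0 by simp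
  ultimately show ?thesis unfolding ps_carrier_iff by simp
qed

lemma ps_one: "\<one>\<^bsub>ls_ring R\<^esub> \<in> ps_carrier R" and ps_zero: "\<zero>\<^bsub>ls_ring R\<^esub> \<in> ps_carrier R"
  unfolding ps_carrier_iff using ls_one_closed ls_zero_closed by (auto simp: ls_one ls_zero)

lemma ps_mult_0:
  assumes f: "f \<in> ps_carrier R" and g: "g \<in> ps_carrier R"
  shows "(f \<otimes>\<^bsub>ls_ring R\<^esub> g) 0 = f 0 \<otimes> g 0"
proof -
  have fc: "f \<in> carrier (ls_ring R)" and gc: "g \<in> carrier (ls_ring R)" using f g ps_carrier_iff by auto
  have "(f \<otimes>\<^bsub>ls_ring R\<^esub> g) 0 = (\<Oplus>i\<in>{0}. f i \<otimes> g (0 - i))"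
  proof (rule ls_mult_eq[OF fc gc])
    fix i :: int assume "i \<notin> {0}"
    then have "i < 0 \<or> 0 - i < 0" by auto
    then show "f i = \<zero> \<or> g (0 - i) = \<zero>" using f g ps_carrier_iff by blast
  qed simp
  then show ?thesis using ls_in[OF fc] ls_in[OF gc] by simp
qed

end

lemma ls_map_carrier:
  assumes hc: "ring_hom_cring R S h" and f: "f \<in> carrier (ls_ring R)"
  shows "(\<lambda>i. h (f i)) \<in> carrier (ls_ring S)"
proof -
  interpret H: ring_hom_cring R S h by (rule hc)
  obtain M where M: "\<forall>i<M. f i = \<zero>\<^bsub>R\<^esub>" using H.R.ls_lb[OF f] by blast
  show ?thesis by (rule H.S.ls_inI[of _ M]) (use M H.R.ls_in[OF f] in auto)
qed

lemma ls_map_mult: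
  assumes hc: "ring_hom_cring R S h" and f: "f \<in> carrier (ls_ring R)" and g: "g \<in> carrier (ls_ring R)"
  shows "(\<lambda>i. h ((f \<otimes>\<^bsub>ls_ring R\<^esub> g) i)) = (\<lambda>i. h (f i)) \<otimes>\<^bsub>ls_ring S\<^esub> (\<lambda>i. h (g i))"
proof
  fix k
  interpret H: ring_hom_cring R S h by (rule hc)
  obtain Mf where Mf: "\<forall>i<Mf. f i = \<zero>\<^bsub>R\<^esub>" using H.R.ls_lb[OF f] by blast
  obtain Mg where Mg: "\<forall>i<Mg. g i = \<zero>\<^bsub>R\<^esub>" using H.R.ls_lb[OF g] by blast
  define I where "I = {Mf..k - Mg}"
  have fI: "finite I" unfolding I_def by simp
  have z: "i \<notin> I \<Longrightarrow> f i = \<zero>\<^bsub>R\<^esub> \<or> g (k - i) = \<zero>\<^bsub>R\<^esub>" for i using Mf Mg unfolding I_def by auto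
  have "(f \<otimes>\<^bsub>ls_ring R\<^esub> g) k = (\<Oplus>\<^bsub>R\<^esub>i\<in>I. f i \<otimes>\<^bsub>R\<^esub> g (k - i))"
    by (rule H.R.ls_mult_eq[OF f g fI z])
  then have "h ((f \<otimes>\<^bsub>ls_ring R\<^esub> g) k) = (\<Oplus>\<^bsub>S\<^esub>i\<in>I. h (f i) \<otimes>\<^bsub>S\<^esub> h (g (k - i)))"
    using H.R.ls_in[OF f] H.R.ls_in[OF g] by (simp add: comp_def)
  also have "\<dots> = ((\<lambda>i. h (f i)) \<otimes>\<^bsub>ls_ring S\<^esub> (\<lambda>i. h (g i))) k"
  proof (rule H.S.ls_mult_eq[OF ls_map_carrier[OF hc f] ls_map_carrier[OF hc g] fI, symmetric])
    fix i assume "i \<notin> I"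
    then have "f i = \<zero>\<^bsub>R\<^esub> \<or> g (k - i) = \<zero>\<^bsub>R\<^esub>" by (rule z)
    then show "h (f i) = \<zero>\<^bsub>S\<^esub> \<or> h (g (k - i)) = \<zero>\<^bsub>S\<^esub>" by auto
  qed
  finally show "h ((f \<otimes>\<^bsub>ls_ring R\<^esub> g) k) = ((\<lambda>i. h (f i)) \<otimes>\<^bsub>ls_ring S\<^esub> (\<lambda>i. h (g i))) k" .
qed

lemma ls_map_add:
  assumes hc: "ring_hom_cring R S h" and f: "f \<in> carrier (ls_ring R)" and g: "g \<in> carrier (ls_ring R)"
  shows "(\<lambda>i. h ((f \<oplus>\<^bsub>ls_ring R\<^esub> g) i)) = (\<lambda>i. h (f i)) \<oplus>\<^bsub>ls_ring S\<^esub> (\<lambda>i. h (g i))"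
proof -
  interpret H: ring_hom_cring R S h by (rule hc)
  show ?thesis using H.R.ls_in[OF f] H.R.ls_in[OF g] by (simp add: H.R.ls_add H.S.ls_add)
qed

lemma Fin_places: "prime p \<Longrightarrow> Fin p \<in> places"
  unfolding places_def by auto

lemma av_Fin: "prime p \<Longrightarrow> absv (rat_absv (Fin p))"
  by (rule absv_places[OF Fin_places])

lemma Zv_sub: "Zv v \<subseteq> carrier (Qv v)"
  unfolding Zv_def by auto

lemma Zv_elim:
  assumes "prime p" "a \<in> Zv (Fin p)"
  obtains X where "vcauchy (Fin p) X" "a = vclass (Fin p) X" "\<forall>k. rat_absv (Fin p) (X k) \<le> 1"
proof -
  obtain X0 where X0: "vcauchy (Fin p) X0" "a = vclass (Fin p) X0"
    using assms Qv_elim[OF av_Fin[OF assms(1)]] unfolding Zv_def by blast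
  obtain X where X: "X \<in> a" "\<forall>k. rat_absv (Fin p) (X k) \<le> 1" using assms unfolding Zv_def by blast
  have "vcauchy (Fin p) X" using X(1) X0(2) unfolding vclass_def by auto
  moreover have "a = vclass (Fin p) X" using vclass_mem_eq[OF av_Fin[OF assms(1)]] X(1) X0 by metis
  ultimately show ?thesis using that X(2) by blast
qed

lemma Zv_intro:
  assumes "prime p" "vcauchy (Fin p) X" "\<forall>k. rat_absv (Fin p) (X k) \<le> 1"
  shows "vclass (Fin p) X \<in> Zv (Fin p)"
  unfolding Zv_def using assms Qv_in[OF av_Fin[OF assms(1)]] vclass_self[OF av_Fin[OF assms(1)]] by blast

lemma Zv_vrat:
  assumes "prime p" "rat_absv (Fin p) q \<le> 1"
  shows "vrat (Fin p) q \<in> Zv (Fin p)"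
  unfolding vrat_def using assms by (intro Zv_intro vcauchy_const av_Fin) auto

lemma Zv_zero: "prime p \<Longrightarrow> \<zero>\<^bsub>Qv (Fin p)\<^esub> \<in> Zv (Fin p)"
  using Zv_vrat[of p 0] by (simp add: vrat_zero[OF av_Fin])

lemma Zv_one: "prime p \<Longrightarrow> \<one>\<^bsub>Qv (Fin p)\<^esub> \<in> Zv (Fin p)"
  using Zv_vrat[of p 1] av_Fin[of p] by (simp add: vrat_def Qv_one absv_def)

lemma Zv_add:
  assumes p: "prime p" and a: "a \<in> Zv (Fin p)" and b: "b \<in> Zv (Fin p)"
  shows "a \<oplus>\<^bsub>Qv (Fin p)\<^esub> b \<in> Zv (Fin p)"
proof -
  note av = av_Fin[OF p]
  obtain X where X: "vcauchy (Fin p) X" "a = vclass (Fin p) X" "\<forall>k. rat_absv (Fin p) (X k) \<le> 1"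
    using Zv_elim[OF p a] by blast
  obtain Y where Y: "vcauchy (Fin p) Y" "b = vclass (Fin p) Y" "\<forall>k. rat_absv (Fin p) (Y k) \<le> 1"
    using Zv_elim[OF p b] by blast
  have "rat_absv (Fin p) (X k + Y k) \<le> 1" for k
    using fin_ultra[OF p, of "X k" "Y k"] X(3) Y(3) by (smt (verit))
  then show ?thesis using X Y Qv_add_cl[OF av] vcauchy_add[OF av] Zv_intro[OF p] by simp
qed

lemma Zv_mult:
  assumes p: "prime p" and a: "a \<in> Zv (Fin p)" and b: "b \<in> Zv (Fin p)"
  shows "a \<otimes>\<^bsub>Qv (Fin p)\<^esub> b \<in> Zv (Fin p)"
proof -
  note av = av_Fin[OF p]
  obtain X where X: "vcauchy (Fin p) X" "a = vclass (Fin p) X" "\<forall>k. rat_absv (Fin p) (X k) \<le> 1"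
    using Zv_elim[OF p a] by blast
  obtain Y where Y: "vcauchy (Fin p) Y" "b = vclass (Fin p) Y" "\<forall>k. rat_absv (Fin p) (Y k) \<le> 1"
    using Zv_elim[OF p b] by blast
  have "rat_absv (Fin p) (X k * Y k) \<le> 1" for k
    using X(3) Y(3) avmul[OF av] avnn[OF av] by (metis mult_le_one)
  then show ?thesis using X Y Qv_mult_cl[OF av] vcauchy_mult[OF av] Zv_intro[OF p] by simp
qed

lemma Zv_neg:
  assumes p: "prime p" and a: "a \<in> Zv (Fin p)"
  shows "a_inv (Qv (Fin p)) a \<in> Zv (Fin p)"
proof -
  note av = av_Fin[OF p]
  obtain X where X: "vcauchy (Fin p) X" "a = vclass (Fin p) X" "\<forall>k. rat_absv (Fin p) (X k) \<le> 1"
    using Zv_elim[OF p a] by blast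
  have "rat_absv (Fin p) (- X k) \<le> 1" for k using X(3) avneg[OF av] by simp
  then show ?thesis using X Qv_neg_cl[OF av] vcauchy_neg[OF av] Zv_intro[OF p] by simp
qed

lemma Zv_finsum:
  assumes p: "prime p" and F: "\<And>i. i \<in> A \<Longrightarrow> F i \<in> Zv (Fin p)"
  shows "finsum (Qv (Fin p)) F A \<in> Zv (Fin p)"
proof -
  interpret Q: cring "Qv (Fin p)" by (rule Qv_cring[OF av_Fin[OF p]])
  show ?thesis
  proof (cases "finite A")
    case True
    then show ?thesis using F
    proof (induction A rule: finite_induct)
      case empty then show ?case using Zv_zero[OF p] by simp
    next
      case (insert a A)
      have "finsum (Qv (Fin p)) F (insert a A) = F a \<oplus>\<^bsub>Qv (Fin p)\<^esub> finsum (Qv (Fin p)) F A"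
        using insert Zv_sub by (intro Q.finsum_insert) auto
      then show ?case using insert Zv_add[OF p] by auto
    qed
  next
    case False then show ?thesis using Zv_zero[OF p] by simp
  qed
qed

lemma LSv_cring: "v \<in> places \<Longrightarrow> cring (LSv v)"
  unfolding LSv_def by (rule cring.ls_cring[OF Qv_cring[OF absv_places]])

definition bad :: "adt \<Rightarrow> nat set" where
  "bad a = {p. prime p \<and> \<not> (\<forall>i. a (Fin p) i \<in> Zv (Fin p))}"

lemma At_carrier_iff: "a \<in> carrier At \<longleftrightarrow> (\<forall>v\<in>places. a v \<in> carrier (LSv v)) \<and> (\<forall>v. v \<notin> places \<longrightarrow> a v = \<zero>\<^bsub>LSv v\<^esub>) \<and> finite (bad a)"
  unfolding At_def bad_def by simp

lemma At_mult: "a \<otimes>\<^bsub>At\<^esub> b = (\<lambda>v. if v \<in> places then a v \<otimes>\<^bsub>LSv v\<^esub> b v else \<zero>\<^bsub>LSv v\<^esub>)"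
  and At_add: "a \<oplus>\<^bsub>At\<^esub> b = (\<lambda>v. if v \<in> places then a v \<oplus>\<^bsub>LSv v\<^esub> b v else \<zero>\<^bsub>LSv v\<^esub>)"
  and At_one: "\<one>\<^bsub>At\<^esub> = (\<lambda>v. if v \<in> places then \<one>\<^bsub>LSv v\<^esub> else \<zero>\<^bsub>LSv v\<^esub>)"
  and At_zero: "\<zero>\<^bsub>At\<^esub> = (\<lambda>v. \<zero>\<^bsub>LSv v\<^esub>)"
  unfolding At_def by simp_all

lemma LSv_add: "f \<oplus>\<^bsub>LSv v\<^esub> g = (\<lambda>i. f i \<oplus>\<^bsub>Qv v\<^esub> g i)"
  and LSv_zero: "\<zero>\<^bsub>LSv v\<^esub> = (\<lambda>i. \<zero>\<^bsub>Qv v\<^esub>)"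
  and LSv_one: "\<one>\<^bsub>LSv v\<^esub> = (\<lambda>i. if i = 0 then \<one>\<^bsub>Qv v\<^esub> else \<zero>\<^bsub>Qv v\<^esub>)"
  and LSv_mult: "f \<otimes>\<^bsub>LSv v\<^esub> g = (\<lambda>k. finsum (Qv v) (\<lambda>i. f i \<otimes>\<^bsub>Qv v\<^esub> g (k - i))
                        {i. f i \<noteq> \<zero>\<^bsub>Qv v\<^esub> \<and> g (k - i) \<noteq> \<zero>\<^bsub>Qv v\<^esub>})"
  unfolding LSv_def ls_ring_def by simp_all

lemma bad_add: "bad (a \<oplus>\<^bsub>At\<^esub> b) \<subseteq> bad a \<union> bad b"
proof
  fix p assume "p \<in> bad (a \<oplus>\<^bsub>At\<^esub> b)"
  then have p: "prime p" and n: "\<not> (\<forall>i. (a \<oplus>\<^bsub>At\<^esub> b) (Fin p) i \<in> Zv (Fin p))" unfolding bad_def by auto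
  show "p \<in> bad a \<union> bad b"
  proof (rule ccontr)
    assume "p \<notin> bad a \<union> bad b"
    then have a: "\<forall>i. a (Fin p) i \<in> Zv (Fin p)" and b: "\<forall>i. b (Fin p) i \<in> Zv (Fin p)" using p unfolding bad_def by auto
    have "(a \<oplus>\<^bsub>At\<^esub> b) (Fin p) i \<in> Zv (Fin p)" for i
      unfolding At_add LSv_add using Fin_places[OF p] Zv_add[OF p] a b by auto
    then show False using n by blast
  qed
qed

lemma LSv_closed:
  assumes "v \<in> places" "f \<in> carrier (LSv v)" "g \<in> carrier (LSv v)"
  shows "f \<oplus>\<^bsub>LSv v\<^esub> g \<in> carrier (LSv v)" "f \<otimes>\<^bsub>LSv v\<^esub> g \<in> carrier (LSv v)"
    "a_inv (LSv v) f \<in> carrier (LSv v)"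
proof -
  interpret L: cring "LSv v" by (rule LSv_cring[OF assms(1)])
  show "f \<oplus>\<^bsub>LSv v\<^esub> g \<in> carrier (LSv v)" "f \<otimes>\<^bsub>LSv v\<^esub> g \<in> carrier (LSv v)"
    "a_inv (LSv v) f \<in> carrier (LSv v)" using assms by auto
qed

lemma bad_mult: "bad (a \<otimes>\<^bsub>At\<^esub> b) \<subseteq> bad a \<union> bad b"
proof
  fix p assume "p \<in> bad (a \<otimes>\<^bsub>At\<^esub> b)"
  then have p: "prime p" and n: "\<not> (\<forall>i. (a \<otimes>\<^bsub>At\<^esub> b) (Fin p) i \<in> Zv (Fin p))" unfolding bad_def by auto
  show "p \<in> bad a \<union> bad b"
  proof (rule ccontr)
    assume "p \<notin> bad a \<union> bad b"
    then have a: "\<forall>i. a (Fin p) i \<in> Zv (Fin p)" and b: "\<forall>i. b (Fin p) i \<in> Zv (Fin p)" using p unfolding bad_def by auto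
    have "(a \<otimes>\<^bsub>At\<^esub> b) (Fin p) i \<in> Zv (Fin p)" for i
      unfolding At_mult LSv_mult using Fin_places[OF p]
      by (auto intro!: Zv_finsum[OF p] Zv_mult[OF p] a[rule_format] b[rule_format])
    then show False using n by blast
  qed
qed

lemma At_cring: "cring At"
proof (rule cringI)
  show "abelian_group At"
  proof (rule abelian_groupI)
    fix x y z assume x: "x \<in> carrier At" and y: "y \<in> carrier At" and z: "z \<in> carrier At"
    show "x \<oplus>\<^bsub>At\<^esub> y \<in> carrier At"
      unfolding At_carrier_iff using x y bad_add[of x y] finite_subset
      by (auto simp: At_carrier_iff At_add intro: LSv_closed)
    show "x \<oplus>\<^bsub>At\<^esub> y \<oplus>\<^bsub>At\<^esub> z = x \<oplus>\<^bsub>At\<^esub> (y \<oplus>\<^bsub>At\<^esub> z)"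
    proof
      fix v show "(x \<oplus>\<^bsub>At\<^esub> y \<oplus>\<^bsub>At\<^esub> z) v = (x \<oplus>\<^bsub>At\<^esub> (y \<oplus>\<^bsub>At\<^esub> z)) v"
      proof (cases "v \<in> places")
        case True
        interpret L: cring "LSv v" by (rule LSv_cring[OF True])
        show ?thesis using x y z True unfolding At_add At_carrier_iff by (simp add: L.a_assoc)
      qed (simp add: At_add)
    qed
    show "x \<oplus>\<^bsub>At\<^esub> y = y \<oplus>\<^bsub>At\<^esub> x"
    proof
      fix v show "(x \<oplus>\<^bsub>At\<^esub> y) v = (y \<oplus>\<^bsub>At\<^esub> x) v"
      proof (cases "v \<in> places")
        case True
        interpret L: cring "LSv v" by (rule LSv_cring[OF True])
        show ?thesis using x y True unfolding At_add At_carrier_iff by (simp add: L.a_comm)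
      qed (simp add: At_add)
    qed
    show "\<zero>\<^bsub>At\<^esub> \<oplus>\<^bsub>At\<^esub> x = x"
    proof
      fix v show "(\<zero>\<^bsub>At\<^esub> \<oplus>\<^bsub>At\<^esub> x) v = x v"
      proof (cases "v \<in> places")
        case True
        interpret L: cring "LSv v" by (rule LSv_cring[OF True])
        show ?thesis using x True unfolding At_add At_zero At_carrier_iff by simp
      qed (use x in \<open>simp add: At_add At_carrier_iff\<close>)
    qed
    let ?y = "\<lambda>v. if v \<in> places then a_inv (LSv v) (x v) else \<zero>\<^bsub>LSv v\<^esub>"
    show "\<exists>y\<in>carrier At. y \<oplus>\<^bsub>At\<^esub> x = \<zero>\<^bsub>At\<^esub>"
    proof (intro bexI)
      have "bad ?y \<subseteq> bad x"
      proof
        fix p assume "p \<in> bad ?y"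
        then have p: "prime p" and n: "\<not> (\<forall>i. ?y (Fin p) i \<in> Zv (Fin p))" unfolding bad_def by auto
        show "p \<in> bad x"
        proof (rule ccontr)
          assume "p \<notin> bad x"
          then have a: "\<forall>i. x (Fin p) i \<in> Zv (Fin p)" using p unfolding bad_def by auto
          have "x (Fin p) \<in> carrier (ls_ring (Qv (Fin p)))" using x Fin_places[OF p] unfolding At_carrier_iff LSv_def by auto
          then have "?y (Fin p) = (\<lambda>i. a_inv (Qv (Fin p)) (x (Fin p) i))"
            using Fin_places[OF p] cring.ls_neg[OF Qv_cring[OF av_Fin[OF p]]] unfolding LSv_def by simp
          then show False using n a Zv_neg[OF p] by auto
        qed
      qed
      then show "?y \<in> carrier At"
        using x finite_subset unfolding At_carrier_iff
        by (auto intro: LSv_closed)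
      show "?y \<oplus>\<^bsub>At\<^esub> x = \<zero>\<^bsub>At\<^esub>"
      proof
        fix v show "(?y \<oplus>\<^bsub>At\<^esub> x) v = \<zero>\<^bsub>At\<^esub> v"
        proof (cases "v \<in> places")
          case True
          interpret L: cring "LSv v" by (rule LSv_cring[OF True])
          have "x v \<in> carrier (LSv v)" using x True unfolding At_carrier_iff by simp
          then show ?thesis using True unfolding At_add At_zero by (simp add: L.l_neg)
        qed (simp add: At_add At_zero)
      qed
    qed
  next
    show "\<zero>\<^bsub>At\<^esub> \<in> carrier At"
    proof -
      have "bad \<zero>\<^bsub>At\<^esub> = {}" unfolding bad_def At_zero LSv_zero using Zv_zero by auto
      moreover have "v \<in> places \<Longrightarrow> \<zero>\<^bsub>LSv v\<^esub> \<in> carrier (LSv v)" for v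
        using cring.ls_zero_closed[OF Qv_cring[OF absv_places]] unfolding LSv_def by blast
      ultimately show ?thesis unfolding At_carrier_iff by (simp add: At_zero)
    qed
  qed
  show "comm_monoid At"
  proof (rule comm_monoidI)
    fix x y z assume x: "x \<in> carrier At" and y: "y \<in> carrier At" and z: "z \<in> carrier At"
    show "x \<otimes>\<^bsub>At\<^esub> y \<in> carrier At"
      unfolding At_carrier_iff using x y bad_mult[of x y] finite_subset
      by (auto simp: At_carrier_iff At_mult intro: LSv_closed)
    show "x \<otimes>\<^bsub>At\<^esub> y \<otimes>\<^bsub>At\<^esub> z = x \<otimes>\<^bsub>At\<^esub> (y \<otimes>\<^bsub>At\<^esub> z)"
    proof
      fix v show "(x \<otimes>\<^bsub>At\<^esub> y \<otimes>\<^bsub>At\<^esub> z) v = (x \<otimes>\<^bsub>At\<^esub> (y \<otimes>\<^bsub>At\<^esub> z)) v"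
      proof (cases "v \<in> places")
        case True
        interpret L: cring "LSv v" by (rule LSv_cring[OF True])
        show ?thesis using x y z True unfolding At_mult At_carrier_iff by (simp add: L.m_assoc)
      qed (simp add: At_mult)
    qed
    show "x \<otimes>\<^bsub>At\<^esub> y = y \<otimes>\<^bsub>At\<^esub> x"
    proof
      fix v show "(x \<otimes>\<^bsub>At\<^esub> y) v = (y \<otimes>\<^bsub>At\<^esub> x) v"
      proof (cases "v \<in> places")
        case True
        interpret L: cring "LSv v" by (rule LSv_cring[OF True])
        show ?thesis using x y True unfolding At_mult At_carrier_iff by (simp add: L.m_comm)
      qed (simp add: At_mult)
    qed
    show "\<one>\<^bsub>At\<^esub> \<otimes>\<^bsub>At\<^esub> x = x"
    proof
      fix v show "(\<one>\<^bsub>At\<^esub> \<otimes>\<^bsub>At\<^esub> x) v = x v"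
      proof (cases "v \<in> places")
        case True
        interpret L: cring "LSv v" by (rule LSv_cring[OF True])
        show ?thesis using x True unfolding At_mult At_one At_carrier_iff by simp
      qed (use x in \<open>simp add: At_mult At_carrier_iff\<close>)
    qed
  next
    show "\<one>\<^bsub>At\<^esub> \<in> carrier At"
    proof -
      have "bad \<one>\<^bsub>At\<^esub> = {}" unfolding bad_def At_one LSv_one using Zv_zero Zv_one Fin_places by auto
      moreover have "v \<in> places \<Longrightarrow> \<one>\<^bsub>LSv v\<^esub> \<in> carrier (LSv v)" for v
        using cring.ls_one_closed[OF Qv_cring[OF absv_places]] unfolding LSv_def by blast
      ultimately show ?thesis unfolding At_carrier_iff by (simp add: At_one)
    qed
  qed
  fix x y z assume x: "x \<in> carrier At" and y: "y \<in> carrier At" and z: "z \<in> carrier At"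
  show "(x \<oplus>\<^bsub>At\<^esub> y) \<otimes>\<^bsub>At\<^esub> z = x \<otimes>\<^bsub>At\<^esub> z \<oplus>\<^bsub>At\<^esub> y \<otimes>\<^bsub>At\<^esub> z"
  proof
    fix v show "((x \<oplus>\<^bsub>At\<^esub> y) \<otimes>\<^bsub>At\<^esub> z) v = (x \<otimes>\<^bsub>At\<^esub> z \<oplus>\<^bsub>At\<^esub> y \<otimes>\<^bsub>At\<^esub> z) v"
    proof (cases "v \<in> places")
      case True
      interpret L: cring "LSv v" by (rule LSv_cring[OF True])
      show ?thesis using x y z True unfolding At_mult At_add At_carrier_iff by (simp add: L.l_distr)
    qed (simp add: At_mult At_add)
  qed
qed

lemma ratR_cring: "cring ratR"
proof (rule cringI)
  show "abelian_group ratR"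
    by (rule abelian_groupI) (auto simp: ratR_def intro: exI[of _ "- x" for x])
  show "comm_monoid ratR"
    by (rule comm_monoidI) (auto simp: ratR_def)
  show "\<And>x y z. x \<in> carrier ratR \<Longrightarrow> y \<in> carrier ratR \<Longrightarrow> z \<in> carrier ratR \<Longrightarrow>
     (x \<oplus>\<^bsub>ratR\<^esub> y) \<otimes>\<^bsub>ratR\<^esub> z = x \<otimes>\<^bsub>ratR\<^esub> z \<oplus>\<^bsub>ratR\<^esub> y \<otimes>\<^bsub>ratR\<^esub> z"
    by (simp add: ratR_def distrib_right)
qed

lemma ratR_simps [simp]: "carrier ratR = UNIV" "mult ratR = (*)" "add ratR = (+)" "one ratR = 1" "zero ratR = 0"
  by (simp_all add: ratR_def)

lemma QLS_cring: "cring QLS"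
  unfolding QLS_def by (rule cring.ls_cring[OF ratR_cring])

lemma vrat_hom_cring: "v \<in> places \<Longrightarrow> ring_hom_cring ratR (Qv v) (vrat v)"
  by (intro ring_hom_cring.intro ring_hom_cring_axioms.intro ratR_cring Qv_cring absv_places vrat_hom)

lemma QLS_carrier: "carrier QLS = {f. \<exists>M. \<forall>i<M. f i = 0}"
  unfolding QLS_def ls_ring_def by simp

lemma QLS_zero: "\<zero>\<^bsub>QLS\<^esub> = (\<lambda>i. 0)" and QLS_one: "\<one>\<^bsub>QLS\<^esub> = (\<lambda>i. if i = 0 then 1 else 0)"
  and QLS_add: "f \<oplus>\<^bsub>QLS\<^esub> g = (\<lambda>i. f i + g i)"
  unfolding QLS_def ls_ring_def by (simp_all cong del: if_cong)

lemma diagQ_mult: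
  assumes f: "f \<in> carrier QLS" and g: "g \<in> carrier QLS"
  shows "diagQ (f \<otimes>\<^bsub>QLS\<^esub> g) = diagQ f \<otimes>\<^bsub>At\<^esub> diagQ g"
proof
  fix v show "diagQ (f \<otimes>\<^bsub>QLS\<^esub> g) v = (diagQ f \<otimes>\<^bsub>At\<^esub> diagQ g) v"
  proof (cases "v \<in> places")
    case True
    show ?thesis using ls_map_mult[OF vrat_hom_cring[OF True], of f g] f g True
      unfolding diagQ_def At_mult LSv_def QLS_def by simp
  qed (simp add: diagQ_def At_mult)
qed

lemma diagQ_add:
  assumes f: "f \<in> carrier QLS" and g: "g \<in> carrier QLS"
  shows "diagQ (f \<oplus>\<^bsub>QLS\<^esub> g) = diagQ f \<oplus>\<^bsub>At\<^esub> diagQ g"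
proof
  fix v show "diagQ (f \<oplus>\<^bsub>QLS\<^esub> g) v = (diagQ f \<oplus>\<^bsub>At\<^esub> diagQ g) v"
  proof (cases "v \<in> places")
    case True
    show ?thesis using ls_map_add[OF vrat_hom_cring[OF True], of f g] f g True
      unfolding diagQ_def At_add LSv_def QLS_def by simp
  qed (simp add: diagQ_def At_add)
qed

lemma vrat_one: "vrat v 1 = \<one>\<^bsub>Qv v\<^esub>"
  unfolding vrat_def Qv_def by simp

lemma vrat_zero': "vrat v 0 = \<zero>\<^bsub>Qv v\<^esub>"
  unfolding vrat_def Qv_def by simp

lemma diagQ_zero: "diagQ \<zero>\<^bsub>QLS\<^esub> = \<zero>\<^bsub>At\<^esub>"
  unfolding diagQ_def QLS_zero At_zero LSv_zero vrat_zero' by auto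

lemma diagQ_zero': "diagQ (\<lambda>i. 0) = \<zero>\<^bsub>At\<^esub>"
  using diagQ_zero QLS_zero by simp

lemma diagQ_one: "diagQ \<one>\<^bsub>QLS\<^esub> = \<one>\<^bsub>At\<^esub>"
  unfolding diagQ_def QLS_one At_one LSv_one by (simp add: fun_eq_iff vrat_zero' vrat_one)

lemma diagQ_in:
  assumes f: "f \<in> carrier QLS" and fin: "finite {p. prime p \<and> \<not> (\<forall>i. vrat (Fin p) (f i) \<in> Zv (Fin p))}"
  shows "diagQ f \<in> carrier At"
proof -
  obtain M where M: "\<forall>i<M. f i = 0" using f unfolding QLS_carrier by auto
  have "v \<in> places \<Longrightarrow> (\<lambda>i. vrat v (f i)) \<in> carrier (LSv v)" for v
    unfolding LSv_def
  proof (rule cring.ls_inI[OF Qv_cring[OF absv_places], of v _ M])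
    assume v: "v \<in> places"
    show "vrat v (f i) \<in> carrier (Qv v)" for i
      unfolding vrat_def by (rule Qv_in[OF absv_places[OF v] vcauchy_const[OF absv_places[OF v]]])
    show "i < M \<Longrightarrow> vrat v (f i) = \<zero>\<^bsub>Qv v\<^esub>" for i using M by (simp add: vrat_zero')
  qed
  moreover have "bad (diagQ f) = {p. prime p \<and> \<not> (\<forall>i. vrat (Fin p) (f i) \<in> Zv (Fin p))}"
    unfolding bad_def diagQ_def using Fin_places by auto
  ultimately show ?thesis unfolding At_carrier_iff using fin by (auto simp: diagQ_def)
qed

lemma Qt_sub: "Qt \<subseteq> carrier QLS" unfolding Qt_def by auto

lemma Qt_mult: "f \<in> Qt \<Longrightarrow> g \<in> Qt \<Longrightarrow> f \<otimes>\<^bsub>QLS\<^esub> g \<in> Qt"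
  unfolding Qt_def using diagQ_mult cring.ls_mult_closed[OF ratR_cring] QLS_def
    monoid.m_closed[OF cring.axioms(1)[OF At_cring, THEN ring.is_monoid]] by auto

lemma Qt_add: "f \<in> Qt \<Longrightarrow> g \<in> Qt \<Longrightarrow> f \<oplus>\<^bsub>QLS\<^esub> g \<in> Qt"
proof -
  interpret At: cring At by (rule At_cring)
  show "f \<in> Qt \<Longrightarrow> g \<in> Qt \<Longrightarrow> f \<oplus>\<^bsub>QLS\<^esub> g \<in> Qt"
    unfolding Qt_def using diagQ_add cring.ls_add_closed[OF ratR_cring] QLS_def by auto
qed

lemma Qt_zero: "\<zero>\<^bsub>QLS\<^esub> \<in> Qt" and Qt_one: "\<one>\<^bsub>QLS\<^esub> \<in> Qt"
proof -
  interpret At: cring At by (rule At_cring)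
  show "\<zero>\<^bsub>QLS\<^esub> \<in> Qt" "\<one>\<^bsub>QLS\<^esub> \<in> Qt"
    unfolding Qt_def using diagQ_zero diagQ_one cring.ls_zero_closed[OF ratR_cring]
      cring.ls_one_closed[OF ratR_cring] QLS_def by auto
qed

lemma At_plus_iff: "a \<in> At_plus \<longleftrightarrow> a \<in> carrier At \<and> (\<forall>v\<in>places. \<forall>i<0. a v i = \<zero>\<^bsub>Qv v\<^esub>)"
  unfolding At_plus_def ps_carrier_def At_carrier_iff LSv_def by auto

lemma At_neg:
  assumes a: "a \<in> carrier At"
  shows "a_inv At a = (\<lambda>v. if v \<in> places then (\<lambda>i. a_inv (Qv v) (a v i)) else \<zero>\<^bsub>LSv v\<^esub>)"
proof -
  interpret At: cring At by (rule At_cring)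
  let ?y = "\<lambda>v. if v \<in> places then a_inv (LSv v) (a v) else \<zero>\<^bsub>LSv v\<^esub>"
  have e: "?y = (\<lambda>v. if v \<in> places then (\<lambda>i. a_inv (Qv v) (a v i)) else \<zero>\<^bsub>LSv v\<^esub>)"
    using a cring.ls_neg[OF Qv_cring[OF absv_places]] unfolding At_carrier_iff LSv_def by auto
  have "bad ?y \<subseteq> bad a"
  proof
    fix p assume "p \<in> bad ?y"
    then have p: "prime p" and n: "\<not> (\<forall>i. ?y (Fin p) i \<in> Zv (Fin p))" unfolding bad_def by auto
    show "p \<in> bad a"
    proof (rule ccontr)
      assume "p \<notin> bad a"
      then have "\<forall>i. a (Fin p) i \<in> Zv (Fin p)" using p unfolding bad_def by auto
      moreover have "a (Fin p) \<in> carrier (ls_ring (Qv (Fin p)))" using a Fin_places[OF p] unfolding At_carrier_iff LSv_def by simp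
      ultimately have "\<forall>i. ?y (Fin p) i \<in> Zv (Fin p)"
        using Zv_neg[OF p] Fin_places[OF p] cring.ls_neg[OF Qv_cring[OF av_Fin[OF p]]] unfolding LSv_def by simp
      then show False using n by blast
    qed
  qed
  then have yc: "?y \<in> carrier At" using a finite_subset unfolding At_carrier_iff by (auto intro: LSv_closed)
  have "?y \<oplus>\<^bsub>At\<^esub> a = \<zero>\<^bsub>At\<^esub>"
  proof
    fix v show "(?y \<oplus>\<^bsub>At\<^esub> a) v = \<zero>\<^bsub>At\<^esub> v"
    proof (cases "v \<in> places")
      case True
      interpret L: cring "LSv v" by (rule LSv_cring[OF True])
      have "a v \<in> carrier (LSv v)" using a True unfolding At_carrier_iff by simp
      then show ?thesis using True unfolding At_add At_zero by (simp add: L.l_neg)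
    qed (simp add: At_add At_zero)
  qed
  then have "a_inv At a = ?y" by (rule At.minus_equality[OF _ a yc])
  then show ?thesis using e by simp
qed

lemma At_plus_sub: "At_plus \<subseteq> carrier At" unfolding At_plus_def by auto

lemma At_plus_add: "a \<in> At_plus \<Longrightarrow> b \<in> At_plus \<Longrightarrow> a \<oplus>\<^bsub>At\<^esub> b \<in> At_plus"
proof -
  interpret At: cring At by (rule At_cring)
  assume a: "a \<in> At_plus" and b: "b \<in> At_plus"
  have "a \<oplus>\<^bsub>At\<^esub> b \<in> carrier At" using a b At_plus_sub by auto
  moreover have "(a \<oplus>\<^bsub>At\<^esub> b) v i = \<zero>\<^bsub>Qv v\<^esub>" if v: "v \<in> places" and i: "i < 0" for v i
  proof -
    interpret Q: cring "Qv v" by (rule Qv_cring[OF absv_places[OF v]])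
    have "a v i = \<zero>\<^bsub>Qv v\<^esub>" "b v i = \<zero>\<^bsub>Qv v\<^esub>" using a b v i unfolding At_plus_iff by auto
    then show ?thesis using v by (simp add: At_add LSv_add)
  qed
  ultimately show ?thesis unfolding At_plus_iff by blast
qed

lemma At_plus_mult: "a \<in> At_plus \<Longrightarrow> b \<in> At_plus \<Longrightarrow> a \<otimes>\<^bsub>At\<^esub> b \<in> At_plus"
proof -
  interpret At: cring At by (rule At_cring)
  assume a: "a \<in> At_plus" and b: "b \<in> At_plus"
  have "a \<otimes>\<^bsub>At\<^esub> b \<in> carrier At" using a b At_plus_sub by auto
  moreover have "(a \<otimes>\<^bsub>At\<^esub> b) v \<in> ps_carrier (Qv v)" if v: "v \<in> places" for v
    using a b v unfolding At_plus_def LSv_def by (simp add: At_mult LSv_def cring.ps_mult_closed[OF Qv_cring[OF absv_places]])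
  ultimately show ?thesis unfolding At_plus_def by blast
qed

lemma At_plus_neg: "a \<in> At_plus \<Longrightarrow> a_inv At a \<in> At_plus"
proof -
  interpret At: cring At by (rule At_cring)
  assume a: "a \<in> At_plus"
  then have ac: "a \<in> carrier At" using At_plus_sub by auto
  have "a_inv At a \<in> carrier At" using ac by simp
  moreover have "a_inv At a v i = \<zero>\<^bsub>Qv v\<^esub>" if v: "v \<in> places" and i: "i < 0" for v i
  proof -
    interpret Q: cring "Qv v" by (rule Qv_cring[OF absv_places[OF v]])
    have "a v i = \<zero>\<^bsub>Qv v\<^esub>" using a v i unfolding At_plus_iff by auto
    then show ?thesis using v by (simp add: At_neg[OF ac])
  qed
  ultimately show ?thesis unfolding At_plus_iff by blast
qed

lemma At_plus_zero: "\<zero>\<^bsub>At\<^esub> \<in> At_plus" and At_plus_one: "\<one>\<^bsub>At\<^esub> \<in> At_plus"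
proof -
  interpret At: cring At by (rule At_cring)
  show "\<zero>\<^bsub>At\<^esub> \<in> At_plus" using At.zero_closed unfolding At_plus_iff by (simp add: At_zero LSv_zero)
  show "\<one>\<^bsub>At\<^esub> \<in> At_plus" using At.one_closed unfolding At_plus_iff by (simp add: At_one LSv_one)
qed

lemma ps_ratR: "f \<in> ps_carrier ratR \<longleftrightarrow> f \<in> carrier QLS \<and> (\<forall>i<0. f i = 0)"
  unfolding ps_carrier_def QLS_def by simp

lemma diagQ_plus: "f \<in> Qt_plus \<Longrightarrow> diagQ f \<in> At_plus"
proof -
  assume f: "f \<in> Qt_plus"
  then have "diagQ f \<in> carrier At" and "f \<in> ps_carrier ratR" unfolding Qt_plus_def Qt_def by auto
  moreover from this(2) have f0: "\<forall>i<0. f i = 0" by (simp add: ps_ratR)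
  moreover have "\<forall>v\<in>places. \<forall>i<0. diagQ f v i = \<zero>\<^bsub>Qv v\<^esub>" using f0 by (simp add: diagQ_def vrat_zero')
  ultimately show ?thesis unfolding At_plus_iff by blast
qed

lemma Qt_plus_mult: "f \<in> Qt_plus \<Longrightarrow> g \<in> Qt_plus \<Longrightarrow> f \<otimes>\<^bsub>QLS\<^esub> g \<in> Qt_plus"
  unfolding Qt_plus_def QLS_def using Qt_mult[unfolded QLS_def] cring.ps_mult_closed[OF ratR_cring] by auto

lemma Qt_plus_add: "f \<in> Qt_plus \<Longrightarrow> g \<in> Qt_plus \<Longrightarrow> f \<oplus>\<^bsub>QLS\<^esub> g \<in> Qt_plus"
  unfolding Qt_plus_def QLS_def using Qt_add[unfolded QLS_def] cring.ps_add_closed[OF ratR_cring] by auto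

lemma Qt_plus_zero: "\<zero>\<^bsub>QLS\<^esub> \<in> Qt_plus" and Qt_plus_one: "\<one>\<^bsub>QLS\<^esub> \<in> Qt_plus"
  unfolding Qt_plus_def QLS_def using Qt_zero Qt_one cring.ps_zero[OF ratR_cring] cring.ps_one[OF ratR_cring]
  unfolding QLS_def by auto

lemma Qt_plus_sub: "Qt_plus \<subseteq> Qt" unfolding Qt_plus_def by auto

locale absset = ring M for M (structure) +
  fixes MP \<tau> \<tau>N
  assumes MP_sub: "MP \<subseteq> carrier M"
    and MP_add: "x \<in> MP \<Longrightarrow> y \<in> MP \<Longrightarrow> x \<oplus> y \<in> MP"
    and MP_mult: "x \<in> MP \<Longrightarrow> y \<in> MP \<Longrightarrow> x \<otimes> y \<in> MP"
    and MP_neg: "x \<in> MP \<Longrightarrow> \<ominus> x \<in> MP"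
    and \<tau>_MP: "\<tau> \<in> MP" and \<tau>N_c: "\<tau>N \<in> carrier M"
    and \<tau>_comm: "x \<in> carrier M \<Longrightarrow> \<tau> \<otimes> x = x \<otimes> \<tau>"
    and \<tau>N_comm: "x \<in> carrier M \<Longrightarrow> \<tau>N \<otimes> x = x \<otimes> \<tau>N"
begin

definition Sset where "Sset R = {R \<otimes> (\<tau> \<otimes> X) \<oplus> \<tau>N \<otimes> Y | X Y. X \<in> MP \<and> Y \<in> MP}"
definition Pp where "Pp R U = (\<forall>u\<in>U. R \<otimes> u \<ominus> R \<in> Sset R)"

lemma MP_c: "x \<in> MP \<Longrightarrow> x \<in> carrier M" using MP_sub by auto

lemma MP_minus: "x \<in> MP \<Longrightarrow> y \<in> MP \<Longrightarrow> x \<ominus> y \<in> MP"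
  unfolding minus_eq using MP_add MP_neg by auto

lemma \<tau>_c: "\<tau> \<in> carrier M" using MP_c[OF \<tau>_MP] .

lemma lemA:
  assumes R: "R \<in> carrier M" and G: "G \<in> MP" and U: "U \<subseteq> carrier M" and P: "Pp R U"
  shows "Pp (G \<otimes> R) U"
  unfolding Pp_def
proof
  fix u assume u: "u \<in> U"
  then have uc: "u \<in> carrier M" using U by auto
  obtain X Y where XY: "X \<in> MP" "Y \<in> MP" and h: "R \<otimes> u \<ominus> R = R \<otimes> (\<tau> \<otimes> X) \<oplus> \<tau>N \<otimes> Y"
    using P u unfolding Pp_def Sset_def by blast
  have Gc: "G \<in> carrier M" using MP_c[OF G] .
  have Xc: "X \<in> carrier M" and Yc: "Y \<in> carrier M" using MP_c XY by auto
  have c: "\<tau>N \<otimes> (G \<otimes> Y) = G \<otimes> (\<tau>N \<otimes> Y)"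
    using \<tau>N_comm[OF Gc] Gc Yc \<tau>N_c by (metis m_assoc)
  have "G \<otimes> R \<otimes> u \<ominus> G \<otimes> R = G \<otimes> (R \<otimes> u \<ominus> R)"
    using R Gc uc by (simp add: ring_simprules)
  also have "\<dots> = G \<otimes> (R \<otimes> (\<tau> \<otimes> X) \<oplus> \<tau>N \<otimes> Y)" by (simp only: h)
  also have "\<dots> = G \<otimes> R \<otimes> (\<tau> \<otimes> X) \<oplus> \<tau>N \<otimes> (G \<otimes> Y)"
    using R Gc Xc Yc \<tau>_c \<tau>N_c c by (simp add: ring_simprules)
  finally show "G \<otimes> R \<otimes> u \<ominus> G \<otimes> R \<in> Sset (G \<otimes> R)"
    unfolding Sset_def using XY G MP_mult by blast
qed

lemma lemB:
  assumes R: "R \<in> carrier M" and M0: "M0 \<in> MP" and U: "U \<subseteq> MP" and P: "Pp R U"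
  shows "Pp (R \<oplus> \<tau>N \<otimes> M0) U"
  unfolding Pp_def
proof
  fix u assume u: "u \<in> U"
  then have uM: "u \<in> MP" using U by auto
  then have uc: "u \<in> carrier M" using MP_c by auto
  obtain X Y where XY: "X \<in> MP" "Y \<in> MP" and h: "R \<otimes> u \<ominus> R = R \<otimes> (\<tau> \<otimes> X) \<oplus> \<tau>N \<otimes> Y"
    using P u unfolding Pp_def Sset_def by blast
  have Mc: "M0 \<in> carrier M" using MP_c[OF M0] .
  have Xc: "X \<in> carrier M" and Yc: "Y \<in> carrier M" using MP_c XY by auto
  let ?R = "R \<oplus> \<tau>N \<otimes> M0"
  let ?Y = "Y \<oplus> M0 \<otimes> u \<ominus> M0 \<ominus> M0 \<otimes> (\<tau> \<otimes> X)"
  have "?R \<otimes> u \<ominus> ?R = (R \<otimes> u \<ominus> R) \<oplus> (\<tau>N \<otimes> M0 \<otimes> u \<ominus> \<tau>N \<otimes> M0)"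
    using R Mc uc \<tau>N_c by (simp add: ring_simprules)
  also have "\<dots> = (R \<otimes> (\<tau> \<otimes> X) \<oplus> \<tau>N \<otimes> Y) \<oplus> (\<tau>N \<otimes> M0 \<otimes> u \<ominus> \<tau>N \<otimes> M0)" by (simp only: h)
  also have "\<dots> = ?R \<otimes> (\<tau> \<otimes> X) \<oplus> \<tau>N \<otimes> ?Y"
    using R Mc uc Xc Yc \<tau>_c \<tau>N_c by (simp add: ring_simprules)
  finally have e: "?R \<otimes> u \<ominus> ?R = ?R \<otimes> (\<tau> \<otimes> X) \<oplus> \<tau>N \<otimes> ?Y" .
  have "?Y \<in> MP" using XY M0 uM \<tau>_MP by (intro MP_minus MP_add MP_mult)
  then show "?R \<otimes> u \<ominus> ?R \<in> Sset ?R"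
    unfolding Sset_def using XY e by blast
qed

lemma lemC:
  assumes R: "R \<in> carrier M" and G0: "G0 \<in> MP" and H: "H \<in> MP" and Gi: "Gi \<in> MP"
    and GGi: "(G0 \<oplus> \<tau> \<otimes> H) \<otimes> Gi = \<one>"
    and U: "U \<subseteq> carrier M" and U': "U' \<subseteq> MP"
    and conj: "\<And>u. u \<in> U' \<Longrightarrow> \<exists>u'\<in>U. G0 \<otimes> u = u' \<otimes> G0"
    and P: "Pp R U"
  shows "Pp (R \<otimes> (G0 \<oplus> \<tau> \<otimes> H)) U'"
  unfolding Pp_def
proof
  fix u assume u: "u \<in> U'"
  then have uM: "u \<in> MP" using U' by auto
  then have uc: "u \<in> carrier M" using MP_c by auto
  obtain u' where u': "u' \<in> U" and cj: "G0 \<otimes> u = u' \<otimes> G0" using conj[OF u] by blast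
  have u'c: "u' \<in> carrier M" using u' U by auto
  obtain X Y where XY: "X \<in> MP" "Y \<in> MP" and h: "R \<otimes> u' \<ominus> R = R \<otimes> (\<tau> \<otimes> X) \<oplus> \<tau>N \<otimes> Y"
    using P u' unfolding Pp_def Sset_def by blast
  have G0c: "G0 \<in> carrier M" and Hc: "H \<in> carrier M" and Gic: "Gi \<in> carrier M"
    using MP_c G0 H Gi by auto
  have Xc: "X \<in> carrier M" and Yc: "Y \<in> carrier M" using MP_c XY by auto
  let ?G = "G0 \<oplus> \<tau> \<otimes> H"
  have Gc: "?G \<in> carrier M" using G0c Hc \<tau>_c by simp
  let ?Z = "X \<otimes> G0 \<oplus> H \<otimes> u \<ominus> H"
  have Zc: "?Z \<in> carrier M" using Xc G0c Hc uc by simp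
  have cj': "R \<otimes> (G0 \<otimes> u) = R \<otimes> (u' \<otimes> G0)" using cj by simp
  have "R \<otimes> ?G \<otimes> u \<ominus> R \<otimes> ?G = (R \<otimes> (G0 \<otimes> u) \<ominus> R \<otimes> G0) \<oplus> R \<otimes> (\<tau> \<otimes> (H \<otimes> u \<ominus> H))"
    using R G0c Hc uc \<tau>_c by (simp add: ring_simprules)
  also have "\<dots> = (R \<otimes> (u' \<otimes> G0) \<ominus> R \<otimes> G0) \<oplus> R \<otimes> (\<tau> \<otimes> (H \<otimes> u \<ominus> H))" by (simp only: cj')
  also have "\<dots> = (R \<otimes> u' \<ominus> R) \<otimes> G0 \<oplus> R \<otimes> (\<tau> \<otimes> (H \<otimes> u \<ominus> H))"
    using R G0c Hc uc u'c \<tau>_c by (simp add: ring_simprules)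
  also have "\<dots> = (R \<otimes> (\<tau> \<otimes> X) \<oplus> \<tau>N \<otimes> Y) \<otimes> G0 \<oplus> R \<otimes> (\<tau> \<otimes> (H \<otimes> u \<ominus> H))" by (simp only: h)
  also have "\<dots> = R \<otimes> (\<tau> \<otimes> ?Z) \<oplus> \<tau>N \<otimes> (Y \<otimes> G0)"
    using R G0c Hc uc Xc Yc \<tau>_c \<tau>N_c by (simp add: ring_simprules)
  also have "R \<otimes> (\<tau> \<otimes> ?Z) = R \<otimes> ?G \<otimes> (\<tau> \<otimes> (Gi \<otimes> ?Z))"
  proof -
    have "R \<otimes> ?G \<otimes> (\<tau> \<otimes> (Gi \<otimes> ?Z)) = R \<otimes> ((?G \<otimes> \<tau>) \<otimes> (Gi \<otimes> ?Z))"
      using R Gc Gic Zc \<tau>_c by (simp add: m_assoc)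
    also have "?G \<otimes> \<tau> = \<tau> \<otimes> ?G" using \<tau>_comm[OF Gc] by simp
    also have "R \<otimes> ((\<tau> \<otimes> ?G) \<otimes> (Gi \<otimes> ?Z)) = R \<otimes> (\<tau> \<otimes> ((?G \<otimes> Gi) \<otimes> ?Z))"
      using R Gc Gic Zc \<tau>_c by (simp add: m_assoc)
    also have "\<dots> = R \<otimes> (\<tau> \<otimes> ?Z)" using GGi Zc by simp
    finally show ?thesis by simp
  qed
  finally have e: "R \<otimes> ?G \<otimes> u \<ominus> R \<otimes> ?G = R \<otimes> ?G \<otimes> (\<tau> \<otimes> (Gi \<otimes> ?Z)) \<oplus> \<tau>N \<otimes> (Y \<otimes> G0)" .
  have "Gi \<otimes> ?Z \<in> MP" using XY G0 H Gi uM by (intro MP_minus MP_add MP_mult)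
  moreover have "Y \<otimes> G0 \<in> MP" using XY G0 by (intro MP_mult)
  ultimately show "R \<otimes> ?G \<otimes> u \<ominus> R \<otimes> ?G \<in> Sset (R \<otimes> ?G)"
    unfolding Sset_def using e by blast
qed

end

definition matR :: "('a, 'm) ring_scheme \<Rightarrow> nat \<Rightarrow> (nat \<Rightarrow> nat \<Rightarrow> 'a) ring" where
  "matR R n = \<lparr>carrier = mats R n (carrier R), mult = mmul R n, one = mone R n,
     zero = (\<lambda>i j. \<zero>\<^bsub>R\<^esub>), add = madd R n\<rparr>"

context cring begin

lemma finsum_in_sub:
  assumes S: "S \<subseteq> carrier R" "\<zero> \<in> S" "\<And>x y. x \<in> S \<Longrightarrow> y \<in> S \<Longrightarrow> x \<oplus> y \<in> S"
    and F: "\<And>i. i \<in> A \<Longrightarrow> F i \<in> S"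
  shows "finsum R F A \<in> S"
proof (cases "finite A")
  case True
  then show ?thesis using F
  proof (induction A rule: finite_induct)
    case empty then show ?case using S by simp
  next
    case (insert a A)
    have "finsum R F (insert a A) = F a \<oplus> finsum R F A"
      using insert S by (intro finsum_insert) auto
    then show ?case using insert S by auto
  qed
next
  case False then show ?thesis using S by simp
qed

lemma mats_iff: "A \<in> mats R n S \<longleftrightarrow> (\<forall>i j. i < n \<longrightarrow> j < n \<longrightarrow> A i j \<in> carrier R \<and> A i j \<in> S)
                  \<and> (\<forall>i j. \<not> (i < n \<and> j < n) \<longrightarrow> A i j = \<zero>)"
  unfolding mats_def by simp

lemma mats_c: "A \<in> mats R n S \<Longrightarrow> i < n \<Longrightarrow> j < n \<Longrightarrow> A i j \<in> carrier R"
  and mats_S: "A \<in> mats R n S \<Longrightarrow> i < n \<Longrightarrow> j < n \<Longrightarrow> A i j \<in> S"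
  and mats_out: "A \<in> mats R n S \<Longrightarrow> \<not> (i < n \<and> j < n) \<Longrightarrow> A i j = \<zero>"
  unfolding mats_def by auto

lemma mats_c': assumes A: "A \<in> mats R n S" shows "A i j \<in> carrier R"
proof (cases "i < n \<and> j < n")
  case True then show ?thesis using mats_c[OF A] by auto
next
  case False then have "A i j = \<zero>" by (intro mats_out[OF A])
  then show ?thesis by simp
qed

lemma mats_carrier: "A \<in> mats R n S \<Longrightarrow> A \<in> mats R n (carrier R)"
  unfolding mats_def by auto

lemma mats_ext:
  assumes "A \<in> mats R n S" "B \<in> mats R n S'" "\<And>i j. i < n \<Longrightarrow> j < n \<Longrightarrow> A i j = B i j"
  shows "A = B"
proof (intro ext)
  fix i j show "A i j = B i j"
    using assms mats_out[OF assms(1)] mats_out[OF assms(2)] by (cases "i < n \<and> j < n") auto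
qed

lemma mmul_out: "\<not> (i < n \<and> j < n) \<Longrightarrow> mmul R n A B i j = \<zero>"
  by (auto simp: mmul_def)

lemma madd_out: "\<not> (i < n \<and> j < n) \<Longrightarrow> madd R n A B i j = \<zero>"
  by (auto simp: madd_def)

lemma mmul_in:
  assumes S: "S \<subseteq> carrier R" "\<zero> \<in> S" "\<And>x y. x \<in> S \<Longrightarrow> y \<in> S \<Longrightarrow> x \<oplus> y \<in> S"
     "\<And>x y. x \<in> S \<Longrightarrow> y \<in> S \<Longrightarrow> x \<otimes> y \<in> S"
    and A: "A \<in> mats R n S" and B: "B \<in> mats R n S"
  shows "mmul R n A B \<in> mats R n S"
  unfolding mats_iff mmul_def
  using S A B by (auto intro!: finsum_in_sub[OF S(1-3)] finsum_closed simp: mats_c mats_S)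

lemma madd_in:
  assumes S: "\<And>x y. x \<in> S \<Longrightarrow> y \<in> S \<Longrightarrow> x \<oplus> y \<in> S"
    and A: "A \<in> mats R n S" and B: "B \<in> mats R n S"
  shows "madd R n A B \<in> mats R n S"
  unfolding mats_iff madd_def using S A B by (auto simp: mats_c mats_S)

lemma msub_in:
  assumes S: "\<And>x y. x \<in> S \<Longrightarrow> y \<in> S \<Longrightarrow> x \<ominus> y \<in> S"
    and A: "A \<in> mats R n S" and B: "B \<in> mats R n S"
  shows "msub R n A B \<in> mats R n S"
  unfolding mats_iff msub_def using S A B by (auto simp: mats_c mats_S)

lemma msmul_in:
  assumes S: "\<And>x y. x \<in> S \<Longrightarrow> y \<in> S \<Longrightarrow> x \<otimes> y \<in> S" and c: "c \<in> S" "c \<in> carrier R"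
    and A: "A \<in> mats R n S"
  shows "msmul R n c A \<in> mats R n S"
  unfolding mats_iff msmul_def using S A c by (auto simp: mats_c mats_S)

lemma mone_in:
  assumes "\<zero> \<in> S" "\<one> \<in> S" shows "mone R n \<in> mats R n S"
  unfolding mats_iff mone_def using assms by auto

lemma finsum_delta:
  assumes "i < (n::nat)" "\<And>k. k < n \<Longrightarrow> F k \<in> carrier R"
  shows "(\<Oplus>k\<in>{..<n}. if i = k then F k else \<zero>) = F i"
  by (rule add.finprod_singleton) (use assms in auto)

lemma finsum_delta':
  assumes "i < (n::nat)" "\<And>k. k < n \<Longrightarrow> F k \<in> carrier R"
  shows "(\<Oplus>k\<in>{..<n}. if k = i then F k else \<zero>) = F i"
  using finsum_delta[OF assms] by (simp add: eq_commute)

lemma matR_ring: "ring (matR R n)"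
proof (rule ringI)
  show "abelian_group (matR R n)"
  proof (rule abelian_groupI)
    fix x y z assume x: "x \<in> carrier (matR R n)" and y: "y \<in> carrier (matR R n)" and z: "z \<in> carrier (matR R n)"
    have x': "x \<in> mats R n (carrier R)" and y': "y \<in> mats R n (carrier R)" and z': "z \<in> mats R n (carrier R)"
      using x y z unfolding matR_def by auto
    show "x \<oplus>\<^bsub>matR R n\<^esub> y \<in> carrier (matR R n)"
      unfolding matR_def using madd_in[OF _ x' y'] by simp
    show "x \<oplus>\<^bsub>matR R n\<^esub> y \<oplus>\<^bsub>matR R n\<^esub> z = x \<oplus>\<^bsub>matR R n\<^esub> (y \<oplus>\<^bsub>matR R n\<^esub> z)"
      unfolding matR_def using x' y' z' by (auto simp: madd_def fun_eq_iff mats_c a_assoc)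
    show "x \<oplus>\<^bsub>matR R n\<^esub> y = y \<oplus>\<^bsub>matR R n\<^esub> x"
      unfolding matR_def using x' y' by (auto simp: madd_def fun_eq_iff mats_c a_comm)
    show "\<zero>\<^bsub>matR R n\<^esub> \<oplus>\<^bsub>matR R n\<^esub> x = x"
      unfolding matR_def using x' by (auto simp: madd_def fun_eq_iff mats_c mats_out)
    show "\<exists>y\<in>carrier (matR R n). y \<oplus>\<^bsub>matR R n\<^esub> x = \<zero>\<^bsub>matR R n\<^esub>"
    proof (intro bexI)
      let ?y = "\<lambda>i j. if i < n \<and> j < n then \<ominus> x i j else \<zero>"
      have "?y \<in> mats R n (carrier R)" unfolding mats_iff using mats_c[OF x'] by simp
      then show "?y \<in> carrier (matR R n)" unfolding matR_def by simp
      show "?y \<oplus>\<^bsub>matR R n\<^esub> x = \<zero>\<^bsub>matR R n\<^esub>"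
        unfolding matR_def using x' by (auto simp: madd_def fun_eq_iff mats_c l_neg)
    qed
  next
    show "\<zero>\<^bsub>matR R n\<^esub> \<in> carrier (matR R n)" by (simp add: matR_def mats_iff)
  qed
  show "monoid (matR R n)"
  proof (rule monoidI)
    fix x y z assume x: "x \<in> carrier (matR R n)" and y: "y \<in> carrier (matR R n)" and z: "z \<in> carrier (matR R n)"
    have x': "x \<in> mats R n (carrier R)" and y': "y \<in> mats R n (carrier R)" and z': "z \<in> mats R n (carrier R)"
      using x y z unfolding matR_def by auto
    show "x \<otimes>\<^bsub>matR R n\<^esub> y \<in> carrier (matR R n)"
      unfolding matR_def using mmul_in[OF _ _ _ _ x' y'] by simp
    show "x \<otimes>\<^bsub>matR R n\<^esub> y \<otimes>\<^bsub>matR R n\<^esub> z = x \<otimes>\<^bsub>matR R n\<^esub> (y \<otimes>\<^bsub>matR R n\<^esub> z)"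
    proof -
      have "mmul R n (mmul R n x y) z i j = mmul R n x (mmul R n y z) i j" for i j
      proof (cases "i < n \<and> j < n")
        case True
        have "mmul R n (mmul R n x y) z i j = (\<Oplus>k\<in>{..<n}. mmul R n x y i k \<otimes> z k j)"
          using True by (simp add: mmul_def[of R n "mmul R n x y" z])
        also have "\<dots> = (\<Oplus>k\<in>{..<n}. (\<Oplus>l\<in>{..<n}. x i l \<otimes> y l k) \<otimes> z k j)"
          using True x' y' z' by (intro finsum_cong') (auto simp: mmul_def mats_c intro!: finsum_closed)
        also have "\<dots> = (\<Oplus>k\<in>{..<n}. \<Oplus>l\<in>{..<n}. x i l \<otimes> y l k \<otimes> z k j)"
          using x' y' z' True by (intro finsum_cong') (auto simp: mats_c finsum_ldistr)
        also have "\<dots> = (\<Oplus>l\<in>{..<n}. \<Oplus>k\<in>{..<n}. x i l \<otimes> y l k \<otimes> z k j)"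
          by (rule finsum_swap) (use x' y' z' True in \<open>auto simp: mats_c\<close>)
        also have "\<dots> = (\<Oplus>l\<in>{..<n}. x i l \<otimes> (\<Oplus>k\<in>{..<n}. y l k \<otimes> z k j))"
          using x' y' z' True by (intro finsum_cong') (auto simp: mats_c finsum_rdistr m_assoc intro!: finsum_cong')
        also have "\<dots> = (\<Oplus>l\<in>{..<n}. x i l \<otimes> mmul R n y z l j)"
          using True x' y' z' by (intro finsum_cong') (auto simp: mmul_def mats_c intro!: finsum_closed)
        also have "\<dots> = mmul R n x (mmul R n y z) i j"
          using True by (simp add: mmul_def[of R n x "mmul R n y z"])
        finally show ?thesis .
      qed (simp add: mmul_out)
      then show ?thesis unfolding matR_def by (simp add: fun_eq_iff)
    qed
    show "\<one>\<^bsub>matR R n\<^esub> \<otimes>\<^bsub>matR R n\<^esub> x = x"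
    proof -
      have "mmul R n (mone R n) x i j = x i j" for i j
      proof (cases "i < n \<and> j < n")
        case True
        have "mmul R n (mone R n) x i j = (\<Oplus>k\<in>{..<n}. if i = k then x k j else \<zero>)"
          using True x' by (auto simp: mmul_def mone_def mats_c intro!: finsum_cong')
        also have "\<dots> = x i j" using True x' by (intro finsum_delta) (auto simp: mats_c)
        finally show ?thesis .
      qed (use x' in \<open>auto simp: mmul_def mats_out\<close>)
      then show ?thesis unfolding matR_def by (simp add: fun_eq_iff)
    qed
    show "x \<otimes>\<^bsub>matR R n\<^esub> \<one>\<^bsub>matR R n\<^esub> = x"
    proof -
      have "mmul R n x (mone R n) i j = x i j" for i j
      proof (cases "i < n \<and> j < n")
        case True
        have "mmul R n x (mone R n) i j = (\<Oplus>k\<in>{..<n}. if k = j then x i k else \<zero>)"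
          using True x' by (auto simp: mmul_def mone_def mats_c intro!: finsum_cong')
        also have "\<dots> = x i j" using True x' by (intro finsum_delta') (auto simp: mats_c)
        finally show ?thesis .
      qed (use x' in \<open>auto simp: mmul_def mats_out\<close>)
      then show ?thesis unfolding matR_def by (simp add: fun_eq_iff)
    qed
  next
    show "\<one>\<^bsub>matR R n\<^esub> \<in> carrier (matR R n)" unfolding matR_def using mone_in by simp
  qed
  fix x y z assume x: "x \<in> carrier (matR R n)" and y: "y \<in> carrier (matR R n)" and z: "z \<in> carrier (matR R n)"
  have x': "x \<in> mats R n (carrier R)" and y': "y \<in> mats R n (carrier R)" and z': "z \<in> mats R n (carrier R)"
    using x y z unfolding matR_def by auto
  show "(x \<oplus>\<^bsub>matR R n\<^esub> y) \<otimes>\<^bsub>matR R n\<^esub> z = x \<otimes>\<^bsub>matR R n\<^esub> z \<oplus>\<^bsub>matR R n\<^esub> y \<otimes>\<^bsub>matR R n\<^esub> z"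
  proof -
    have "mmul R n (madd R n x y) z i j = madd R n (mmul R n x z) (mmul R n y z) i j" for i j
    proof (cases "i < n \<and> j < n")
      case True
      have "mmul R n (madd R n x y) z i j = (\<Oplus>k\<in>{..<n}. madd R n x y i k \<otimes> z k j)"
        using True by (simp add: mmul_def[of R n "madd R n x y" z])
      also have "\<dots> = (\<Oplus>k\<in>{..<n}. x i k \<otimes> z k j \<oplus> y i k \<otimes> z k j)"
        using True x' y' z' by (intro finsum_cong') (auto simp: madd_def mats_c l_distr)
      also have "\<dots> = (\<Oplus>k\<in>{..<n}. x i k \<otimes> z k j) \<oplus> (\<Oplus>k\<in>{..<n}. y i k \<otimes> z k j)"
        using True x' y' z' by (intro finsum_addf) (auto simp: mats_c)
      also have "\<dots> = madd R n (mmul R n x z) (mmul R n y z) i j"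
        using True by (simp add: madd_def mmul_def)
      finally show ?thesis .
    qed (simp add: mmul_out madd_out)
    then show ?thesis unfolding matR_def by (simp add: fun_eq_iff)
  qed
  show "z \<otimes>\<^bsub>matR R n\<^esub> (x \<oplus>\<^bsub>matR R n\<^esub> y) = z \<otimes>\<^bsub>matR R n\<^esub> x \<oplus>\<^bsub>matR R n\<^esub> z \<otimes>\<^bsub>matR R n\<^esub> y"
  proof -
    have "mmul R n z (madd R n x y) i j = madd R n (mmul R n z x) (mmul R n z y) i j" for i j
    proof (cases "i < n \<and> j < n")
      case True
      have "mmul R n z (madd R n x y) i j = (\<Oplus>k\<in>{..<n}. z i k \<otimes> madd R n x y k j)"
        using True by (simp add: mmul_def[of R n z "madd R n x y"])
      also have "\<dots> = (\<Oplus>k\<in>{..<n}. z i k \<otimes> x k j \<oplus> z i k \<otimes> y k j)"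
        using True x' y' z' by (intro finsum_cong') (auto simp: madd_def mats_c r_distr)
      also have "\<dots> = (\<Oplus>k\<in>{..<n}. z i k \<otimes> x k j) \<oplus> (\<Oplus>k\<in>{..<n}. z i k \<otimes> y k j)"
        using True x' y' z' by (intro finsum_addf) (auto simp: mats_c)
      also have "\<dots> = madd R n (mmul R n z x) (mmul R n z y) i j"
        using True by (simp add: madd_def mmul_def)
      finally show ?thesis .
    qed (simp add: mmul_out madd_out)
    then show ?thesis unfolding matR_def by (simp add: fun_eq_iff)
  qed
qed

end

context cring begin

lemma matR_simps: "carrier (matR R n) = mats R n (carrier R)" "mult (matR R n) = mmul R n"
  "add (matR R n) = madd R n" "one (matR R n) = mone R n" "zero (matR R n) = (\<lambda>i j. \<zero>)"
  unfolding matR_def by simp_all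

lemma matR_neg:
  assumes B: "B \<in> mats R n (carrier R)"
  shows "a_inv (matR R n) B = (\<lambda>i j. if i < n \<and> j < n then \<ominus> B i j else \<zero>)"
proof -
  interpret M: ring "matR R n" by (rule matR_ring)
  let ?y = "\<lambda>i j. if i < n \<and> j < n then \<ominus> B i j else \<zero>"
  have yc: "?y \<in> carrier (matR R n)" unfolding matR_simps mats_iff using mats_c[OF B] by simp
  have "?y \<oplus>\<^bsub>matR R n\<^esub> B = \<zero>\<^bsub>matR R n\<^esub>"
    unfolding matR_simps using B by (auto simp: madd_def fun_eq_iff mats_c l_neg)
  then show ?thesis by (rule M.minus_equality) (use B yc in \<open>simp_all add: matR_simps\<close>)
qed

lemma msub_eq:
  assumes A: "A \<in> mats R n (carrier R)" and B: "B \<in> mats R n (carrier R)"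
  shows "msub R n A B = a_minus (matR R n) A B"
  unfolding a_minus_def matR_neg[OF B] matR_simps
  by (auto simp: msub_def madd_def fun_eq_iff mats_c minus_eq)

lemma msmul_out: "\<not> (i < n \<and> j < n) \<Longrightarrow> msmul R n c A i j = \<zero>"
  by (auto simp: msmul_def)

definition scal where "scal n c = msmul R n c (mone R n)"

lemma scal_in: "c \<in> carrier R \<Longrightarrow> c \<in> S \<Longrightarrow> \<zero> \<in> S \<Longrightarrow> scal n c \<in> mats R n S"
  unfolding scal_def mats_iff msmul_def mone_def by auto

lemma scal_left:
  assumes c: "c \<in> carrier R" and A: "A \<in> mats R n S"
  shows "msmul R n c A = mmul R n (scal n c) A"
proof (intro ext)
  fix i j show "msmul R n c A i j = mmul R n (scal n c) A i j"
  proof (cases "i < n \<and> j < n")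
    case True
    have "mmul R n (scal n c) A i j = (\<Oplus>k\<in>{..<n}. if i = k then c \<otimes> A k j else \<zero>)"
      using True c mats_c'[OF A] by (auto simp: mmul_def scal_def msmul_def mone_def intro!: finsum_cong')
    also have "\<dots> = c \<otimes> A i j" using True c mats_c'[OF A] by (intro finsum_delta) auto
    finally show ?thesis using True by (simp add: msmul_def)
  qed (simp add: msmul_out mmul_out)
qed

lemma scal_right:
  assumes c: "c \<in> carrier R" and A: "A \<in> mats R n S"
  shows "msmul R n c A = mmul R n A (scal n c)"
proof (intro ext)
  fix i j show "msmul R n c A i j = mmul R n A (scal n c) i j"
  proof (cases "i < n \<and> j < n")
    case True
    have "mmul R n A (scal n c) i j = (\<Oplus>k\<in>{..<n}. if k = j then c \<otimes> A i k else \<zero>)"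
      using True c mats_c'[OF A] by (auto simp: mmul_def scal_def msmul_def mone_def m_comm intro!: finsum_cong')
    also have "\<dots> = c \<otimes> A i j" using True c mats_c'[OF A] by (intro finsum_delta') auto
    finally show ?thesis using True by (simp add: msmul_def)
  qed (simp add: msmul_out mmul_out)
qed

lemma scal_comm:
  assumes c: "c \<in> carrier R" and A: "A \<in> mats R n S"
  shows "mmul R n (scal n c) A = mmul R n A (scal n c)"
  using scal_left[OF c A] scal_right[OF c A] by simp

end

lemma mmap_out: "\<not> (i < n \<and> j < n) \<Longrightarrow> mmap z n f A i j = z"
  by (auto simp: mmap_def)

locale mhom = R?: cring R + S?: cring S for R (structure) and S (structure) +
  fixes h Sub
  assumes Sub_c: "Sub \<subseteq> carrier R" and Sub_zero: "\<zero>\<^bsub>R\<^esub> \<in> Sub"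
    and Sub_add: "x \<in> Sub \<Longrightarrow> y \<in> Sub \<Longrightarrow> x \<oplus>\<^bsub>R\<^esub> y \<in> Sub"
    and Sub_mult: "x \<in> Sub \<Longrightarrow> y \<in> Sub \<Longrightarrow> x \<otimes>\<^bsub>R\<^esub> y \<in> Sub"
    and h_c: "x \<in> Sub \<Longrightarrow> h x \<in> carrier S"
    and h_add: "x \<in> Sub \<Longrightarrow> y \<in> Sub \<Longrightarrow> h (x \<oplus>\<^bsub>R\<^esub> y) = h x \<oplus>\<^bsub>S\<^esub> h y"
    and h_mult: "x \<in> Sub \<Longrightarrow> y \<in> Sub \<Longrightarrow> h (x \<otimes>\<^bsub>R\<^esub> y) = h x \<otimes>\<^bsub>S\<^esub> h y"
    and h_zero: "h \<zero>\<^bsub>R\<^esub> = \<zero>\<^bsub>S\<^esub>"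
begin

lemma h_finsum:
  assumes K: "finite K" and F: "\<And>k. k \<in> K \<Longrightarrow> F k \<in> Sub"
  shows "h (finsum R F K) = finsum S (\<lambda>k. h (F k)) K"
  using K F
proof (induction K rule: finite_induct)
  case empty then show ?case using h_zero by simp
next
  case (insert a K)
  have FK: "finsum R F K \<in> Sub" using insert Sub_c Sub_zero Sub_add by (intro R.finsum_in_sub) auto
  have "finsum R F (insert a K) = F a \<oplus>\<^bsub>R\<^esub> finsum R F K"
    using insert Sub_c by (intro R.finsum_insert) auto
  then have "h (finsum R F (insert a K)) = h (F a) \<oplus>\<^bsub>S\<^esub> h (finsum R F K)"
    using h_add insert FK by simp
  also have "\<dots> = h (F a) \<oplus>\<^bsub>S\<^esub> finsum S (\<lambda>k. h (F k)) K" using insert by simp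
  also have "\<dots> = finsum S (\<lambda>k. h (F k)) (insert a K)"
    using insert h_c by (intro S.finsum_insert[symmetric]) auto
  finally show ?case .
qed

lemma mmap_mats: "A \<in> mats R n Sub \<Longrightarrow> h ` Sub \<subseteq> T \<Longrightarrow> mmap \<zero>\<^bsub>S\<^esub> n h A \<in> mats S n T"
  unfolding mats_def mmap_def using h_c by auto

lemma mmap_mmul:
  assumes A: "A \<in> mats R n Sub" and B: "B \<in> mats R n Sub"
  shows "mmap \<zero>\<^bsub>S\<^esub> n h (mmul R n A B) = mmul S n (mmap \<zero>\<^bsub>S\<^esub> n h A) (mmap \<zero>\<^bsub>S\<^esub> n h B)"
proof (intro ext)
  fix i j show "mmap \<zero>\<^bsub>S\<^esub> n h (mmul R n A B) i j = mmul S n (mmap \<zero>\<^bsub>S\<^esub> n h A) (mmap \<zero>\<^bsub>S\<^esub> n h B) i j"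
  proof (cases "i < n \<and> j < n")
    case True
    have "mmap \<zero>\<^bsub>S\<^esub> n h (mmul R n A B) i j = h (\<Oplus>\<^bsub>R\<^esub>k\<in>{..<n}. A i k \<otimes>\<^bsub>R\<^esub> B k j)"
      using True by (simp add: mmap_def mmul_def)
    also have "\<dots> = (\<Oplus>\<^bsub>S\<^esub>k\<in>{..<n}. h (A i k \<otimes>\<^bsub>R\<^esub> B k j))"
      using True A B by (intro h_finsum) (auto intro: Sub_mult R.mats_S)
    also have "\<dots> = (\<Oplus>\<^bsub>S\<^esub>k\<in>{..<n}. h (A i k) \<otimes>\<^bsub>S\<^esub> h (B k j))"
      using True A B h_c by (intro S.finsum_cong') (auto simp: h_mult R.mats_S)
    also have "\<dots> = (\<Oplus>\<^bsub>S\<^esub>k\<in>{..<n}. mmap \<zero>\<^bsub>S\<^esub> n h A i k \<otimes>\<^bsub>S\<^esub> mmap \<zero>\<^bsub>S\<^esub> n h B k j)"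
      using True A B h_c by (intro S.finsum_cong') (auto simp: mmap_def R.mats_S)
    also have "\<dots> = mmul S n (mmap \<zero>\<^bsub>S\<^esub> n h A) (mmap \<zero>\<^bsub>S\<^esub> n h B) i j"
      using True by (simp add: mmul_def[of S n "mmap \<zero>\<^bsub>S\<^esub> n h A" "mmap \<zero>\<^bsub>S\<^esub> n h B"])
    finally show ?thesis .
  qed (simp add: mmap_out S.mmul_out)
qed

lemma mmap_madd:
  assumes A: "A \<in> mats R n Sub" and B: "B \<in> mats R n Sub"
  shows "mmap \<zero>\<^bsub>S\<^esub> n h (madd R n A B) = madd S n (mmap \<zero>\<^bsub>S\<^esub> n h A) (mmap \<zero>\<^bsub>S\<^esub> n h B)"
  using A B by (auto simp: fun_eq_iff mmap_def madd_def h_add R.mats_S)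

lemma mmap_msmul:
  assumes c: "c \<in> Sub" and A: "A \<in> mats R n Sub"
  shows "mmap \<zero>\<^bsub>S\<^esub> n h (msmul R n c A) = msmul S n (h c) (mmap \<zero>\<^bsub>S\<^esub> n h A)"
  using c A by (auto simp: fun_eq_iff mmap_def msmul_def h_mult R.mats_S)

lemma mmap_mone:
  assumes "h \<one>\<^bsub>R\<^esub> = \<one>\<^bsub>S\<^esub>"
  shows "mmap \<zero>\<^bsub>S\<^esub> n h (mone R n) = mone S n"
  using assms h_zero by (auto simp: fun_eq_iff mmap_def mone_def)

end

lemma QLS_mult_eq:
  assumes f: "f \<in> carrier QLS" and g: "g \<in> carrier QLS" and A: "finite A"
    and z: "\<And>i. i \<notin> A \<Longrightarrow> f i = 0 \<or> g (k - i) = 0"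
  shows "(f \<otimes>\<^bsub>QLS\<^esub> g) k = (\<Sum>i\<in>A. f i * g (k - i))"
proof -
  have "(f \<otimes>\<^bsub>QLS\<^esub> g) k = finsum ratR (\<lambda>i. f i \<otimes>\<^bsub>ratR\<^esub> g (k - i)) A"
    using cring.ls_mult_eq[OF ratR_cring, of f g A] f g A z unfolding QLS_def by simp
  also have "\<dots> = (\<Sum>i\<in>A. f i * g (k - i))"
  proof -
    interpret Rr: cring ratR by (rule ratR_cring)
    show ?thesis using A by (induction A rule: finite_induct) (simp_all add: Rr.finsum_insert)
  qed
  finally show ?thesis .
qed

lemma fin_small: "finite {p. prime p \<and> 1 < rat_absv (Fin p) q}"
proof (cases "q = 0")
  case True then show ?thesis by simp
next
  case False
  obtain a b where ab: "a \<noteq> 0" "b > 0" "q = of_int a / of_int b" using rat_frac_rep[of q] False by metis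
  have "{p. prime p \<and> 1 < rat_absv (Fin p) q} \<subseteq> {p. p \<le> nat b}"
  proof
    fix p assume "p \<in> {p. prime p \<and> 1 < rat_absv (Fin p) q}"
    then have p: "prime p" and gt: "1 < rat_absv (Fin p) q" by auto
    show "p \<in> {p. p \<le> nat b}"
    proof (rule ccontr)
      assume "p \<notin> {p. p \<le> nat b}"
      then have "p > nat b" by simp
      then have lt: "b < int p" using ab(2) by arith
      have nd: "\<not> int p dvd b"
      proof
        assume "int p dvd b"
        then have "int p \<le> b" using ab(2) by (rule zdvd_imp_le)
        then show False using lt by simp
      qed
      have "padic_val p q = int (multiplicity (int p) a) - int (multiplicity (int p) b)"
        unfolding ab(3) by (rule pv_frac[OF p]) (use ab in auto)
      also have "multiplicity (int p) b = 0" by (rule not_dvd_imp_multiplicity_0[OF nd])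
      finally have "padic_val p q \<ge> 0" by simp
      moreover have "real p > 1" using p prime_gt_1_nat by simp
      ultimately have "real p powr (- real_of_int (padic_val p q)) \<le> real p powr 0"
        by (intro powr_mono) auto
      then have "rat_absv (Fin p) q \<le> 1" using False \<open>real p > 1\<close> by simp
      then show False using gt by simp
    qed
  qed
  then show ?thesis by (rule finite_subset) simp
qed

lemma QLS_carrier_iff: "f \<in> carrier QLS \<longleftrightarrow> (\<exists>M. \<forall>i<M. f i = 0)"
  unfolding QLS_carrier by simp

lemma diagQ_bad: "bad (diagQ f) = {p. prime p \<and> \<not> (\<forall>i. vrat (Fin p) (f i) \<in> Zv (Fin p))}"
  unfolding bad_def diagQ_def using Fin_places by auto

lemma Zv_vrat01: "prime p \<Longrightarrow> q = 0 \<or> q = 1 \<Longrightarrow> vrat (Fin p) q \<in> Zv (Fin p)"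
  using Zv_vrat[of p q] av0[OF av_Fin[of p]] av1[OF av_Fin[of p]] by auto

lemma tpow_Qt: "tpow N \<in> Qt"
proof -
  have c: "tpow N \<in> carrier QLS" unfolding QLS_carrier_iff tpow_def by (intro exI[of _ N]) auto
  have "{p. prime p \<and> \<not> (\<forall>i. vrat (Fin p) (tpow N i) \<in> Zv (Fin p))} = {}"
    using Zv_vrat01 unfolding tpow_def by auto
  then have "finite {p. prime p \<and> \<not> (\<forall>i. vrat (Fin p) (tpow N i) \<in> Zv (Fin p))}" by (simp only: finite.emptyI)
  then show ?thesis unfolding Qt_def using diagQ_in[OF c] c by simp
qed

lemma tpow1_plus: "tpow 1 \<in> Qt_plus"
proof -
  have "tpow 1 \<in> carrier QLS" using tpow_Qt Qt_sub by auto
  then have "tpow 1 \<in> ps_carrier ratR" by (simp add: ps_ratR tpow_def)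
  then show ?thesis unfolding Qt_plus_def using tpow_Qt by simp
qed

lemma const_Qt_plus: "const_ls q \<in> Qt_plus"
proof -
  have c: "const_ls q \<in> carrier QLS" unfolding QLS_carrier_iff const_ls_def by (intro exI[of _ 0]) auto
  have "{p. prime p \<and> \<not> (\<forall>i. vrat (Fin p) (const_ls q i) \<in> Zv (Fin p))} \<subseteq> {p. prime p \<and> 1 < rat_absv (Fin p) q}"
  proof
    fix p assume "p \<in> {p. prime p \<and> \<not> (\<forall>i. vrat (Fin p) (const_ls q i) \<in> Zv (Fin p))}"
    then obtain i where p: "prime p" and n: "vrat (Fin p) (const_ls q i) \<notin> Zv (Fin p)" by auto
    show "p \<in> {p. prime p \<and> 1 < rat_absv (Fin p) q}"
    proof (cases "i = 0")
      case True
      then have "\<not> rat_absv (Fin p) q \<le> 1" using n Zv_vrat[OF p] by (auto simp: const_ls_def)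
      then show ?thesis using p by simp
    next
      case False then show ?thesis using n Zv_vrat01[OF p] by (simp add: const_ls_def)
    qed
  qed
  then have "diagQ (const_ls q) \<in> carrier At" using diagQ_in[OF c] fin_small finite_subset by blast
  moreover have "const_ls q \<in> ps_carrier ratR" using c by (simp add: ps_ratR const_ls_def)
  ultimately show ?thesis unfolding Qt_plus_def Qt_def using c by simp
qed

lemma const_mult: "const_ls (a * b) = const_ls a \<otimes>\<^bsub>QLS\<^esub> const_ls b"
proof
  fix k
  have ca: "const_ls a \<in> carrier QLS" and cb: "const_ls b \<in> carrier QLS"
    using const_Qt_plus Qt_plus_sub Qt_sub by auto
  have "(const_ls a \<otimes>\<^bsub>QLS\<^esub> const_ls b) k = (\<Sum>i\<in>{0}. const_ls a i * const_ls b (k - i))"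
    by (rule QLS_mult_eq[OF ca cb]) (auto simp: const_ls_def)
  then show "const_ls (a * b) k = (const_ls a \<otimes>\<^bsub>QLS\<^esub> const_ls b) k" by (simp add: const_ls_def)
qed

lemma const_add: "const_ls (a + b) = const_ls a \<oplus>\<^bsub>QLS\<^esub> const_ls b"
  by (auto simp: QLS_add const_ls_def)

lemma const_zero: "const_ls 0 = \<zero>\<^bsub>QLS\<^esub>" and const_one: "const_ls 1 = \<one>\<^bsub>QLS\<^esub>"
  by (auto simp: QLS_zero QLS_one const_ls_def)

lemma tpow1_mult:
  assumes g: "g \<in> carrier QLS"
  shows "(tpow 1 \<otimes>\<^bsub>QLS\<^esub> g) k = g (k - 1)"
proof -
  have c: "tpow 1 \<in> carrier QLS" using tpow_Qt Qt_sub by auto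
  have "(tpow 1 \<otimes>\<^bsub>QLS\<^esub> g) k = (\<Sum>i\<in>{1}. tpow 1 i * g (k - i))"
    by (rule QLS_mult_eq[OF c g]) (auto simp: tpow_def)
  then show ?thesis by (simp add: tpow_def)
qed

definition sh :: "(int \<Rightarrow> rat) \<Rightarrow> (int \<Rightarrow> rat)" where
  "sh f = (\<lambda>i. if i < 0 then 0 else f (i + 1))"

lemma sh_plus:
  assumes f: "f \<in> Qt_plus" shows "sh f \<in> Qt_plus"
proof -
  have fq: "f \<in> Qt" using f Qt_plus_sub by auto
  have c: "sh f \<in> carrier QLS" unfolding QLS_carrier_iff sh_def by (intro exI[of _ 0]) auto
  have "{p. prime p \<and> \<not> (\<forall>i. vrat (Fin p) (sh f i) \<in> Zv (Fin p))} \<subseteq> bad (diagQ f)"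
    unfolding diagQ_bad sh_def using Zv_vrat01 by auto
  moreover have "finite (bad (diagQ f))" using fq unfolding Qt_def At_carrier_iff by auto
  ultimately have "diagQ (sh f) \<in> carrier At" using diagQ_in[OF c] finite_subset by blast
  moreover have "sh f \<in> ps_carrier ratR" using c by (simp add: ps_ratR sh_def)
  ultimately show ?thesis unfolding Qt_plus_def Qt_def using c by simp
qed

lemma decomp1:
  assumes f: "f \<in> Qt_plus"
  shows "f = const_ls (f 0) \<oplus>\<^bsub>QLS\<^esub> (tpow 1 \<otimes>\<^bsub>QLS\<^esub> sh f)"
proof
  fix k
  have c: "sh f \<in> carrier QLS" using sh_plus[OF f] Qt_plus_sub Qt_sub by auto
  have "f \<in> ps_carrier ratR" using f unfolding Qt_plus_def by auto
  then have f0: "\<forall>i<0. f i = 0" by (simp add: ps_ratR)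
  show "f k = (const_ls (f 0) \<oplus>\<^bsub>QLS\<^esub> (tpow 1 \<otimes>\<^bsub>QLS\<^esub> sh f)) k"
    unfolding QLS_add tpow1_mult[OF c] using f0 by (auto simp: const_ls_def sh_def)
qed

lemma ev0_mult: "f \<in> Qt_plus \<Longrightarrow> g \<in> Qt_plus \<Longrightarrow> (f \<otimes>\<^bsub>QLS\<^esub> g) 0 = f 0 * g 0"
  using cring.ps_mult_0[OF ratR_cring, of f g] unfolding Qt_plus_def QLS_def by simp

abbreviation "DQ n A \<equiv> mmap \<zero>\<^bsub>At\<^esub> n diagQ A"
abbreviation "DC n x \<equiv> mmap \<zero>\<^bsub>At\<^esub> n (diagQ \<circ> const_ls) x"

lemma At_cr: "cring At" by (rule At_cring)

lemma mhom_DQ: "mhom QLS At diagQ Qt"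
proof -
  interpret Q: cring QLS by (rule QLS_cring)
  interpret A: cring At by (rule At_cring)
  show ?thesis
    by (unfold_locales) (use Qt_sub Qt_zero Qt_add Qt_mult diagQ_add diagQ_mult diagQ_zero Qt_sub in
        \<open>auto simp: Qt_def\<close>)
qed

lemma const_Qt: "const_ls q \<in> Qt" using const_Qt_plus Qt_plus_sub by auto

lemma const_c: "const_ls q \<in> carrier QLS" using const_Qt Qt_sub by auto

lemma mhom_DC: "mhom ratR At (diagQ \<circ> const_ls) UNIV"
proof -
  interpret Q: cring ratR by (rule ratR_cring)
  interpret A: cring At by (rule At_cring)
  show ?thesis
  proof (unfold_locales)
    show "x \<in> UNIV \<Longrightarrow> (diagQ \<circ> const_ls) x \<in> carrier At" for x using const_Qt by (simp add: Qt_def)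
    show "(diagQ \<circ> const_ls) (x \<oplus>\<^bsub>ratR\<^esub> y) = (diagQ \<circ> const_ls) x \<oplus>\<^bsub>At\<^esub> (diagQ \<circ> const_ls) y" for x y
      using const_add diagQ_add const_c by simp
    show "(diagQ \<circ> const_ls) (x \<otimes>\<^bsub>ratR\<^esub> y) = (diagQ \<circ> const_ls) x \<otimes>\<^bsub>At\<^esub> (diagQ \<circ> const_ls) y" for x y
      using const_mult diagQ_mult const_c by simp
    show "(diagQ \<circ> const_ls) \<zero>\<^bsub>ratR\<^esub> = \<zero>\<^bsub>At\<^esub>" using const_zero diagQ_zero by simp
  qed auto
qed

lemma mhom_ev: "mhom QLS ratR (\<lambda>f. f 0) Qt_plus"
proof -
  interpret Q: cring QLS by (rule QLS_cring)
  interpret A: cring ratR by (rule ratR_cring)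
  show ?thesis
    by (unfold_locales) (use Qt_plus_sub Qt_sub Qt_plus_zero Qt_plus_add Qt_plus_mult ev0_mult in
        \<open>auto simp: QLS_add QLS_zero\<close>)
qed

lemma mhom_C: "mhom ratR QLS const_ls UNIV"
proof -
  interpret Q: cring QLS by (rule QLS_cring)
  interpret A: cring ratR by (rule ratR_cring)
  show ?thesis
    by (unfold_locales) (use const_c const_add const_mult const_zero in auto)
qed

lemma Adeles_plus: "Adeles \<subseteq> At_plus"
proof
  fix a assume "a \<in> Adeles"
  then have "a \<in> carrier At" "\<forall>v\<in>places. \<forall>i<0. a v i = \<zero>\<^bsub>Qv v\<^esub>" unfolding Adeles_def by auto
  then show "a \<in> At_plus" unfolding At_plus_iff by blast
qed

lemma mats_mono: "S \<subseteq> S' \<Longrightarrow> mats R n S \<subseteq> mats R n S'"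
  unfolding mats_def by blast

lemma ratR_mats: "mats ratR n UNIV = carrier (matR ratR n)"
  using cring.matR_simps[OF ratR_cring] unfolding mats_def by simp

abbreviation "TT \<equiv> diagQ (tpow 1)"
abbreviation "TN N \<equiv> diagQ (tpow N)"

lemma TT_plus: "TT \<in> At_plus" using diagQ_plus[OF tpow1_plus] .
lemma TN_c: "TN N \<in> carrier At" using tpow_Qt unfolding Qt_def by auto

lemma absset_inst: "absset (matR At n) (mats At n At_plus) (cring.scal At n TT) (cring.scal At n (TN N))"
proof -
  interpret A: cring At by (rule At_cring)
  interpret M: ring "matR At n" by (rule A.matR_ring)
  have Ps: "At_plus \<subseteq> carrier At" by (rule At_plus_sub)
  show ?thesis
  proof (unfold_locales)
    show "mats At n At_plus \<subseteq> carrier (matR At n)" unfolding A.matR_simps by (intro mats_mono Ps)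
    show "x \<oplus>\<^bsub>matR At n\<^esub> y \<in> mats At n At_plus" if "x \<in> mats At n At_plus" "y \<in> mats At n At_plus" for x y
      unfolding A.matR_simps using that by (intro A.madd_in At_plus_add)
    show "x \<otimes>\<^bsub>matR At n\<^esub> y \<in> mats At n At_plus" if "x \<in> mats At n At_plus" "y \<in> mats At n At_plus" for x y
      unfolding A.matR_simps using that Ps At_plus_zero At_plus_add At_plus_mult by (intro A.mmul_in) auto
    show "\<ominus>\<^bsub>matR At n\<^esub> x \<in> mats At n At_plus" if x: "x \<in> mats At n At_plus" for x
    proof -
      have "x \<in> mats At n (carrier At)" using x A.mats_carrier by blast
      then show ?thesis unfolding A.matR_neg[OF \<open>x \<in> mats At n (carrier At)\<close>] mats_def
        using x At_plus_neg At_plus_zero A.mats_S[OF x] A.mats_c[OF x] by auto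
    qed
    show "cring.scal At n TT \<in> mats At n At_plus"
      using TT_plus Ps At_plus_zero by (intro A.scal_in) auto
    show "cring.scal At n (TN N) \<in> carrier (matR At n)"
      unfolding A.matR_simps using TN_c by (intro A.scal_in) auto
    show "cring.scal At n TT \<otimes>\<^bsub>matR At n\<^esub> x = x \<otimes>\<^bsub>matR At n\<^esub> cring.scal At n TT"
      if "x \<in> carrier (matR At n)" for x
      using that TT_plus Ps unfolding A.matR_simps by (intro A.scal_comm) auto
    show "cring.scal At n (TN N) \<otimes>\<^bsub>matR At n\<^esub> x = x \<otimes>\<^bsub>matR At n\<^esub> cring.scal At n (TN N)"
      if "x \<in> carrier (matR At n)" for x
      using that TN_c unfolding A.matR_simps by (intro A.scal_comm) auto
  qed
qed

abbreviation "PP n N \<equiv> absset.Pp (matR At n) (mats At n At_plus) (cring.scal At n TT) (cring.scal At n (TN N))"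

lemma cond_iff:
  assumes R: "R \<in> mats At n (carrier At)" and U: "U \<subseteq> mats At n (carrier At)"
  shows "(\<forall>u\<in>U. msub At n (mmul At n R u) R \<in>
            {madd At n (mmul At n R (msmul At n TT X)) (msmul At n (TN N) Y)
               | X Y. X \<in> mats At n At_plus \<and> Y \<in> mats At n At_plus}) \<longleftrightarrow> PP n N R U"
proof -
  interpret A: cring At by (rule At_cring)
  interpret M: ring "matR At n" by (rule A.matR_ring)
  interpret AS: absset "matR At n" "mats At n At_plus" "cring.scal At n TT" "cring.scal At n (TN N)"
    by (rule absset_inst)
  have e1: "msub At n (mmul At n R u) R = mmul At n R u \<ominus>\<^bsub>matR At n\<^esub> R" if "u \<in> U" for u
    using that U R by (intro A.msub_eq A.mmul_in) auto
  have e2: "{madd At n (mmul At n R (msmul At n TT X)) (msmul At n (TN N) Y)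
               | X Y. X \<in> mats At n At_plus \<and> Y \<in> mats At n At_plus} = AS.Sset R"
  proof -
    have "madd At n (mmul At n R (msmul At n TT X)) (msmul At n (TN N) Y)
          = R \<otimes>\<^bsub>matR At n\<^esub> (cring.scal At n TT \<otimes>\<^bsub>matR At n\<^esub> X) \<oplus>\<^bsub>matR At n\<^esub> cring.scal At n (TN N) \<otimes>\<^bsub>matR At n\<^esub> Y"
      if "X \<in> mats At n At_plus" "Y \<in> mats At n At_plus" for X Y
      using that TT_plus At_plus_sub TN_c by (simp add: A.matR_simps A.scal_left[symmetric] subsetD)
    note eq = this
    show ?thesis unfolding AS.Sset_def
    proof (intro equalityI subsetI)
      fix z assume "z \<in> {madd At n (mmul At n R (msmul At n TT X)) (msmul At n (TN N) Y)
               | X Y. X \<in> mats At n At_plus \<and> Y \<in> mats At n At_plus}"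
      then obtain X Y where XY: "X \<in> mats At n At_plus" "Y \<in> mats At n At_plus"
        and z: "z = madd At n (mmul At n R (msmul At n TT X)) (msmul At n (TN N) Y)" by blast
      have "z = R \<otimes>\<^bsub>matR At n\<^esub> (cring.scal At n TT \<otimes>\<^bsub>matR At n\<^esub> X) \<oplus>\<^bsub>matR At n\<^esub> cring.scal At n (TN N) \<otimes>\<^bsub>matR At n\<^esub> Y"
        using z eq[OF XY] by simp
      then show "z \<in> {R \<otimes>\<^bsub>matR At n\<^esub> (cring.scal At n TT \<otimes>\<^bsub>matR At n\<^esub> X) \<oplus>\<^bsub>matR At n\<^esub> cring.scal At n (TN N) \<otimes>\<^bsub>matR At n\<^esub> Y
               | X Y. X \<in> mats At n At_plus \<and> Y \<in> mats At n At_plus}" using XY by blast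
    next
      fix z assume "z \<in> {R \<otimes>\<^bsub>matR At n\<^esub> (cring.scal At n TT \<otimes>\<^bsub>matR At n\<^esub> X) \<oplus>\<^bsub>matR At n\<^esub> cring.scal At n (TN N) \<otimes>\<^bsub>matR At n\<^esub> Y
               | X Y. X \<in> mats At n At_plus \<and> Y \<in> mats At n At_plus}"
      then obtain X Y where XY: "X \<in> mats At n At_plus" "Y \<in> mats At n At_plus"
        and z: "z = R \<otimes>\<^bsub>matR At n\<^esub> (cring.scal At n TT \<otimes>\<^bsub>matR At n\<^esub> X) \<oplus>\<^bsub>matR At n\<^esub> cring.scal At n (TN N) \<otimes>\<^bsub>matR At n\<^esub> Y" by blast
      have "z = madd At n (mmul At n R (msmul At n TT X)) (msmul At n (TN N) Y)"
        using z eq[OF XY] by simp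
      then show "z \<in> {madd At n (mmul At n R (msmul At n TT X)) (msmul At n (TN N) Y)
               | X Y. X \<in> mats At n At_plus \<and> Y \<in> mats At n At_plus}" using XY by blast
    qed
  qed
  show ?thesis unfolding AS.Pp_def using e1 e2 by (simp add: A.matR_simps)
qed

lemma DC_mats: "x \<in> mats ratR n UNIV \<Longrightarrow> DC n x \<in> mats At n At_plus"
proof -
  interpret C: mhom ratR At "diagQ \<circ> const_ls" UNIV by (rule mhom_DC)
  assume x: "x \<in> mats ratR n UNIV"
  show ?thesis by (rule C.mmap_mats[OF x]) (use diagQ_plus const_Qt_plus in auto)
qed

lemma U_MP: "x \<in> mats ratR n UNIV \<Longrightarrow> unip_A n x b \<subseteq> mats At n At_plus"
proof
  interpret A: cring At by (rule At_cring)
  fix u assume x: "x \<in> mats ratR n UNIV" and "u \<in> unip_A n x b"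
  then obtain u0 y where u: "u = mmul At n (mmul At n (DC n x) u0) (DC n y)"
    and u0: "u0 \<in> std_unip n b Adeles" and y: "y \<in> mats ratR n UNIV" unfolding unip_A_def by blast
  have u0': "u0 \<in> mats At n At_plus" using u0 Adeles_plus mats_mono unfolding std_unip_def by blast
  have S: "At_plus \<subseteq> carrier At" "\<zero>\<^bsub>At\<^esub> \<in> At_plus"
    "\<And>x y. x \<in> At_plus \<Longrightarrow> y \<in> At_plus \<Longrightarrow> x \<oplus>\<^bsub>At\<^esub> y \<in> At_plus"
    "\<And>x y. x \<in> At_plus \<Longrightarrow> y \<in> At_plus \<Longrightarrow> x \<otimes>\<^bsub>At\<^esub> y \<in> At_plus"
    using At_plus_sub At_plus_zero At_plus_add At_plus_mult by auto
  show "u \<in> mats At n At_plus" unfolding u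
    by (intro A.mmul_in[OF S] DC_mats x y u0')
qed

lemma ratR_matR_simps: "carrier (matR ratR n) = mats ratR n UNIV" "mult (matR ratR n) = mmul ratR n"
  "one (matR ratR n) = mone ratR n"
  using cring.matR_simps[OF ratR_cring] ratR_mats by auto

lemma conj_lemma:
  assumes g0: "g0 \<in> mats ratR n UNIV" and g0i: "g0i \<in> mats ratR n UNIV"
    and e1: "mmul ratR n g0 g0i = mone ratR n" and e2: "mmul ratR n g0i g0 = mone ratR n"
    and x: "x \<in> mats ratR n UNIV" and u: "u \<in> unip_A n (mmul ratR n g0i x) b"
  shows "\<exists>u'\<in>unip_A n x b. mmul At n (DC n g0) u = mmul At n u' (DC n g0)"
proof -
  interpret A: cring At by (rule At_cring)
  interpret MA: ring "matR At n" by (rule A.matR_ring)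
  interpret MR: ring "matR ratR n" by (rule cring.matR_ring[OF ratR_cring])
  interpret C: mhom ratR At "diagQ \<circ> const_ls" UNIV by (rule mhom_DC)
  obtain u0 y where uu: "u = mmul At n (mmul At n (DC n (mmul ratR n g0i x)) u0) (DC n y)"
    and u0: "u0 \<in> std_unip n b Adeles" and y: "y \<in> mats ratR n UNIV"
    and xy: "mmul ratR n (mmul ratR n g0i x) y = mone ratR n" using u unfolding unip_A_def by blast
  have u0c: "u0 \<in> mats At n (carrier At)" using u0 A.mats_carrier unfolding std_unip_def by blast
  note RS = ratR_matR_simps[symmetric]
  have g0c: "g0 \<in> carrier (matR ratR n)" and g0ic: "g0i \<in> carrier (matR ratR n)"
    and xc: "x \<in> carrier (matR ratR n)" and yc: "y \<in> carrier (matR ratR n)"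
    using g0 g0i x y by (simp_all add: RS)
  define y' where "y' = mmul ratR n y g0i"
  have y'c: "y' \<in> mats ratR n UNIV" unfolding y'_def using yc g0ic MR.m_closed by (simp add: RS)
  have xy': "mmul ratR n x y' = mone ratR n"
  proof -
    have "x = (g0 \<otimes>\<^bsub>matR ratR n\<^esub> g0i) \<otimes>\<^bsub>matR ratR n\<^esub> x" using e1 xc by (simp add: RS)
    then have "x \<otimes>\<^bsub>matR ratR n\<^esub> (y \<otimes>\<^bsub>matR ratR n\<^esub> g0i) =
        g0 \<otimes>\<^bsub>matR ratR n\<^esub> (((g0i \<otimes>\<^bsub>matR ratR n\<^esub> x) \<otimes>\<^bsub>matR ratR n\<^esub> y) \<otimes>\<^bsub>matR ratR n\<^esub> g0i)"
      using g0c g0ic xc yc by (metis MR.m_assoc MR.m_closed)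
    also have "\<dots> = \<one>\<^bsub>matR ratR n\<^esub>" using xy e1 g0c g0ic by (simp add: RS)
    finally show ?thesis unfolding y'_def by (simp add: RS)
  qed
  let ?u' = "mmul At n (mmul At n (DC n x) u0) (DC n y')"
  have u'U: "?u' \<in> unip_A n x b" unfolding unip_A_def using u0 y'c xy' by blast
  have DCc: "DC n z \<in> carrier (matR At n)" if "z \<in> mats ratR n UNIV" for z
    using DC_mats[OF that] A.mats_carrier At_plus_sub by (simp add: A.matR_simps)
  have DCm: "DC n (mmul ratR n a c) = DC n a \<otimes>\<^bsub>matR At n\<^esub> DC n c" if "a \<in> mats ratR n UNIV" "c \<in> mats ratR n UNIV" for a c
    using C.mmap_mmul[OF that] by (simp add: A.matR_simps)
  have g0ix: "mmul ratR n g0i x \<in> mats ratR n UNIV" using g0ic xc MR.m_closed by (simp add: RS)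
  have 1: "mmul ratR n g0 (mmul ratR n g0i x) = x"
    using e1 g0c g0ic xc MR.m_assoc[of g0 g0i x] by (simp add: RS)
  have 2: "mmul ratR n y' g0 = y"
    using e2 g0c g0ic yc MR.m_assoc[of y g0i g0] unfolding y'_def by (simp add: RS)
  have u0c': "u0 \<in> carrier (matR At n)" using u0c by (simp add: A.matR_simps)
  have "mmul At n (DC n g0) u = DC n g0 \<otimes>\<^bsub>matR At n\<^esub> ((DC n (mmul ratR n g0i x) \<otimes>\<^bsub>matR At n\<^esub> u0) \<otimes>\<^bsub>matR At n\<^esub> DC n y)"
    unfolding uu by (simp add: A.matR_simps)
  also have "\<dots> = ((DC n g0 \<otimes>\<^bsub>matR At n\<^esub> DC n (mmul ratR n g0i x)) \<otimes>\<^bsub>matR At n\<^esub> u0) \<otimes>\<^bsub>matR At n\<^esub> DC n y"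
    using DCc[OF g0] DCc[OF g0ix] DCc[OF y] u0c' by (simp add: MA.m_assoc)
  also have "DC n g0 \<otimes>\<^bsub>matR At n\<^esub> DC n (mmul ratR n g0i x) = DC n x"
    using DCm[OF g0 g0ix] 1 by simp
  also have "DC n y = DC n y' \<otimes>\<^bsub>matR At n\<^esub> DC n g0" using DCm[OF y'c g0] 2 by simp
  also have "(DC n x \<otimes>\<^bsub>matR At n\<^esub> u0) \<otimes>\<^bsub>matR At n\<^esub> (DC n y' \<otimes>\<^bsub>matR At n\<^esub> DC n g0)
      = mmul At n ?u' (DC n g0)"
  proof -
    have "(DC n x \<otimes>\<^bsub>matR At n\<^esub> u0) \<otimes>\<^bsub>matR At n\<^esub> (DC n y' \<otimes>\<^bsub>matR At n\<^esub> DC n g0)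
      = ((DC n x \<otimes>\<^bsub>matR At n\<^esub> u0) \<otimes>\<^bsub>matR At n\<^esub> DC n y') \<otimes>\<^bsub>matR At n\<^esub> DC n g0"
      using DCc[OF x] DCc[OF y'c] DCc[OF g0] u0c' by (simp add: MA.m_assoc)
    then show ?thesis by (simp add: A.matR_simps)
  qed
  finally show ?thesis using u'U by blast
qed

lemma gl_mul:
  assumes g0: "g0 \<in> mats ratR n UNIV" and g0i: "g0i \<in> mats ratR n UNIV"
    and e1: "mmul ratR n g0 g0i = mone ratR n" and e2: "mmul ratR n g0i g0 = mone ratR n"
    and x: "x \<in> gl ratR n UNIV"
  shows "mmul ratR n g0i x \<in> gl ratR n UNIV"
proof -
  interpret MR: ring "matR ratR n" by (rule cring.matR_ring[OF ratR_cring])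
  note RS = ratR_matR_simps[symmetric]
  obtain xi where xm: "x \<in> mats ratR n UNIV" and xi: "xi \<in> mats ratR n UNIV"
    and a: "mmul ratR n x xi = mone ratR n" and b: "mmul ratR n xi x = mone ratR n"
    using x unfolding gl_def by blast
  have c: "g0 \<in> carrier (matR ratR n)" "g0i \<in> carrier (matR ratR n)" "x \<in> carrier (matR ratR n)"
    "xi \<in> carrier (matR ratR n)" using g0 g0i xm xi by (simp_all add: RS)
  have m1: "mmul ratR n g0i x \<in> mats ratR n UNIV" using c MR.m_closed by (simp add: RS)
  have m2: "mmul ratR n xi g0 \<in> mats ratR n UNIV" using c MR.m_closed by (simp add: RS)
  have i1: "mmul ratR n (mmul ratR n g0i x) (mmul ratR n xi g0) = mone ratR n"
  proof -
    have "(g0i \<otimes>\<^bsub>matR ratR n\<^esub> x) \<otimes>\<^bsub>matR ratR n\<^esub> (xi \<otimes>\<^bsub>matR ratR n\<^esub> g0)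
       = g0i \<otimes>\<^bsub>matR ratR n\<^esub> ((x \<otimes>\<^bsub>matR ratR n\<^esub> xi) \<otimes>\<^bsub>matR ratR n\<^esub> g0)"
      using c by (simp add: MR.m_assoc)
    also have "\<dots> = \<one>\<^bsub>matR ratR n\<^esub>" using a e2 c by (simp add: RS)
    finally show ?thesis by (simp add: RS)
  qed
  have i2: "mmul ratR n (mmul ratR n xi g0) (mmul ratR n g0i x) = mone ratR n"
  proof -
    have "(xi \<otimes>\<^bsub>matR ratR n\<^esub> g0) \<otimes>\<^bsub>matR ratR n\<^esub> (g0i \<otimes>\<^bsub>matR ratR n\<^esub> x)
       = xi \<otimes>\<^bsub>matR ratR n\<^esub> ((g0 \<otimes>\<^bsub>matR ratR n\<^esub> g0i) \<otimes>\<^bsub>matR ratR n\<^esub> x)"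
      using c by (simp add: MR.m_assoc)
    also have "\<dots> = \<one>\<^bsub>matR ratR n\<^esub>" using b e1 c by (simp add: RS)
    finally show ?thesis by (simp add: RS)
  qed
  show ?thesis unfolding gl_def using m1 m2 i1 i2 by blast
qed

lemma decomp:
  assumes g: "g \<in> mats QLS n Qt_plus" and gi: "gi \<in> mats QLS n Qt_plus"
    and ggi: "mmul QLS n g gi = mone QLS n" and gig: "mmul QLS n gi g = mone QLS n"
  shows "\<exists>g0 g0i Hm. g0 \<in> mats ratR n UNIV \<and> g0i \<in> mats ratR n UNIV \<and>
     mmul ratR n g0 g0i = mone ratR n \<and> mmul ratR n g0i g0 = mone ratR n \<and>
     Hm \<in> mats At n At_plus \<and> DQ n g = madd At n (DC n g0) (mmul At n (cring.scal At n TT) Hm)"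
proof -
  interpret Q: cring QLS by (rule QLS_cring)
  interpret A: cring At by (rule At_cring)
  interpret E: mhom QLS ratR "\<lambda>f. f 0" Qt_plus by (rule mhom_ev)
  interpret D: mhom QLS At diagQ Qt by (rule mhom_DQ)
  define g0 where "g0 = mmap \<zero>\<^bsub>ratR\<^esub> n (\<lambda>f. f 0) g"
  define g0i where "g0i = mmap \<zero>\<^bsub>ratR\<^esub> n (\<lambda>f. f 0) gi"
  have g0m: "g0 \<in> mats ratR n UNIV" unfolding g0_def by (rule E.mmap_mats[OF g]) auto
  have g0im: "g0i \<in> mats ratR n UNIV" unfolding g0i_def by (rule E.mmap_mats[OF gi]) auto
  have one0: "\<one>\<^bsub>QLS\<^esub> 0 = \<one>\<^bsub>ratR\<^esub>" by (simp add: QLS_one)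
  have e1: "mmul ratR n g0 g0i = mone ratR n"
    unfolding g0_def g0i_def E.mmap_mmul[OF g gi, symmetric] ggi by (rule E.mmap_mone[OF one0])
  have e2: "mmul ratR n g0i g0 = mone ratR n"
    unfolding g0_def g0i_def E.mmap_mmul[OF gi g, symmetric] gig by (rule E.mmap_mone[OF one0])
  define H where "H = mmap \<zero>\<^bsub>QLS\<^esub> n sh g"
  have Hp: "H \<in> mats QLS n Qt_plus"
  proof -
    have shc: "\<And>f. f \<in> Qt_plus \<Longrightarrow> sh f \<in> carrier QLS" using sh_plus Qt_plus_sub Qt_sub by blast
    show ?thesis unfolding H_def mats_def mmap_def using Q.mats_S[OF g] sh_plus shc by auto
  qed
  have Hq: "H \<in> mats QLS n Qt" using Hp Qt_plus_sub mats_mono by blast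
  have gq: "g \<in> mats QLS n Qt" using g Qt_plus_sub mats_mono by blast
  define Cg where "Cg = mmap \<zero>\<^bsub>QLS\<^esub> n const_ls g0"
  have Cgq: "Cg \<in> mats QLS n Qt" unfolding Cg_def mats_def mmap_def using const_Qt Qt_sub by auto
  have dec: "g = madd QLS n Cg (msmul QLS n (tpow 1) H)"
  proof (rule Q.mats_ext[OF gq])
    show "madd QLS n Cg (msmul QLS n (tpow 1) H) \<in> mats QLS n Qt"
      using Cgq Hq tpow_Qt Qt_add Qt_mult Qt_sub by (intro Q.madd_in Q.msmul_in) auto
    fix i j assume ij: "i < n" "j < n"
    have "g i j \<in> Qt_plus" using Q.mats_S[OF g ij] .
    then show "g i j = madd QLS n Cg (msmul QLS n (tpow 1) H) i j"
      using decomp1[of "g i j"] ij by (simp add: madd_def msmul_def Cg_def H_def mmap_def g0_def)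
  qed
  have DQg: "DQ n g = madd At n (DQ n Cg) (msmul At n TT (DQ n H))"
  proof -
    have t1c: "tpow 1 \<in> carrier QLS" using tpow_Qt Qt_sub by blast
    have sm: "msmul QLS n (tpow 1) H \<in> mats QLS n Qt" using Hq tpow_Qt Qt_mult t1c by (intro Q.msmul_in) auto
    have "DQ n g = madd At n (DQ n Cg) (DQ n (msmul QLS n (tpow 1) H))"
      by (subst dec, rule D.mmap_madd[OF Cgq sm])
    also have "DQ n (msmul QLS n (tpow 1) H) = msmul At n TT (DQ n H)"
      by (rule D.mmap_msmul[OF tpow_Qt Hq])
    finally show ?thesis .
  qed
  have "DQ n Cg = DC n g0" unfolding Cg_def by (auto simp: fun_eq_iff mmap_def)
  moreover have Hm: "DQ n H \<in> mats At n At_plus"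
    unfolding mats_def mmap_def using Q.mats_S[OF Hp] diagQ_plus At_plus_sub by auto
  moreover have "msmul At n TT (DQ n H) = mmul At n (cring.scal At n TT) (DQ n H)"
    using TT_plus At_plus_sub Hm by (intro A.scal_left) auto
  ultimately show ?thesis using g0m g0im e1 e2 DQg by metis
qed

lemma right_transfer:
  assumes g: "g \<in> mats QLS n Qt_plus" and gi: "gi \<in> mats QLS n Qt_plus"
    and ggi: "mmul QLS n g gi = mone QLS n" and gig: "mmul QLS n gi g = mone QLS n"
    and R: "R \<in> mats At n (carrier At)" and x: "x \<in> gl ratR n UNIV"
    and P: "PP n N R (unip_A n x b)"
  shows "\<exists>x'. x' \<in> gl ratR n UNIV \<and> PP n N (mmul At n R (DQ n g)) (unip_A n x' b)"
proof -
  interpret Q: cring QLS by (rule QLS_cring)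
  interpret A: cring At by (rule At_cring)
  interpret D: mhom QLS At diagQ Qt by (rule mhom_DQ)
  interpret AS: absset "matR At n" "mats At n At_plus" "cring.scal At n TT" "cring.scal At n (TN N)"
    by (rule absset_inst)
  obtain g0 g0i Hm where g0: "g0 \<in> mats ratR n UNIV" and g0i: "g0i \<in> mats ratR n UNIV"
    and e1: "mmul ratR n g0 g0i = mone ratR n" and e2: "mmul ratR n g0i g0 = mone ratR n"
    and Hm: "Hm \<in> mats At n At_plus" and DQg: "DQ n g = madd At n (DC n g0) (mmul At n (cring.scal At n TT) Hm)"
    using decomp[OF g gi ggi gig] by blast
  have xm: "x \<in> mats ratR n UNIV" using x unfolding gl_def by auto
  have gq: "g \<in> mats QLS n Qt" and giq: "gi \<in> mats QLS n Qt" using g gi Qt_plus_sub mats_mono by blast+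
  have DQgi: "DQ n gi \<in> mats At n At_plus"
    unfolding mats_def mmap_def using Q.mats_S[OF gi] diagQ_plus At_plus_sub by auto
  have one: "diagQ \<one>\<^bsub>QLS\<^esub> = \<one>\<^bsub>At\<^esub>" by (rule diagQ_one)
  have GGi: "(DC n g0 \<oplus>\<^bsub>matR At n\<^esub> cring.scal At n TT \<otimes>\<^bsub>matR At n\<^esub> Hm) \<otimes>\<^bsub>matR At n\<^esub> DQ n gi = \<one>\<^bsub>matR At n\<^esub>"
  proof -
    have "mmul At n (DQ n g) (DQ n gi) = mone At n"
      using D.mmap_mmul[OF gq giq, symmetric] ggi D.mmap_mone[OF one] by simp
    then show ?thesis using DQg by (simp add: A.matR_simps)
  qed
  have "AS.Pp (R \<otimes>\<^bsub>matR At n\<^esub> (DC n g0 \<oplus>\<^bsub>matR At n\<^esub> cring.scal At n TT \<otimes>\<^bsub>matR At n\<^esub> Hm))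
      (unip_A n (mmul ratR n g0i x) b)"
  proof (rule AS.lemC)
    show "R \<in> carrier (matR At n)" using R by (simp add: A.matR_simps)
    show "DC n g0 \<in> mats At n At_plus" by (rule DC_mats[OF g0])
    show "Hm \<in> mats At n At_plus" by (rule Hm)
    show "DQ n gi \<in> mats At n At_plus" by (rule DQgi)
    show "(DC n g0 \<oplus>\<^bsub>matR At n\<^esub> cring.scal At n TT \<otimes>\<^bsub>matR At n\<^esub> Hm) \<otimes>\<^bsub>matR At n\<^esub> DQ n gi = \<one>\<^bsub>matR At n\<^esub>"
      by (rule GGi)
    show "unip_A n x b \<subseteq> carrier (matR At n)"
      using U_MP[OF xm] AS.MP_sub by blast
    have "mmul ratR n g0i x \<in> mats ratR n UNIV"
      using gl_mul[OF g0 g0i e1 e2 x] unfolding gl_def by auto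
    then show "unip_A n (mmul ratR n g0i x) b \<subseteq> mats At n At_plus" by (rule U_MP)
    show "\<exists>u'\<in>unip_A n x b. DC n g0 \<otimes>\<^bsub>matR At n\<^esub> u = u' \<otimes>\<^bsub>matR At n\<^esub> DC n g0"
      if "u \<in> unip_A n (mmul ratR n g0i x) b" for u
      using conj_lemma[OF g0 g0i e1 e2 xm that] by (simp add: A.matR_simps)
    show "AS.Pp R (unip_A n x b)" by (rule P)
  qed
  moreover have "R \<otimes>\<^bsub>matR At n\<^esub> (DC n g0 \<oplus>\<^bsub>matR At n\<^esub> cring.scal At n TT \<otimes>\<^bsub>matR At n\<^esub> Hm) = mmul At n R (DQ n g)"
    using DQg by (simp add: A.matR_simps)
  ultimately show ?thesis using gl_mul[OF g0 g0i e1 e2 x] by auto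
qed

lemma C_N_iff:
  assumes r: "r \<in> mats QLS n Qt"
  shows "r \<in> C_N n N \<longleftrightarrow> \<not> (\<exists>x b. x \<in> gl ratR n UNIV \<and> proper_blocks n b \<and> PP n N (DQ n r) (unip_A n x b))"
proof -
  interpret A: cring At by (rule At_cring)
  interpret D: mhom QLS At diagQ Qt by (rule mhom_DQ)
  have R: "DQ n r \<in> mats At n (carrier At)" by (rule D.mmap_mats[OF r]) (use Qt_def in auto)
  have U: "unip_A n x b \<subseteq> mats At n (carrier At)" if "x \<in> gl ratR n UNIV" for x b
  proof -
    have "x \<in> mats ratR n UNIV" using that unfolding gl_def by auto
    then show ?thesis using U_MP mats_mono[OF At_plus_sub] by blast
  qed
  have "(\<forall>u \<in> unip_A n x b.
             (let R = mmap \<zero>\<^bsub>At\<^esub> n diagQ r in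
              msub At n (mmul At n R u) R \<in>
                {madd At n (mmul At n R (msmul At n (diagQ (tpow 1)) X))
                           (msmul At n (diagQ (tpow N)) Y)
                 | X Y. X \<in> mats At n At_plus \<and> Y \<in> mats At n At_plus})) \<longleftrightarrow> PP n N (DQ n r) (unip_A n x b)"
    if "x \<in> gl ratR n UNIV" for x b
    unfolding Let_def by (rule cond_iff[OF R U[OF that]])
  then show ?thesis unfolding C_N_def using r by blast
qed

theorem lemma6p2p3:
  fixes n :: nat and N :: int
    and r g1 g2 m :: "nat \<Rightarrow> nat \<Rightarrow> (int \<Rightarrow> rat)"
  assumes "n \<ge> 2"
    and "r \<in> mats QLS n Qt"
    and "g1 \<in> gl QLS n Qt_plus"
    and "g2 \<in> gl QLS n Qt_plus"
    and "m \<in> mats QLS n Qt_plus"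
  shows "r \<in> C_N n N \<longleftrightarrow>
         madd QLS n (mmul QLS n (mmul QLS n g1 r) g2) (msmul QLS n (tpow N) m) \<in> C_N n N"
proof -
  interpret Q: cring QLS by (rule QLS_cring)
  interpret A: cring At by (rule At_cring)
  interpret MA: ring "matR At n" by (rule A.matR_ring)
  interpret D: mhom QLS At diagQ Qt by (rule mhom_DQ)
  interpret AS: absset "matR At n" "mats At n At_plus" "cring.scal At n TT" "cring.scal At n (TN N)"
    by (rule absset_inst)
  have rq: "r \<in> mats QLS n Qt" by (rule assms(2))
  obtain g1i where g1: "g1 \<in> mats QLS n Qt_plus" and g1i: "g1i \<in> mats QLS n Qt_plus"
    and e11: "mmul QLS n g1 g1i = mone QLS n" and e12: "mmul QLS n g1i g1 = mone QLS n"
    using assms(3) unfolding gl_def by blast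
  obtain g2i where g2: "g2 \<in> mats QLS n Qt_plus" and g2i: "g2i \<in> mats QLS n Qt_plus"
    and e21: "mmul QLS n g2 g2i = mone QLS n" and e22: "mmul QLS n g2i g2 = mone QLS n"
    using assms(4) unfolding gl_def by blast
  have mp: "m \<in> mats QLS n Qt_plus" by (rule assms(5))
  have toQ: "A \<in> mats QLS n Qt" if "A \<in> mats QLS n Qt_plus" for A using that Qt_plus_sub mats_mono by blast
  have toP: "DQ n A \<in> mats At n At_plus" if "A \<in> mats QLS n Qt_plus" for A
    unfolding mats_def mmap_def using Q.mats_S[OF that] diagQ_plus At_plus_sub by auto
  have toC: "DQ n A \<in> carrier (matR At n)" if "A \<in> mats QLS n Qt" for A
    using D.mmap_mats[OF that] unfolding A.matR_simps Qt_def by auto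
  have PC: "A \<in> carrier (matR At n)" if "A \<in> mats At n At_plus" for A using that AS.MP_sub by blast
  have Qsub: "Qt \<subseteq> carrier QLS" "\<zero>\<^bsub>QLS\<^esub> \<in> Qt" "\<And>x y. x \<in> Qt \<Longrightarrow> y \<in> Qt \<Longrightarrow> x \<oplus>\<^bsub>QLS\<^esub> y \<in> Qt"
    "\<And>x y. x \<in> Qt \<Longrightarrow> y \<in> Qt \<Longrightarrow> x \<otimes>\<^bsub>QLS\<^esub> y \<in> Qt"
    using Qt_sub Qt_zero Qt_add Qt_mult by auto
  have tNc: "tpow N \<in> carrier QLS" using tpow_Qt Qt_sub by blast
  define r' where "r' = madd QLS n (mmul QLS n (mmul QLS n g1 r) g2) (msmul QLS n (tpow N) m)"
  have g1r: "mmul QLS n g1 r \<in> mats QLS n Qt" by (rule Q.mmul_in[OF Qsub toQ[OF g1] rq])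
  have g1rg2: "mmul QLS n (mmul QLS n g1 r) g2 \<in> mats QLS n Qt" by (rule Q.mmul_in[OF Qsub g1r toQ[OF g2]])
  have tm: "msmul QLS n (tpow N) m \<in> mats QLS n Qt" by (rule Q.msmul_in[OF _ tpow_Qt tNc toQ[OF mp]]) (use Qt_mult in auto)
  have r'q: "r' \<in> mats QLS n Qt" unfolding r'_def by (rule Q.madd_in[OF _ g1rg2 tm]) (use Qt_add in auto)
  define R where "R = DQ n r"
  define G1 where "G1 = DQ n g1"
  define G2 where "G2 = DQ n g2"
  define G1i where "G1i = DQ n g1i"
  define G2i where "G2i = DQ n g2i"
  define Mm where "Mm = DQ n m"
  let ?tN = "cring.scal At n (TN N)"
  have Rc: "R \<in> carrier (matR At n)" unfolding R_def by (rule toC[OF rq])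
  have G1c: "G1 \<in> mats At n At_plus" "G1i \<in> mats At n At_plus" "G2 \<in> mats At n At_plus" "G2i \<in> mats At n At_plus"
    "Mm \<in> mats At n At_plus"
    unfolding G1_def G1i_def G2_def G2i_def Mm_def using toP g1 g1i g2 g2i mp by auto
  have one: "diagQ \<one>\<^bsub>QLS\<^esub> = \<one>\<^bsub>At\<^esub>" by (rule diagQ_one)
  have i1: "G1i \<otimes>\<^bsub>matR At n\<^esub> G1 = \<one>\<^bsub>matR At n\<^esub>"
    using D.mmap_mmul[OF toQ[OF g1i] toQ[OF g1], symmetric] e12 D.mmap_mone[OF one]
    unfolding G1i_def G1_def by (simp add: A.matR_simps)
  have i2: "G2 \<otimes>\<^bsub>matR At n\<^esub> G2i = \<one>\<^bsub>matR At n\<^esub>"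
    using D.mmap_mmul[OF toQ[OF g2] toQ[OF g2i], symmetric] e21 D.mmap_mone[OF one]
    unfolding G2i_def G2_def by (simp add: A.matR_simps)
  have DQr': "DQ n r' = G1 \<otimes>\<^bsub>matR At n\<^esub> R \<otimes>\<^bsub>matR At n\<^esub> G2 \<oplus>\<^bsub>matR At n\<^esub> ?tN \<otimes>\<^bsub>matR At n\<^esub> Mm"
  proof -
    have "DQ n r' = madd At n (mmul At n (mmul At n G1 R) G2) (msmul At n (TN N) Mm)"
      unfolding r'_def G1_def G2_def R_def Mm_def
      by (simp add: D.mmap_madd[OF g1rg2 tm] D.mmap_mmul[OF g1r toQ[OF g2]] D.mmap_mmul[OF toQ[OF g1] rq]
            D.mmap_msmul[OF tpow_Qt toQ[OF mp]])
    also have "msmul At n (TN N) Mm = mmul At n ?tN Mm"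
      using G1c TN_c by (intro A.scal_left) auto
    finally show ?thesis by (simp add: A.matR_simps)
  qed
  have cR: "G1 \<in> carrier (matR At n)" "G1i \<in> carrier (matR At n)" "G2 \<in> carrier (matR At n)"
    "G2i \<in> carrier (matR At n)" "Mm \<in> carrier (matR At n)" using G1c PC by auto
  have tNc': "?tN \<in> carrier (matR At n)" by (rule AS.\<tau>N_c)
  have Ux: "unip_A n x b \<subseteq> mats At n At_plus" if "x \<in> gl ratR n UNIV" for x b
    using that U_MP unfolding gl_def by blast
  have UxC: "unip_A n x b \<subseteq> carrier (matR At n)" if "x \<in> gl ratR n UNIV" for x b
    using Ux[OF that] AS.MP_sub by blast
  have RG2: "mmul At n R G2 \<in> mats At n (carrier At)" using Rc cR by (simp add: A.matR_simps[symmetric])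
  show ?thesis unfolding r'_def[symmetric]
  proof
    assume rC: "r \<in> C_N n N"
    show "r' \<in> C_N n N" unfolding C_N_iff[OF r'q]
    proof
      assume "\<exists>x b. x \<in> gl ratR n UNIV \<and> proper_blocks n b \<and> PP n N (DQ n r') (unip_A n x b)"
      then obtain x b where x: "x \<in> gl ratR n UNIV" and b: "proper_blocks n b" and P: "PP n N (DQ n r') (unip_A n x b)"
        by blast
      have "PP n N (DQ n r' \<oplus>\<^bsub>matR At n\<^esub> ?tN \<otimes>\<^bsub>matR At n\<^esub> (\<ominus>\<^bsub>matR At n\<^esub> Mm)) (unip_A n x b)"
        by (rule AS.lemB[OF _ _ Ux[OF x] P]) (use toC[OF r'q] AS.MP_neg G1c in auto)
      moreover have "DQ n r' \<oplus>\<^bsub>matR At n\<^esub> ?tN \<otimes>\<^bsub>matR At n\<^esub> (\<ominus>\<^bsub>matR At n\<^esub> Mm) = G1 \<otimes>\<^bsub>matR At n\<^esub> R \<otimes>\<^bsub>matR At n\<^esub> G2"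
        unfolding DQr' using Rc cR tNc' by (simp add: MA.r_minus MA.a_assoc MA.r_neg)
      ultimately have P1: "PP n N (G1 \<otimes>\<^bsub>matR At n\<^esub> R \<otimes>\<^bsub>matR At n\<^esub> G2) (unip_A n x b)" by simp
      have "PP n N (G1i \<otimes>\<^bsub>matR At n\<^esub> (G1 \<otimes>\<^bsub>matR At n\<^esub> R \<otimes>\<^bsub>matR At n\<^esub> G2)) (unip_A n x b)"
        by (rule AS.lemA[OF _ _ UxC[OF x] P1]) (use Rc cR G1c in auto)
      moreover have "G1i \<otimes>\<^bsub>matR At n\<^esub> (G1 \<otimes>\<^bsub>matR At n\<^esub> R \<otimes>\<^bsub>matR At n\<^esub> G2) = mmul At n R G2"
      proof -
        have "G1i \<otimes>\<^bsub>matR At n\<^esub> (G1 \<otimes>\<^bsub>matR At n\<^esub> R \<otimes>\<^bsub>matR At n\<^esub> G2)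
            = (G1i \<otimes>\<^bsub>matR At n\<^esub> G1) \<otimes>\<^bsub>matR At n\<^esub> R \<otimes>\<^bsub>matR At n\<^esub> G2"
          using Rc cR by (simp add: MA.m_assoc)
        also have "\<dots> = R \<otimes>\<^bsub>matR At n\<^esub> G2" using i1 Rc by simp
        finally show ?thesis by (simp add: A.matR_simps)
      qed
      ultimately have P2: "PP n N (mmul At n R G2) (unip_A n x b)" by simp
      obtain x' where x': "x' \<in> gl ratR n UNIV" and P3: "PP n N (mmul At n (mmul At n R G2) (DQ n g2i)) (unip_A n x' b)"
        using right_transfer[OF g2i g2 e22 e21 RG2 x P2] by blast
      have "mmul At n (mmul At n R G2) (DQ n g2i) = R"
      proof -
        have "mmul At n (mmul At n R G2) (DQ n g2i) = R \<otimes>\<^bsub>matR At n\<^esub> (G2 \<otimes>\<^bsub>matR At n\<^esub> G2i)"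
          using Rc cR unfolding G2i_def by (simp add: MA.m_assoc A.matR_simps[symmetric])
        then show ?thesis using i2 Rc by simp
      qed
      then have "PP n N (DQ n r) (unip_A n x' b)" using P3 unfolding R_def by simp
      then show False using rC x' b unfolding C_N_iff[OF rq] by blast
    qed
  next
    assume r'C: "r' \<in> C_N n N"
    show "r \<in> C_N n N" unfolding C_N_iff[OF rq]
    proof
      assume "\<exists>x b. x \<in> gl ratR n UNIV \<and> proper_blocks n b \<and> PP n N (DQ n r) (unip_A n x b)"
      then obtain x b where x: "x \<in> gl ratR n UNIV" and b: "proper_blocks n b" and P: "PP n N R (unip_A n x b)"
        unfolding R_def by blast
      obtain x' where x': "x' \<in> gl ratR n UNIV" and P1: "PP n N (mmul At n R G2) (unip_A n x' b)"
        using right_transfer[OF g2 g2i e21 e22 _ x P] Rc unfolding G2_def by (auto simp: A.matR_simps)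
      have P1': "PP n N (R \<otimes>\<^bsub>matR At n\<^esub> G2) (unip_A n x' b)" using P1 by (simp add: A.matR_simps)
      have P2: "PP n N (G1 \<otimes>\<^bsub>matR At n\<^esub> (R \<otimes>\<^bsub>matR At n\<^esub> G2)) (unip_A n x' b)"
        by (rule AS.lemA[OF _ _ UxC[OF x'] P1']) (use Rc cR G1c in auto)
      have "PP n N (G1 \<otimes>\<^bsub>matR At n\<^esub> (R \<otimes>\<^bsub>matR At n\<^esub> G2) \<oplus>\<^bsub>matR At n\<^esub> ?tN \<otimes>\<^bsub>matR At n\<^esub> Mm) (unip_A n x' b)"
        by (rule AS.lemB[OF _ _ Ux[OF x'] P2]) (use Rc cR G1c in auto)
      moreover have "G1 \<otimes>\<^bsub>matR At n\<^esub> (R \<otimes>\<^bsub>matR At n\<^esub> G2) \<oplus>\<^bsub>matR At n\<^esub> ?tN \<otimes>\<^bsub>matR At n\<^esub> Mm = DQ n r'"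
        unfolding DQr' using Rc cR by (simp add: MA.m_assoc)
      ultimately have "PP n N (DQ n r') (unip_A n x' b)" by simp
      then show False using r'C x' b unfolding C_N_iff[OF r'q] by blast
    qed
  qed
qed

end
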